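(* For every sequence $V=(V_n)_n$ of $\widehat{\mathrm S}_n$-modules, $H^{cs,\widehat{\mathrm{FI}}}_0(\mathbf I(V))=0$ and $H^{cs,\widehat{\mathrm{FI}}}_{-1}(\mathbf I(V))\cong V$.
   Context: $\widehat{\mathrm S}_n=\{(\sigma,d)\in\mathrm S_n\times\mathbb Z: d\text{ odd}\iff\operatorname{sgn}\sigma=-1\}$ ($n\ge2$; trivial for $n=0,1$); $i_1,i_2$ inclusions on first/last letters. $\widehat{\mathrm{FI}}$: objects $n\in\mathbb N$, $\widehat{\mathrm{FI}}(n,m)=\widehat{\mathrm S}_m/i_2(\widehat{\mathrm S}_{m-n})$, composition $([s],[t])\mapsto[t\,i_1(s)]$; $\mathbf I(V)_m=\bigoplus_{n\le m}\mathbb Z[\widehat{\mathrm{FI}}(n,m)]\otimes_{\mathbb Z\widehat{\mathrm S}_n}V_n$ (left adjoint of the forgetful functor). Let $p_n:\mathrm{Br}_n\to\widehat{\mathrm S}_n$, $\sigma_{i,i+1}\mapsto((i\ i{+}1),1)$. For an $\widehat{\mathrm{FI}}$-module $M$ and $p\ge-1$, $C^{cs,\widehat{\mathrm{FI}}}_p(M)_n=\mathrm{Ind}_{i_1(\widehat{\mathrm S}_{n-p-1})}^{\widehat{\mathrm S}_n}M_{n-p-1}$, with face maps $f_i=(\mathrm{Ind}_{\widehat{\mathrm S}_{n-p}}^{\widehat{\mathrm S}_n}x_{n-p-1})\circ u_i$, where $x_k:\mathrm{Ind}_{i_1\widehat{\mathrm S}_k}^{\widehat{\mathrm S}_{k+1}}M_k\to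 M_{k+1}$ comes from the module structure and $u_i$ is right multiplication by $p_n(\sigma_{i-1,i}^{-1}\cdots\sigma_{1,2}^{-1})$ with the braid placed on the last $p+1$ strands; differential $\sum_{i=1}^{p+1}(-1)^if_i$. $H^{cs,\widehat{\mathrm{FI}}}_*$ is its homology; so $H_{-1}$ is the cokernel of $C_0\to C_{-1}=M$. *)

theory Defs
  imports "HOL-Algebra.Free_Abelian_Groups" "HOL-Algebra.Product_Groups"
          "HOL-Combinatorics.Permutations" "HOL-Combinatorics.Transposition"
begin

text \<open>An element of hat S_n is a pair (sigma, d) with sigma a permutation of the
  letters {0..<n} (0-indexed) and d an integer.  hat S_n is the subgroup of
  S_n x Z where d is odd iff sigma is odd (n >= 2); it is trivial for n = 0, 1.
  Multiplication is componentwise: (s,d)(t,e) = (s o t, d + e).\<close>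

type_synonym hs = "(nat \<Rightarrow> nat) \<times> int"

definition hatS :: "nat \<Rightarrow> hs set" where
  "hatS n = {(s, d). s permutes {..<n} \<and>
                     (if 2 \<le> n then (odd d \<longleftrightarrow> sign s = -1) else d = 0)}"

definition hmul :: "hs \<Rightarrow> hs \<Rightarrow> hs" where
  "hmul x y = (fst x \<circ> fst y, snd x + snd y)"

definition hone :: hs where
  "hone = (id, 0)"

definition hatSgrp :: "nat \<Rightarrow> hs monoid" where
  "hatSgrp n = \<lparr>carrier = hatS n, monoid.mult = hmul, one = hone\<rparr>"

text \<open>i_1 : hat S_k -> hat S_n (first letters) is literally the identity on our
  representation.  i_2 : hat S_l -> hat S_m puts the letters on the last l positions.\<close>

definition i2 :: "nat \<Rightarrow> nat \<Rightarrow> hs \<Rightarrow> hs" where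
  "i2 m l x = ((\<lambda>i. if m - l \<le> i \<and> i < m then fst x (i - (m - l)) + (m - l) else i), snd x)"

text \<open>hcos m n t is the class [t] of t in hat S_m / i_2(hat S_{m-n}) (left cosets).\<close>

definition hcos :: "nat \<Rightarrow> nat \<Rightarrow> hs \<Rightarrow> hs set" where
  "hcos m n t = t <#\<^bsub>hatSgrp m\<^esub> (i2 m (m - n) ` hatS (m - n))"

definition FIhat :: "nat \<Rightarrow> nat \<Rightarrow> hs set set" where
  "FIhat n m = (if n \<le> m then {hcos m n t | t. t \<in> hatS m} else {})"

text \<open>Composition of f = [s] : n -> m and g = [t] : m -> l is [t i_1(s)].\<close>

definition ficomp :: "nat \<Rightarrow> nat \<Rightarrow> nat \<Rightarrow> hs set \<Rightarrow> hs set \<Rightarrow> hs set" where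
  "ficomp n m l f g = {x. \<exists>s\<in>f. \<exists>t\<in>g. x \<in> hcos l n (hmul t s)}"

text \<open>A sequence of hat S_n-modules: abelian groups V n (HOL-Algebra, multiplicative
  notation) with a left action A n of hat S_n by group endomorphisms.\<close>

definition smod :: "(nat \<Rightarrow> 'v monoid) \<Rightarrow> (nat \<Rightarrow> hs \<Rightarrow> 'v \<Rightarrow> 'v) \<Rightarrow> bool" where
  "smod V A \<longleftrightarrow> (\<forall>n. comm_group (V n)
      \<and> (\<forall>g\<in>hatS n. A n g \<in> hom (V n) (V n))
      \<and> (\<forall>x\<in>carrier (V n). A n hone x = x)
      \<and> (\<forall>g\<in>hatS n. \<forall>h\<in>hatS n. \<forall>x\<in>carrier (V n). A n (hmul g h) x = A n g (A n h x)))"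

text \<open>X carries a right action rho of the group K, W is a K-module with action B.\<close>

definition tfree :: "'x set \<Rightarrow> 'w monoid \<Rightarrow> ('x \<times> 'w \<Rightarrow>\<^sub>0 int) monoid" where
  "tfree X W = free_Abelian_group (X \<times> carrier W)"

definition frel :: "'x set \<Rightarrow> ('x \<Rightarrow> hs \<Rightarrow> 'x) \<Rightarrow> hs set \<Rightarrow> 'w monoid \<Rightarrow> (hs \<Rightarrow> 'w \<Rightarrow> 'w)
                    \<Rightarrow> ('x \<times> 'w \<Rightarrow>\<^sub>0 int) set" where
  "frel X rho K W B =
     {frag_of (rho x k, w) - frag_of (x, B k w) | x k w. x \<in> X \<and> k \<in> K \<and> w \<in> carrier W}
   \<union> {frag_of (x, w \<otimes>\<^bsub>W\<^esub> w') - frag_of (x, w) - frag_of (x, w') | x w w'.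
         x \<in> X \<and> w \<in> carrier W \<and> w' \<in> carrier W}"

definition trel :: "'x set \<Rightarrow> ('x \<Rightarrow> hs \<Rightarrow> 'x) \<Rightarrow> hs set \<Rightarrow> 'w monoid \<Rightarrow> (hs \<Rightarrow> 'w \<Rightarrow> 'w)
                    \<Rightarrow> ('x \<times> 'w \<Rightarrow>\<^sub>0 int) set" where
  "trel X rho K W B = generate (tfree X W) (frel X rho K W B)"

definition tens :: "'x set \<Rightarrow> ('x \<Rightarrow> hs \<Rightarrow> 'x) \<Rightarrow> hs set \<Rightarrow> 'w monoid \<Rightarrow> (hs \<Rightarrow> 'w \<Rightarrow> 'w)
                    \<Rightarrow> ('x \<times> 'w \<Rightarrow>\<^sub>0 int) set monoid" where
  "tens X rho K W B = tfree X W Mod trel X rho K W B"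

definition qmap :: "('b, 'c) monoid_scheme \<Rightarrow> 'b set \<Rightarrow> ('a \<Rightarrow> 'b) \<Rightarrow> 'a set \<Rightarrow> 'b set" where
  "qmap G' H' phi X = H' #>\<^bsub>G'\<^esub> phi (SOME r. r \<in> X)"

text \<open>Right action of hat S_n on hat FI(n,m) by precomposition: [t].s = [t i_1(s)].\<close>

definition firact :: "nat \<Rightarrow> nat \<Rightarrow> hs set \<Rightarrow> hs \<Rightarrow> hs set" where
  "firact n m f s = ficomp n n m (hcos n n s) f"

definition Icomp :: "(nat \<Rightarrow> 'v monoid) \<Rightarrow> (nat \<Rightarrow> hs \<Rightarrow> 'v \<Rightarrow> 'v) \<Rightarrow> nat \<Rightarrow> nat
                     \<Rightarrow> (hs set \<times> 'v \<Rightarrow>\<^sub>0 int) set monoid" where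
  "Icomp V A n m = tens (FIhat n m) (firact n m) (hatS n) (V n) (A n)"

definition IV :: "(nat \<Rightarrow> 'v monoid) \<Rightarrow> (nat \<Rightarrow> hs \<Rightarrow> 'v \<Rightarrow> 'v) \<Rightarrow> nat
                  \<Rightarrow> (nat \<Rightarrow> (hs set \<times> 'v \<Rightarrow>\<^sub>0 int) set) monoid" where
  "IV V A m = sum_group {..m} (\<lambda>n. Icomp V A n m)"

definition IVmor :: "(nat \<Rightarrow> 'v monoid) \<Rightarrow> (nat \<Rightarrow> hs \<Rightarrow> 'v \<Rightarrow> 'v) \<Rightarrow> nat \<Rightarrow> nat \<Rightarrow> hs set
                     \<Rightarrow> (nat \<Rightarrow> (hs set \<times> 'v \<Rightarrow>\<^sub>0 int) set) \<Rightarrow> (nat \<Rightarrow> (hs set \<times> 'v \<Rightarrow>\<^sub>0 int) set)" where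
  "IVmor V A m l g x = (\<lambda>n.
      if n \<le> m then
        qmap (tfree (FIhat n l) (V n)) (trel (FIhat n l) (firact n l) (hatS n) (V n) (A n))
             (frag_extend (\<lambda>(f, v). frag_of (ficomp n m l f g, v))) (x n)
      else if n \<le> l then \<one>\<^bsub>Icomp V A n l\<^esub>
      else undefined)"

text \<open>An hat FI-module is given by groups M n and maps F n m f for f in hat FI(n,m).
  The hat S_n-action is F n n [g]; the structure map M_k -> M_{k+1} is F k (k+1) [1].\<close>

definition mact :: "(nat \<Rightarrow> nat \<Rightarrow> hs set \<Rightarrow> 'a \<Rightarrow> 'a) \<Rightarrow> nat \<Rightarrow> hs \<Rightarrow> 'a \<Rightarrow> 'a" where
  "mact F n g = F n n (hcos n n g)"

definition iota :: "(nat \<Rightarrow> nat \<Rightarrow> hs set \<Rightarrow> 'a \<Rightarrow> 'a) \<Rightarrow> nat \<Rightarrow> 'a \<Rightarrow> 'a" where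
  "iota F k = F k (Suc k) (hcos (Suc k) k hone)"

text \<open>braidw b k = p(sigma_{k,k+1}^{-1} ... sigma_{1,2}^{-1}) where strand j (1-indexed)
  of the braid sits at position b + j - 1 (0-indexed); p(sigma_{j,j+1}^{-1}) = ((j j+1), -1).\<close>

fun braidw :: "nat \<Rightarrow> nat \<Rightarrow> hs" where
  "braidw b 0 = hone"
| "braidw b (Suc k) = hmul (transpose (b + k) (b + k + 1), -1) (braidw b k)"

text \<open>C_p(M)_n = Ind_{i_1 hat S_{n-p-1}}^{hat S_n} M_{n-p-1} (zero if n-p-1 < 0;
  C_{-1}(M)_n = Ind_{hat S_n}^{hat S_n} M_n, canonically M_n).\<close>

definition Cc :: "(nat \<Rightarrow> 'a monoid) \<Rightarrow> (nat \<Rightarrow> nat \<Rightarrow> hs set \<Rightarrow> 'a \<Rightarrow> 'a) \<Rightarrow> int \<Rightarrow> nat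
                  \<Rightarrow> (hs \<times> 'a \<Rightarrow>\<^sub>0 int) set monoid" where
  "Cc M F p n = (if p + 1 \<le> int n then
        (let k = nat (int n - p - 1) in tens (hatS n) hmul (hatS k) (M k) (mact F k))
      else tens {} hmul {} (M 0) (mact F 0))"

text \<open>Differential d_p = sum_{i=1}^{p+1} (-1)^i f_i : C_p -> C_{p-1}, where
  f_i (g (x) w) = g b_i (x) x_{n-p-1}(1 (x) w), b_i = p_n(braid on the last p+1 strands).\<close>

definition dmap :: "(nat \<Rightarrow> 'a monoid) \<Rightarrow> (nat \<Rightarrow> nat \<Rightarrow> hs set \<Rightarrow> 'a \<Rightarrow> 'a) \<Rightarrow> int \<Rightarrow> nat
                  \<Rightarrow> (hs \<times> 'a \<Rightarrow>\<^sub>0 int) set \<Rightarrow> (hs \<times> 'a \<Rightarrow>\<^sub>0 int) set" where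
  "dmap M F p n X = (if p + 1 \<le> int n then (let k = nat (int n - p - 1) in
     qmap (tfree (hatS n) (M (Suc k))) (trel (hatS n) hmul (hatS (Suc k)) (M (Suc k)) (mact F (Suc k)))
       (frag_extend (\<lambda>(g, w). \<Sum>i\<in>{1..nat (p + 1)}.
           frag_cmul ((-1) ^ i) (frag_of (hmul g (braidw k (i - 1)), iota F k w)))) X)
     else \<one>\<^bsub>Cc M F (p - 1) n\<^esub>)"

definition Hcs :: "(nat \<Rightarrow> 'a monoid) \<Rightarrow> (nat \<Rightarrow> nat \<Rightarrow> hs set \<Rightarrow> 'a \<Rightarrow> 'a) \<Rightarrow> int \<Rightarrow> nat
                   \<Rightarrow> (hs \<times> 'a \<Rightarrow>\<^sub>0 int) set set monoid" where
  "Hcs M F p n = (if p = -1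
      then Cc M F (-1) n Mod (dmap M F 0 n ` carrier (Cc M F 0 n))
      else (Cc M F p n)\<lparr>carrier := kernel (Cc M F p n) (Cc M F (p - 1) n) (dmap M F p n)\<rparr>
             Mod (dmap M F (p + 1) n ` carrier (Cc M F (p + 1) n)))"

definition Cact :: "(nat \<Rightarrow> 'a monoid) \<Rightarrow> (nat \<Rightarrow> nat \<Rightarrow> hs set \<Rightarrow> 'a \<Rightarrow> 'a) \<Rightarrow> int \<Rightarrow> nat \<Rightarrow> hs
                   \<Rightarrow> (hs \<times> 'a \<Rightarrow>\<^sub>0 int) set \<Rightarrow> (hs \<times> 'a \<Rightarrow>\<^sub>0 int) set" where
  "Cact M F p n g X = (let k = nat (int n - p - 1) in
     qmap (tfree (hatS n) (M k)) (trel (hatS n) hmul (hatS k) (M k) (mact F k))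
       (frag_extend (\<lambda>(h, w). frag_of (hmul g h, w))) X)"

definition Hact_m1 :: "(nat \<Rightarrow> 'a monoid) \<Rightarrow> (nat \<Rightarrow> nat \<Rightarrow> hs set \<Rightarrow> 'a \<Rightarrow> 'a) \<Rightarrow> nat \<Rightarrow> hs
                   \<Rightarrow> (hs \<times> 'a \<Rightarrow>\<^sub>0 int) set set \<Rightarrow> (hs \<times> 'a \<Rightarrow>\<^sub>0 int) set set" where
  "Hact_m1 M F n g Y = qmap (Cc M F (-1) n) (dmap M F 0 n ` carrier (Cc M F 0 n))
                          (Cact M F (-1) n g) Y"

end

theory Submission
  imports Defs
begin


section \<open>Generic quotient machinery\<close>

definition qlift :: "('a \<Rightarrow> 'b) \<Rightarrow> 'a set \<Rightarrow> 'b" where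
  "qlift h Y = h (SOME a. a \<in> Y)"

lemma quot_comm:
  assumes "comm_group G" "subgroup T G" shows "comm_group (G Mod T)"
  using assms comm_group.abelian_FactGroup by blast

lemma quot_group:
  assumes "comm_group G" "subgroup T G" shows "group (G Mod T)"
  using quot_comm[OF assms] comm_group.axioms(2) by blast

lemma quot_normal:
  assumes "comm_group G" "subgroup T G" shows "T \<lhd> G"
  using assms comm_group.subgroup_imp_normal by blast

lemma quot_mult:
  assumes "comm_group G" "subgroup T G" "a \<in> carrier G" "b \<in> carrier G"
  shows "(T #>\<^bsub>G\<^esub> a) \<otimes>\<^bsub>G Mod T\<^esub> (T #>\<^bsub>G\<^esub> b) = T #>\<^bsub>G\<^esub> (a \<otimes>\<^bsub>G\<^esub> b)"
  using normal.rcos_sum[OF quot_normal[OF assms(1,2)] assms(3,4)] by simp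

lemma quot_carrier:
  "carrier (G Mod T) = (\<lambda>a. T #>\<^bsub>G\<^esub> a) ` carrier G"
  by (simp add: carrier_FactGroup)

lemma quot_in_carrier:
  "a \<in> carrier G \<Longrightarrow> T #>\<^bsub>G\<^esub> a \<in> carrier (G Mod T)"
  by (simp add: carrier_FactGroup)

lemma quot_one:
  assumes "comm_group G" "subgroup T G"
  shows "\<one>\<^bsub>G Mod T\<^esub> = T #>\<^bsub>G\<^esub> \<one>\<^bsub>G\<^esub>"
proof -
  interpret group G using assms comm_group.axioms(2) by blast
  show ?thesis using coset_join2[OF one_closed assms(2) subgroup.one_closed[OF assms(2)]] by simp
qed

lemma quot_eq_iff:
  assumes "comm_group G" "subgroup T G" "a \<in> carrier G" "b \<in> carrier G"
  shows "T #>\<^bsub>G\<^esub> a = T #>\<^bsub>G\<^esub> b \<longleftrightarrow> a \<otimes>\<^bsub>G\<^esub> inv\<^bsub>G\<^esub> b \<in> T"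
proof -
  interpret group G using assms comm_group.axioms(2) by blast
  show ?thesis
  proof
    assume "T #>\<^bsub>G\<^esub> a = T #>\<^bsub>G\<^esub> b"
    then have "a \<in> T #>\<^bsub>G\<^esub> b" using rcos_self[OF assms(3,2)] by simp
    then show "a \<otimes>\<^bsub>G\<^esub> inv\<^bsub>G\<^esub> b \<in> T" using subgroup.rcos_module_imp[OF assms(2) is_group assms(4)] by blast
  next
    assume "a \<otimes>\<^bsub>G\<^esub> inv\<^bsub>G\<^esub> b \<in> T"
    then have "a \<in> T #>\<^bsub>G\<^esub> b" using subgroup.rcos_module_rev[OF assms(2) is_group assms(4,3)] by blast
    then show "T #>\<^bsub>G\<^esub> a = T #>\<^bsub>G\<^esub> b" using repr_independence[OF _ assms(4,2)] by simp
  qed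
qed

lemma quot_mem_self:
  assumes "comm_group G" "subgroup T G" "a \<in> carrier G"
  shows "a \<in> T #>\<^bsub>G\<^esub> a"
  using group.rcos_self[OF comm_group.axioms(2)[OF assms(1)] assms(3,2)] .

lemma quot_some:
  assumes "comm_group G" "subgroup T G" "a \<in> carrier G"
  shows "(SOME x. x \<in> T #>\<^bsub>G\<^esub> a) \<in> carrier G \<and> T #>\<^bsub>G\<^esub> (SOME x. x \<in> T #>\<^bsub>G\<^esub> a) = T #>\<^bsub>G\<^esub> a"
proof -
  interpret group G using assms comm_group.axioms(2) by blast
  have ex: "\<exists>x. x \<in> T #>\<^bsub>G\<^esub> a" using quot_mem_self[OF assms] by blast
  let ?x = "SOME x. x \<in> T #>\<^bsub>G\<^esub> a"
  have x: "?x \<in> T #>\<^bsub>G\<^esub> a" using someI_ex[OF ex] .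
  have c: "?x \<in> carrier G" using subgroup.elemrcos_carrier[OF assms(2) is_group assms(3) x] .
  show ?thesis using c repr_independence[OF x assms(3,2)] by simp
qed

lemma qlift_val:
  assumes "comm_group G" "subgroup T G" "group H" "h \<in> hom G H"
    and kill: "\<And>t. t \<in> T \<Longrightarrow> h t = \<one>\<^bsub>H\<^esub>" and "a \<in> carrier G"
  shows "qlift h (T #>\<^bsub>G\<^esub> a) = h a"
proof -
  interpret G: group G using assms comm_group.axioms(2) by blast
  interpret H: group H by fact
  interpret gh: group_hom G H h by (unfold_locales; fact)
  let ?x = "SOME x. x \<in> T #>\<^bsub>G\<^esub> a"
  have x: "?x \<in> carrier G" "T #>\<^bsub>G\<^esub> ?x = T #>\<^bsub>G\<^esub> a" using quot_some[OF assms(1,2,6)] by auto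
  then have "?x \<otimes>\<^bsub>G\<^esub> inv\<^bsub>G\<^esub> a \<in> T" using quot_eq_iff[OF assms(1,2) x(1) assms(6)] by simp
  then have "h (?x \<otimes>\<^bsub>G\<^esub> inv\<^bsub>G\<^esub> a) = \<one>\<^bsub>H\<^esub>" using kill by blast
  then have "h ?x \<otimes>\<^bsub>H\<^esub> inv\<^bsub>H\<^esub> h a = \<one>\<^bsub>H\<^esub>" using x(1) assms(6) by simp
  then show ?thesis unfolding qlift_def using x(1) assms(6)
    by (metis H.inv_equality H.inv_inv H.r_inv gh.hom_closed H.inv_closed H.inv_solve_right H.l_one)
qed

lemma qlift_hom:
  assumes "comm_group G" "subgroup T G" "group H" "h \<in> hom G H"
    and kill: "\<And>t. t \<in> T \<Longrightarrow> h t = \<one>\<^bsub>H\<^esub>"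
  shows "qlift h \<in> hom (G Mod T) H"
proof (rule homI)
  fix Y assume "Y \<in> carrier (G Mod T)"
  then obtain a where a: "a \<in> carrier G" "Y = T #>\<^bsub>G\<^esub> a" by (auto simp: carrier_FactGroup)
  show "qlift h Y \<in> carrier H" using qlift_val[OF assms a(1)] a assms(4) by (simp add: hom_in_carrier)
next
  fix X Y assume "X \<in> carrier (G Mod T)" "Y \<in> carrier (G Mod T)"
  then obtain a b where a: "a \<in> carrier G" "X = T #>\<^bsub>G\<^esub> a" and b: "b \<in> carrier G" "Y = T #>\<^bsub>G\<^esub> b"
    by (auto simp: carrier_FactGroup)
  have ab: "a \<otimes>\<^bsub>G\<^esub> b \<in> carrier G" using a b assms(1) comm_group.axioms(2) group.is_monoid monoid.m_closed by fastforce
  show "qlift h (X \<otimes>\<^bsub>G Mod T\<^esub> Y) = qlift h X \<otimes>\<^bsub>H\<^esub> qlift h Y"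
    using quot_mult[OF assms(1,2) a(1) b(1)] qlift_val[OF assms a(1)] qlift_val[OF assms b(1)]
      qlift_val[OF assms ab] a b assms(4) by (simp add: hom_mult)
qed

lemma quot_proj_hom:
  assumes "comm_group G" "subgroup T G"
  shows "(\<lambda>a. T #>\<^bsub>G\<^esub> a) \<in> hom G (G Mod T)"
  using normal.r_coset_hom_Mod[OF quot_normal[OF assms]] .

lemma quot_hom_ext:
  assumes "comm_group G" "subgroup T G" "f1 \<in> hom (G Mod T) H" "f2 \<in> hom (G Mod T) H"
    and "\<And>a. a \<in> carrier G \<Longrightarrow> f1 (T #>\<^bsub>G\<^esub> a) = f2 (T #>\<^bsub>G\<^esub> a)"
    and "Y \<in> carrier (G Mod T)"
  shows "f1 Y = f2 Y"
  using assms(5,6) by (auto simp: carrier_FactGroup)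

lemma free_hom_ext:
  assumes "group H" "h1 \<in> hom (free_Abelian_group S) H" "h2 \<in> hom (free_Abelian_group S) H"
    and "\<And>s. s \<in> S \<Longrightarrow> h1 (frag_of s) = h2 (frag_of s)"
    and "Poly_Mapping.keys x \<subseteq> S"
  shows "h1 x = h2 x"
proof -
  interpret g1: group_hom "free_Abelian_group S" H h1
    using assms by (simp add: group_hom_def group_hom_axioms_def)
  interpret g2: group_hom "free_Abelian_group S" H h2
    using assms by (simp add: group_hom_def group_hom_axioms_def)
  show ?thesis
  proof (rule free_Abelian_group_induct[OF assms(5)])
    show "h1 0 = h2 0" using g1.hom_one g2.hom_one by simp
  next
    fix x y assume 2: "Poly_Mapping.keys x \<subseteq> S" "Poly_Mapping.keys y \<subseteq> S" "h1 x = h2 x" "h1 y = h2 y"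
    have "x - y = x \<otimes>\<^bsub>free_Abelian_group S\<^esub> inv\<^bsub>free_Abelian_group S\<^esub> y"
      using 2 by simp
    moreover have "y \<in> carrier (free_Abelian_group S)" "x \<in> carrier (free_Abelian_group S)" using 2 by auto
    ultimately show "h1 (x - y) = h2 (x - y)" using 2
      g1.hom_mult[OF \<open>x \<in> _\<close> g1.G.inv_closed[OF \<open>y \<in> _\<close>]] g1.hom_inv[OF \<open>y \<in> _\<close>]
      g2.hom_mult[OF \<open>x \<in> _\<close> g1.G.inv_closed[OF \<open>y \<in> _\<close>]] g2.hom_inv[OF \<open>y \<in> _\<close>]
      by metis
  next
    fix a assume "a \<in> S"
    then show "h1 (frag_of a) = h2 (frag_of a)" using assms(4) by simp
  qed
qed

lemma frag_extend_hom:
  assumes "\<And>s. s \<in> S \<Longrightarrow> Poly_Mapping.keys (f s) \<subseteq> S'"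
  shows "frag_extend f \<in> hom (free_Abelian_group S) (free_Abelian_group S')"
proof (rule homI)
  fix x assume "x \<in> carrier (free_Abelian_group S)"
  then show "frag_extend f x \<in> carrier (free_Abelian_group S')"
    using keys_frag_extend[of f x] assms by auto
qed (simp add: frag_extend_add)

definition fhom :: "('b, 'c) monoid_scheme \<Rightarrow> ('a \<Rightarrow> 'b) \<Rightarrow> 'a set \<Rightarrow> ('a \<Rightarrow>\<^sub>0 int) \<Rightarrow> 'b" where
  "fhom H f S = (SOME h. h \<in> hom (free_Abelian_group S) H \<and> (\<forall>x\<in>S. h (frag_of x) = f x))"

lemma fhom:
  assumes "comm_group H" "f ` S \<subseteq> carrier H"
  shows "fhom H f S \<in> hom (free_Abelian_group S) H" "\<And>x. x \<in> S \<Longrightarrow> fhom H f S (frag_of x) = f x"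
proof -
  have "\<exists>h. h \<in> hom (free_Abelian_group S) H \<and> (\<forall>x\<in>S. h (frag_of x) = f x)"
    using comm_group.free_Abelian_group_universal[OF assms] by metis
  then have "fhom H f S \<in> hom (free_Abelian_group S) H \<and> (\<forall>x\<in>S. fhom H f S (frag_of x) = f x)"
    unfolding fhom_def by (rule someI_ex)
  then show "fhom H f S \<in> hom (free_Abelian_group S) H" "\<And>x. x \<in> S \<Longrightarrow> fhom H f S (frag_of x) = f x"
    by auto
qed

lemma ghom:
  assumes "group G" "group H" "h \<in> hom G H" shows "group_hom G H h"
  using assms by (simp add: group_hom_def group_hom_axioms_def)

lemma gen_kill:
  assumes "group G" "group H" "h \<in> hom G H" "R \<subseteq> carrier G"
    and "\<And>r. r \<in> R \<Longrightarrow> h r = \<one>\<^bsub>H\<^esub>" and "t \<in> generate G R"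
  shows "h t = \<one>\<^bsub>H\<^esub>"
proof -
  interpret gh: group_hom G H h using ghom[OF assms(1-3)] .
  have "R \<subseteq> kernel G H h" using assms(4,5) by (auto simp: kernel_def)
  then have "generate G R \<subseteq> kernel G H h"
    using gh.G.generate_subgroup_incl gh.subgroup_kernel by blast
  then show ?thesis using assms(6) by (auto simp: kernel_def)
qed

lemma gen_map:
  assumes "group G" "group H" "h \<in> hom G H" "R \<subseteq> carrier G" "R' \<subseteq> carrier H"
    and "h ` R \<subseteq> generate H R'"
  shows "h ` generate G R \<subseteq> generate H R'"
proof -
  interpret gh: group_hom G H h using ghom[OF assms(1-3)] .
  have "h ` generate G R = generate H (h ` R)" using gh.generate_img[OF assms(4)] by simp
  also have "\<dots> \<subseteq> generate H R'"
    using gh.H.generate_subgroup_incl[OF assms(6) gh.H.generate_is_subgroup[OF assms(5)]] .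
  finally show ?thesis .
qed

lemma qmap_eq_qlift: "qmap G' T' h = qlift (\<lambda>a. T' #>\<^bsub>G'\<^esub> h a)"
  by (simp add: qmap_def qlift_def fun_eq_iff)

lemma qmap_val_gen:
  assumes "comm_group G" "comm_group G'" "subgroup T G" "subgroup T' G'" "h \<in> hom G G'"
    "h ` T \<subseteq> T'" "a \<in> carrier G"
  shows "qmap G' T' h (T #>\<^bsub>G\<^esub> a) = T' #>\<^bsub>G'\<^esub> h a"
proof -
  have hh: "(\<lambda>a. T' #>\<^bsub>G'\<^esub> h a) \<in> hom G (G' Mod T')"
    using hom_compose[OF assms(5) quot_proj_hom[OF assms(2,4)]] by (simp add: comp_def)
  have gq: "group (G' Mod T')" using quot_group[OF assms(2,4)] .
  have kill: "T' #>\<^bsub>G'\<^esub> h t = \<one>\<^bsub>G' Mod T'\<^esub>" if "t \<in> T" for t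
  proof -
    have "h t \<in> T'" using assms(6) that by blast
    then show ?thesis using group.coset_join2[OF comm_group.axioms(2)[OF assms(2)] _ assms(4)]
      subgroup.subset[OF assms(4)] by auto
  qed
  show ?thesis unfolding qmap_eq_qlift using qlift_val[OF assms(1,3) gq hh kill assms(7)] .
qed

lemma qmap_hom_gen:
  assumes "comm_group G" "comm_group G'" "subgroup T G" "subgroup T' G'" "h \<in> hom G G'"
    "h ` T \<subseteq> T'"
  shows "qmap G' T' h \<in> hom (G Mod T) (G' Mod T')"
proof -
  have hh: "(\<lambda>a. T' #>\<^bsub>G'\<^esub> h a) \<in> hom G (G' Mod T')"
    using hom_compose[OF assms(5) quot_proj_hom[OF assms(2,4)]] by (simp add: comp_def)
  have gq: "group (G' Mod T')" using quot_group[OF assms(2,4)] .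
  have kill: "T' #>\<^bsub>G'\<^esub> h t = \<one>\<^bsub>G' Mod T'\<^esub>" if "t \<in> T" for t
  proof -
    have "h t \<in> T'" using assms(6) that by blast
    then show ?thesis using group.coset_join2[OF comm_group.axioms(2)[OF assms(2)] _ assms(4)]
      subgroup.subset[OF assms(4)] by auto
  qed
  show ?thesis unfolding qmap_eq_qlift using qlift_hom[OF assms(1,3) gq hh kill] .
qed

section \<open>Tensor products\<close>

definition tens_ok :: "'x set \<Rightarrow> ('x \<Rightarrow> hs \<Rightarrow> 'x) \<Rightarrow> hs set \<Rightarrow> 'w monoid \<Rightarrow> (hs \<Rightarrow> 'w \<Rightarrow> 'w) \<Rightarrow> bool" where
  "tens_ok X rho K W B \<longleftrightarrow> comm_group W \<and> (\<forall>x\<in>X. \<forall>k\<in>K. rho x k \<in> X)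
     \<and> (\<forall>k\<in>K. \<forall>w\<in>carrier W. B k w \<in> carrier W)"

lemma tfree_comm: "comm_group (tfree X W)"
  by (simp add: tfree_def abelian_free_Abelian_group)

lemma tfree_group: "group (tfree X W)"
  by (simp add: tfree_def)

lemma tfree_carrier: "a \<in> carrier (tfree X W) \<longleftrightarrow> Poly_Mapping.keys a \<subseteq> X \<times> carrier W"
  by (simp add: tfree_def)

lemma tfree_mult [simp]: "a \<otimes>\<^bsub>tfree X W\<^esub> b = a + b"
  by (simp add: tfree_def)

lemma tfree_one [simp]: "\<one>\<^bsub>tfree X W\<^esub> = 0"
  by (simp add: tfree_def)

lemma tfree_inv [simp]: "a \<in> carrier (tfree X W) \<Longrightarrow> inv\<^bsub>tfree X W\<^esub> a = - a"
  by (simp add: tfree_def)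

lemma keys_diff_sub: "Poly_Mapping.keys a \<subseteq> S \<Longrightarrow> Poly_Mapping.keys b \<subseteq> S \<Longrightarrow> Poly_Mapping.keys (a - b) \<subseteq> S"
  using keys_diff[of a b] by blast

lemma keys_add_sub: "Poly_Mapping.keys a \<subseteq> S \<Longrightarrow> Poly_Mapping.keys b \<subseteq> S \<Longrightarrow> Poly_Mapping.keys (a + b) \<subseteq> S"
  using keys_add[of a b] by blast

lemma keys_neg_sub: "Poly_Mapping.keys a \<subseteq> S \<Longrightarrow> Poly_Mapping.keys (- a) \<subseteq> S"
  by simp

lemma tfree_diff [intro]: "a \<in> carrier (tfree X W) \<Longrightarrow> b \<in> carrier (tfree X W) \<Longrightarrow> a - b \<in> carrier (tfree X W)"
  by (simp add: tfree_carrier keys_diff_sub)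

lemma tfree_add [intro]: "a \<in> carrier (tfree X W) \<Longrightarrow> b \<in> carrier (tfree X W) \<Longrightarrow> a + b \<in> carrier (tfree X W)"
  by (simp add: tfree_carrier keys_add_sub)

lemma tfree_neg [intro]: "a \<in> carrier (tfree X W) \<Longrightarrow> - a \<in> carrier (tfree X W)"
  by (simp add: tfree_carrier)

lemma tfree_zero [intro]: "0 \<in> carrier (tfree X W)"
  by (simp add: tfree_carrier)

lemma tfree_frag [simp]: "frag_of (x, w) \<in> carrier (tfree X W) \<longleftrightarrow> x \<in> X \<and> w \<in> carrier W"
  by (simp add: tfree_carrier)

lemma frel_sub:
  assumes "tens_ok X rho K W B"
  shows "frel X rho K W B \<subseteq> carrier (tfree X W)"
proof -
  interpret W: comm_group W using assms by (simp add: tens_ok_def)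
  show ?thesis using assms unfolding frel_def tens_ok_def
    by (auto intro!: tfree_diff)
qed

lemma trel_sub:
  assumes "tens_ok X rho K W B"
  shows "subgroup (trel X rho K W B) (tfree X W)"
  unfolding trel_def using group.generate_is_subgroup[OF tfree_group frel_sub[OF assms]] .

lemma tens_comm:
  assumes "tens_ok X rho K W B"
  shows "comm_group (tens X rho K W B)"
  unfolding tens_def using quot_comm[OF tfree_comm trel_sub[OF assms]] .

lemma tens_group:
  assumes "tens_ok X rho K W B"
  shows "group (tens X rho K W B)"
  using tens_comm[OF assms] comm_group.axioms(2) by blast

lemma tens_carrier:
  "carrier (tens X rho K W B) = (\<lambda>a. trel X rho K W B #>\<^bsub>tfree X W\<^esub> a) ` carrier (tfree X W)"
  by (simp add: tens_def carrier_FactGroup)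

lemma tens_in_carrier:
  "Poly_Mapping.keys a \<subseteq> X \<times> carrier W \<Longrightarrow> trel X rho K W B #>\<^bsub>tfree X W\<^esub> a \<in> carrier (tens X rho K W B)"
  by (simp add: tens_carrier tfree_carrier)

lemma tens_mult:
  assumes "tens_ok X rho K W B" "a \<in> carrier (tfree X W)" "b \<in> carrier (tfree X W)"
  shows "(trel X rho K W B #>\<^bsub>tfree X W\<^esub> a) \<otimes>\<^bsub>tens X rho K W B\<^esub> (trel X rho K W B #>\<^bsub>tfree X W\<^esub> b)
       = trel X rho K W B #>\<^bsub>tfree X W\<^esub> (a + b)"
  using quot_mult[OF tfree_comm trel_sub[OF assms(1)] assms(2,3)] by (simp add: tens_def)

lemma tens_one:
  assumes "tens_ok X rho K W B"
  shows "\<one>\<^bsub>tens X rho K W B\<^esub> = trel X rho K W B #>\<^bsub>tfree X W\<^esub> 0"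
  using quot_one[OF tfree_comm trel_sub[OF assms(1)]] by (simp add: tens_def)

lemma tens_one':
  "\<one>\<^bsub>tens X rho K W B\<^esub> = trel X rho K W B"
  by (simp add: tens_def)

lemma tens_eq_iff:
  assumes "tens_ok X rho K W B" "a \<in> carrier (tfree X W)" "b \<in> carrier (tfree X W)"
  shows "trel X rho K W B #>\<^bsub>tfree X W\<^esub> a = trel X rho K W B #>\<^bsub>tfree X W\<^esub> b
     \<longleftrightarrow> a - b \<in> trel X rho K W B"
  using quot_eq_iff[OF tfree_comm trel_sub[OF assms(1)] assms(2,3)] assms(3) by simp

lemma tens_eqI:
  assumes "tens_ok X rho K W B" "a \<in> carrier (tfree X W)" "b \<in> carrier (tfree X W)"
    "a - b \<in> trel X rho K W B"
  shows "trel X rho K W B #>\<^bsub>tfree X W\<^esub> a = trel X rho K W B #>\<^bsub>tfree X W\<^esub> b"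
  using tens_eq_iff[OF assms(1-3)] assms(4) by simp

lemma frel_in_trel: "r \<in> frel X rho K W B \<Longrightarrow> r \<in> trel X rho K W B"
  by (simp add: trel_def generate.incl)

lemma trel_neg:
  assumes "tens_ok X rho K W B" "r \<in> trel X rho K W B"
  shows "- r \<in> trel X rho K W B"
proof -
  have "r \<in> carrier (tfree X W)" using subgroup.subset[OF trel_sub[OF assms(1)]] assms(2) by blast
  then show ?thesis using subgroup.m_inv_closed[OF trel_sub[OF assms(1)] assms(2)] by simp
qed

lemma trel_add:
  assumes "tens_ok X rho K W B" "r \<in> trel X rho K W B" "r' \<in> trel X rho K W B"
  shows "r + r' \<in> trel X rho K W B"
  using subgroup.m_closed[OF trel_sub[OF assms(1)] assms(2,3)] by simp

lemma trel_zero: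
  assumes "tens_ok X rho K W B"
  shows "0 \<in> trel X rho K W B"
  using subgroup.one_closed[OF trel_sub[OF assms(1)]] by simp

lemma trel_diff:
  assumes "tens_ok X rho K W B" "r \<in> trel X rho K W B" "r' \<in> trel X rho K W B"
  shows "r - r' \<in> trel X rho K W B"
  using trel_add[OF assms(1,2) trel_neg[OF assms(1,3)]] by simp

lemma tens_rel1:
  assumes "tens_ok X rho K W B" "x \<in> X" "k \<in> K" "w \<in> carrier W"
  shows "trel X rho K W B #>\<^bsub>tfree X W\<^esub> frag_of (rho x k, w)
       = trel X rho K W B #>\<^bsub>tfree X W\<^esub> frag_of (x, B k w)"
proof (rule tens_eqI[OF assms(1)])
  show "frag_of (rho x k, w) \<in> carrier (tfree X W)" "frag_of (x, B k w) \<in> carrier (tfree X W)"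
    using assms by (auto simp: tfree_carrier tens_ok_def)
  have "frag_of (rho x k, w) - frag_of (x, B k w) \<in> frel X rho K W B"
    unfolding frel_def using assms(2-4) by blast
  then show "frag_of (rho x k, w) - frag_of (x, B k w) \<in> trel X rho K W B" by (rule frel_in_trel)
qed

lemma tens_rel2:
  assumes "tens_ok X rho K W B" "x \<in> X" "w \<in> carrier W" "w' \<in> carrier W"
  shows "trel X rho K W B #>\<^bsub>tfree X W\<^esub> frag_of (x, w \<otimes>\<^bsub>W\<^esub> w')
       = trel X rho K W B #>\<^bsub>tfree X W\<^esub> (frag_of (x, w) + frag_of (x, w'))"
proof -
  interpret W: comm_group W using assms by (simp add: tens_ok_def)
  have "frag_of (x, w \<otimes>\<^bsub>W\<^esub> w') - (frag_of (x, w) + frag_of (x, w')) \<in> frel X rho K W B"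
    unfolding frel_def using assms by (auto simp: diff_diff_eq)
  then show ?thesis
    apply (intro tens_eqI[OF assms(1)])
    using assms by (auto simp: frel_in_trel intro!: tfree_add)
qed

lemma free_hom_add:
  assumes "group H" "h \<in> hom (free_Abelian_group S) H" "Poly_Mapping.keys a \<subseteq> S" "Poly_Mapping.keys b \<subseteq> S"
  shows "h (a + b) = h a \<otimes>\<^bsub>H\<^esub> h b"
  using hom_mult[OF assms(2), of a b] assms by simp

lemma free_hom_neg:
  assumes "group H" "h \<in> hom (free_Abelian_group S) H" "Poly_Mapping.keys a \<subseteq> S"
  shows "h (- a) = inv\<^bsub>H\<^esub> h a"
proof -
  interpret gh: group_hom "free_Abelian_group S" H h using ghom[OF group_free_Abelian_group assms(1,2)] .
  show ?thesis using gh.hom_inv[of a] assms by simp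
qed

lemma free_hom_diff:
  assumes "group H" "h \<in> hom (free_Abelian_group S) H" "Poly_Mapping.keys a \<subseteq> S" "Poly_Mapping.keys b \<subseteq> S"
  shows "h (a - b) = h a \<otimes>\<^bsub>H\<^esub> inv\<^bsub>H\<^esub> h b"
proof -
  have "a - b = a + - b" by simp
  then show ?thesis
    using free_hom_add[OF assms(1,2) assms(3) keys_neg_sub[OF assms(4)]] free_hom_neg[OF assms(1,2,4)]
    by metis
qed

lemma cg_cancel3:
  assumes "comm_group H" "a \<in> carrier H" "b \<in> carrier H"
  shows "(a \<otimes>\<^bsub>H\<^esub> b) \<otimes>\<^bsub>H\<^esub> inv\<^bsub>H\<^esub> a \<otimes>\<^bsub>H\<^esub> inv\<^bsub>H\<^esub> b = \<one>\<^bsub>H\<^esub>"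
proof -
  interpret H: comm_group H by fact
  have "(a \<otimes>\<^bsub>H\<^esub> b) \<otimes>\<^bsub>H\<^esub> inv\<^bsub>H\<^esub> a = b"
    using assms by (metis H.inv_closed H.m_assoc H.m_comm H.r_inv H.r_one)
  then show ?thesis using assms by (simp add: H.r_inv)
qed

definition tlift :: "('b, 'c) monoid_scheme \<Rightarrow> ('x \<times> 'w \<Rightarrow> 'b) \<Rightarrow> 'x set \<Rightarrow> 'w monoid \<Rightarrow> ('x \<times> 'w \<Rightarrow>\<^sub>0 int) set \<Rightarrow> 'b" where
  "tlift H f X W = qlift (fhom H f (X \<times> carrier W))"

lemma tens_lift:
  assumes ok: "tens_ok X rho K W B" and H: "comm_group H"
    and f: "\<And>x w. x \<in> X \<Longrightarrow> w \<in> carrier W \<Longrightarrow> f (x, w) \<in> carrier H"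
    and r1: "\<And>x k w. x \<in> X \<Longrightarrow> k \<in> K \<Longrightarrow> w \<in> carrier W \<Longrightarrow> f (rho x k, w) = f (x, B k w)"
    and r2: "\<And>x w w'. x \<in> X \<Longrightarrow> w \<in> carrier W \<Longrightarrow> w' \<in> carrier W \<Longrightarrow>
                 f (x, w \<otimes>\<^bsub>W\<^esub> w') = f (x, w) \<otimes>\<^bsub>H\<^esub> f (x, w')"
  shows "tlift H f X W \<in> hom (tens X rho K W B) H"
    and "\<And>a. a \<in> carrier (tfree X W) \<Longrightarrow> tlift H f X W (trel X rho K W B #>\<^bsub>tfree X W\<^esub> a) = fhom H f (X \<times> carrier W) a"
    and "\<And>x w. x \<in> X \<Longrightarrow> w \<in> carrier W \<Longrightarrow> tlift H f X W (trel X rho K W B #>\<^bsub>tfree X W\<^esub> frag_of (x, w)) = f (x, w)"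
proof -
  interpret W: comm_group W using ok by (simp add: tens_ok_def)
  interpret H: comm_group H by fact
  let ?h = "fhom H f (X \<times> carrier W)"
  have fs: "f ` (X \<times> carrier W) \<subseteq> carrier H" using f by auto
  have h: "?h \<in> hom (tfree X W) H" using fhom(1)[OF H fs] by (simp add: tfree_def)
  have hf: "?h (frag_of (x, w)) = f (x, w)" if "x \<in> X" "w \<in> carrier W" for x w
    using fhom(2)[OF H fs] that by simp
  have hfree: "?h \<in> hom (free_Abelian_group (X \<times> carrier W)) H" using h by (simp add: tfree_def)
  have kill: "?h t = \<one>\<^bsub>H\<^esub>" if "t \<in> trel X rho K W B" for t
  proof -
    have "?h r = \<one>\<^bsub>H\<^esub>" if "r \<in> frel X rho K W B" for r
    proof -
      from that consider (a) x k w where "x \<in> X" "k \<in> K" "w \<in> carrier W"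
          "r = frag_of (rho x k, w) - frag_of (x, B k w)"
        | (b) x w w' where "x \<in> X" "w \<in> carrier W" "w' \<in> carrier W"
          "r = frag_of (x, w \<otimes>\<^bsub>W\<^esub> w') - frag_of (x, w) - frag_of (x, w')"
        unfolding frel_def by blast
      then show ?thesis
      proof cases
        case a
        have c: "rho x k \<in> X" "B k w \<in> carrier W" using ok a by (auto simp: tens_ok_def)
        show ?thesis using a c
          by (simp add: free_hom_diff[OF H.is_group hfree] hf r1 f)
      next
        case b
        have c: "w \<otimes>\<^bsub>W\<^esub> w' \<in> carrier W" using b by simp
        have "?h r = f (x, w \<otimes>\<^bsub>W\<^esub> w') \<otimes>\<^bsub>H\<^esub> inv\<^bsub>H\<^esub> f (x, w) \<otimes>\<^bsub>H\<^esub> inv\<^bsub>H\<^esub> f (x, w')"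
          using b c by (simp add: free_hom_diff[OF H.is_group hfree] hf keys_diff_sub)
        also have "\<dots> = (f (x, w) \<otimes>\<^bsub>H\<^esub> f (x, w')) \<otimes>\<^bsub>H\<^esub> inv\<^bsub>H\<^esub> f (x, w) \<otimes>\<^bsub>H\<^esub> inv\<^bsub>H\<^esub> f (x, w')"
          using b r2 by simp
        also have "\<dots> = \<one>\<^bsub>H\<^esub>" using b f H by (rule_tac cg_cancel3) auto
        finally show ?thesis .
      qed
    qed
    then show ?thesis using gen_kill[OF tfree_group H.is_group h frel_sub[OF ok] _ that[unfolded trel_def]]
      by blast
  qed
  show hom: "tlift H f X W \<in> hom (tens X rho K W B) H"
    unfolding tlift_def tens_def using qlift_hom[OF tfree_comm trel_sub[OF ok] H.is_group h kill] .
  show v: "tlift H f X W (trel X rho K W B #>\<^bsub>tfree X W\<^esub> a) = ?h a" if "a \<in> carrier (tfree X W)" for a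
    unfolding tlift_def using qlift_val[OF tfree_comm trel_sub[OF ok] H.is_group h kill that] .
  show "tlift H f X W (trel X rho K W B #>\<^bsub>tfree X W\<^esub> frag_of (x, w)) = f (x, w)"
    if "x \<in> X" "w \<in> carrier W" for x w
    using v[of "frag_of (x, w)"] hf that by simp
qed

lemma tens_ext:
  assumes ok: "tens_ok X rho K W B" and H: "group H"
    and h1: "f1 \<in> hom (tens X rho K W B) H" and h2: "f2 \<in> hom (tens X rho K W B) H"
    and eq: "\<And>x w. x \<in> X \<Longrightarrow> w \<in> carrier W \<Longrightarrow>
        f1 (trel X rho K W B #>\<^bsub>tfree X W\<^esub> frag_of (x, w)) = f2 (trel X rho K W B #>\<^bsub>tfree X W\<^esub> frag_of (x, w))"
    and Y: "Y \<in> carrier (tens X rho K W B)"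
  shows "f1 Y = f2 Y"
proof -
  obtain a where a: "a \<in> carrier (tfree X W)" "Y = trel X rho K W B #>\<^bsub>tfree X W\<^esub> a"
    using Y by (auto simp: tens_carrier)
  have p: "(\<lambda>a. trel X rho K W B #>\<^bsub>tfree X W\<^esub> a) \<in> hom (tfree X W) (tens X rho K W B)"
    unfolding tens_def using quot_proj_hom[OF tfree_comm trel_sub[OF ok]] .
  have c1: "(f1 \<circ> (\<lambda>a. trel X rho K W B #>\<^bsub>tfree X W\<^esub> a)) \<in> hom (free_Abelian_group (X \<times> carrier W)) H"
    using hom_compose[OF p h1] by (simp add: tfree_def)
  have c2: "(f2 \<circ> (\<lambda>a. trel X rho K W B #>\<^bsub>tfree X W\<^esub> a)) \<in> hom (free_Abelian_group (X \<times> carrier W)) H"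
    using hom_compose[OF p h2] by (simp add: tfree_def)
  have "(f1 \<circ> (\<lambda>a. trel X rho K W B #>\<^bsub>tfree X W\<^esub> a)) a = (f2 \<circ> (\<lambda>a. trel X rho K W B #>\<^bsub>tfree X W\<^esub> a)) a"
    apply (rule free_hom_ext[OF H c1 c2])
    using eq a by (auto simp: tfree_carrier)
  then show ?thesis using a by simp
qed

lemma tens_map:
  assumes ok: "tens_ok X rho K W B" and ok': "tens_ok X' rho' K' W' B'"
    and phi: "\<And>x w. x \<in> X \<Longrightarrow> w \<in> carrier W \<Longrightarrow> phi (x, w) \<in> carrier (tfree X' W')"
    and m1: "\<And>x k w. x \<in> X \<Longrightarrow> k \<in> K \<Longrightarrow> w \<in> carrier W \<Longrightarrow>
         phi (rho x k, w) - phi (x, B k w) \<in> trel X' rho' K' W' B'"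
    and m2: "\<And>x w w'. x \<in> X \<Longrightarrow> w \<in> carrier W \<Longrightarrow> w' \<in> carrier W \<Longrightarrow>
         phi (x, w \<otimes>\<^bsub>W\<^esub> w') - phi (x, w) - phi (x, w') \<in> trel X' rho' K' W' B'"
  shows "qmap (tfree X' W') (trel X' rho' K' W' B') (frag_extend phi) \<in> hom (tens X rho K W B) (tens X' rho' K' W' B')"
    and "\<And>a. a \<in> carrier (tfree X W) \<Longrightarrow> qmap (tfree X' W') (trel X' rho' K' W' B') (frag_extend phi) (trel X rho K W B #>\<^bsub>tfree X W\<^esub> a)
           = trel X' rho' K' W' B' #>\<^bsub>tfree X' W'\<^esub> frag_extend phi a"
    and "frag_extend phi \<in> hom (tfree X W) (tfree X' W')"
proof -
  show h: "frag_extend phi \<in> hom (tfree X W) (tfree X' W')"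
    unfolding tfree_def by (rule frag_extend_hom) (use phi in \<open>auto simp: tfree_carrier\<close>)
  have sub: "frag_extend phi ` frel X rho K W B \<subseteq> trel X' rho' K' W' B'"
  proof
    fix y assume "y \<in> frag_extend phi ` frel X rho K W B"
    then obtain r where r: "r \<in> frel X rho K W B" "y = frag_extend phi r" by blast
    from r(1) consider (a) x k w where "x \<in> X" "k \<in> K" "w \<in> carrier W"
          "r = frag_of (rho x k, w) - frag_of (x, B k w)"
        | (b) x w w' where "x \<in> X" "w \<in> carrier W" "w' \<in> carrier W"
          "r = frag_of (x, w \<otimes>\<^bsub>W\<^esub> w') - frag_of (x, w) - frag_of (x, w')"
        unfolding frel_def by blast
    then show "y \<in> trel X' rho' K' W' B'"
    proof cases
      case a then show ?thesis using r m1 by (simp add: frag_extend_diff)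
    next
      case b then show ?thesis using r m2 by (simp add: frag_extend_diff)
    qed
  qed
  have img: "frag_extend phi ` trel X rho K W B \<subseteq> trel X' rho' K' W' B'"
    unfolding trel_def
    using gen_map[OF tfree_group tfree_group h frel_sub[OF ok] frel_sub[OF ok']] sub
    unfolding trel_def by blast
  show "qmap (tfree X' W') (trel X' rho' K' W' B') (frag_extend phi) \<in> hom (tens X rho K W B) (tens X' rho' K' W' B')"
    unfolding tens_def using qmap_hom_gen[OF tfree_comm tfree_comm trel_sub[OF ok] trel_sub[OF ok'] h img] .
  show "qmap (tfree X' W') (trel X' rho' K' W' B') (frag_extend phi) (trel X rho K W B #>\<^bsub>tfree X W\<^esub> a)
           = trel X' rho' K' W' B' #>\<^bsub>tfree X' W'\<^esub> frag_extend phi a" if "a \<in> carrier (tfree X W)" for a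
    using qmap_val_gen[OF tfree_comm tfree_comm trel_sub[OF ok] trel_sub[OF ok'] h img that] .
qed

lemma tens_frag_hom:
  assumes ok: "tens_ok X rho K W B" and x: "x \<in> X"
  shows "(\<lambda>w. trel X rho K W B #>\<^bsub>tfree X W\<^esub> frag_of (x, w)) \<in> hom W (tens X rho K W B)"
proof (rule homI)
  interpret W: comm_group W using ok by (simp add: tens_ok_def)
  fix w assume "w \<in> carrier W"
  then show "trel X rho K W B #>\<^bsub>tfree X W\<^esub> frag_of (x, w) \<in> carrier (tens X rho K W B)"
    using x by (auto simp: tens_carrier)
next
  interpret W: comm_group W using ok by (simp add: tens_ok_def)
  fix w w' assume "w \<in> carrier W" "w' \<in> carrier W"
  then show "trel X rho K W B #>\<^bsub>tfree X W\<^esub> frag_of (x, w \<otimes>\<^bsub>W\<^esub> w') =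
       (trel X rho K W B #>\<^bsub>tfree X W\<^esub> frag_of (x, w)) \<otimes>\<^bsub>tens X rho K W B\<^esub> (trel X rho K W B #>\<^bsub>tfree X W\<^esub> frag_of (x, w'))"
    using tens_rel2[OF ok x] tens_mult[OF ok] x by simp
qed


section \<open>The groups hat S_n\<close>

lemma hatS_iff: "(s, d) \<in> hatS n \<longleftrightarrow> s permutes {..<n} \<and> (if 2 \<le> n then (odd d \<longleftrightarrow> sign s = -1) else d = 0)"
  by (simp add: hatS_def)

lemma hatS_perm: "x \<in> hatS n \<Longrightarrow> fst x permutes {..<n}"
  by (cases x) (simp add: hatS_def)

lemma permutes_lessThan_1: "s permutes {..<Suc 0} \<longleftrightarrow> s = id"
proof -
  have "{..<Suc 0} = {0}" by auto
  then show ?thesis by simp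
qed

lemma hatS_small: "n < 2 \<Longrightarrow> hatS n = {hone}"
proof -
  assume n: "n < 2"
  then have "n = 0 \<or> n = 1" by auto
  then show ?thesis
    by (auto simp: hatS_def hone_def permutes_lessThan_1 permutes_id)
qed

lemma hone_in [simp]: "hone \<in> hatS n"
  by (simp add: hatS_def hone_def permutes_id)

lemma hmul_assoc: "hmul (hmul x y) z = hmul x (hmul y z)"
  by (simp add: hmul_def comp_assoc add.assoc)

lemma hmul_hone [simp]: "hmul x hone = x" "hmul hone x = x"
  by (simp_all add: hmul_def hone_def)

lemma sign_cases: "sign p = 1 \<or> sign p = -1"
  unfolding sign_def by auto

lemma perm_lessThan: "s permutes {..<(n::nat)} \<Longrightarrow> permutation s"
  using permutation_permutes[of s] finite_lessThan[of n] by auto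

lemma hmul_closed:
  assumes "x \<in> hatS n" "y \<in> hatS n"
  shows "hmul x y \<in> hatS n"
proof -
  obtain s d t e where x: "x = (s, d)" and y: "y = (t, e)" by fastforce
  have ps: "s permutes {..<n}" "t permutes {..<n}" using assms x y by (auto simp: hatS_def)
  have sg: "sign (s \<circ> t) = sign s * sign t" using sign_compose perm_lessThan ps by blast
  have c: "sign s = 1 \<or> sign s = -1" "sign t = 1 \<or> sign t = -1"
    using sign_cases by auto
  show ?thesis using assms x y c sg by (auto simp: hatS_def hmul_def permutes_compose)
qed

definition hinv :: "hs \<Rightarrow> hs" where
  "hinv x = (inv_into UNIV (fst x), - snd x)"

lemma hinv_closed:
  assumes "x \<in> hatS n" shows "hinv x \<in> hatS n"
proof -
  obtain s d where x: "x = (s, d)" by fastforce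
  have ps: "s permutes {..<n}" using assms x by (auto simp: hatS_def)
  have "sign (inv_into UNIV s) = sign s" using sign_inverse perm_lessThan ps by blast
  then show ?thesis using assms x ps by (auto simp: hatS_def hinv_def permutes_inv)
qed

lemma hinv_l: "x \<in> hatS n \<Longrightarrow> hmul (hinv x) x = hone"
  by (cases x) (auto simp: hatS_def hinv_def hmul_def hone_def permutes_inv_o)

lemma hinv_r: "x \<in> hatS n \<Longrightarrow> hmul x (hinv x) = hone"
  by (cases x) (auto simp: hatS_def hinv_def hmul_def hone_def permutes_inv_o)

lemma hatSgrp_simps [simp]:
  "carrier (hatSgrp n) = hatS n" "monoid.mult (hatSgrp n) = hmul" "one (hatSgrp n) = hone"
  by (simp_all add: hatSgrp_def)

lemma group_hatS: "group (hatSgrp n)"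
proof (rule groupI)
  show "\<And>x y. x \<in> carrier (hatSgrp n) \<Longrightarrow> y \<in> carrier (hatSgrp n) \<Longrightarrow> x \<otimes>\<^bsub>hatSgrp n\<^esub> y \<in> carrier (hatSgrp n)"
    by (simp add: hmul_closed)
  show "\<one>\<^bsub>hatSgrp n\<^esub> \<in> carrier (hatSgrp n)" by simp
  show "\<And>x y z. x \<in> carrier (hatSgrp n) \<Longrightarrow> y \<in> carrier (hatSgrp n) \<Longrightarrow> z \<in> carrier (hatSgrp n) \<Longrightarrow>
          x \<otimes>\<^bsub>hatSgrp n\<^esub> y \<otimes>\<^bsub>hatSgrp n\<^esub> z = x \<otimes>\<^bsub>hatSgrp n\<^esub> (y \<otimes>\<^bsub>hatSgrp n\<^esub> z)"
    by (simp add: hmul_assoc)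
  show "\<And>x. x \<in> carrier (hatSgrp n) \<Longrightarrow> \<one>\<^bsub>hatSgrp n\<^esub> \<otimes>\<^bsub>hatSgrp n\<^esub> x = x" by simp
  show "\<And>x. x \<in> carrier (hatSgrp n) \<Longrightarrow> \<exists>y\<in>carrier (hatSgrp n). y \<otimes>\<^bsub>hatSgrp n\<^esub> x = \<one>\<^bsub>hatSgrp n\<^esub>"
    using hinv_closed hinv_l by fastforce
qed

lemma hatS_mono:
  assumes "j \<le> n" shows "hatS j \<subseteq> hatS n"
proof
  fix x assume x: "x \<in> hatS j"
  obtain s d where xs: "x = (s, d)" by fastforce
  show "x \<in> hatS n"
  proof (cases "2 \<le> j")
    case True
    then show ?thesis using x xs assms permutes_subset[of s "{..<j}" "{..<n}"] by (auto simp: hatS_def)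
  next
    case False
    then have "x = hone" using hatS_small x by auto
    then show ?thesis by simp
  qed
qed

section \<open>Shifted permutations\<close>

definition shiftp :: "nat \<Rightarrow> (nat \<Rightarrow> nat) \<Rightarrow> nat \<Rightarrow> nat" where
  "shiftp c s = (\<lambda>i. if c \<le> i then s (i - c) + c else i)"

lemma i2_shiftp:
  assumes "l \<le> m" "fst x permutes {..<l}"
  shows "i2 m l x = (shiftp (m - l) (fst x), snd x)"
proof -
  have "(if m - l \<le> i \<and> i < m then fst x (i - (m - l)) + (m - l) else i) = shiftp (m - l) (fst x) i" for i
  proof (cases "m - l \<le> i \<and> i < m")
    case False
    show ?thesis
    proof (cases "m - l \<le> i")
      case True
      then have "i \<ge> m" using False by auto
      then have "fst x (i - (m - l)) = i - (m - l)" using assms permutes_not_in[OF assms(2)] by auto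
      then show ?thesis using False True by (simp add: shiftp_def)
    qed (use False in \<open>simp add: shiftp_def\<close>)
  qed (simp add: shiftp_def)
  then show ?thesis by (simp add: i2_def fun_eq_iff)
qed

lemma shiftp_comp: "shiftp c (s \<circ> t) = shiftp c s \<circ> shiftp c t"
  by (auto simp: shiftp_def fun_eq_iff)

lemma shiftp_id [simp]: "shiftp c id = id"
  by (auto simp: shiftp_def fun_eq_iff)

lemma shiftp_shiftp: "shiftp c (shiftp c' s) = shiftp (c + c') s"
  by (auto simp: shiftp_def fun_eq_iff)

lemma shiftp_transpose: "shiftp c (transpose a b) = transpose (a + c) (b + c)"
  by (auto simp: shiftp_def fun_eq_iff transpose_def)

lemma shiftp_permutes:
  assumes "s permutes {..<l}" "c + l \<le> m"
  shows "shiftp c s permutes {..<m}"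
proof -
  have inv: "shiftp c (inv_into UNIV s) \<circ> shiftp c s = id" "shiftp c s \<circ> shiftp c (inv_into UNIV s) = id"
    using permutes_inv_o[OF assms(1)] by (simp_all flip: shiftp_comp)
  have bij: "bij (shiftp c s)" using inv by (metis bij_def comp_eq_id_dest o_bij)
  have out: "shiftp c s i = i" if "i \<notin> {..<m}" for i
  proof -
    have "i - c \<notin> {..<l}" using that assms by auto
    then show ?thesis using that assms permutes_not_in[OF assms(1)] by (auto simp: shiftp_def)
  qed
  have "\<forall>y. \<exists>!x. shiftp c s x = y" using bij by (metis bij_pointE)
  then show ?thesis using out by (simp add: permutes_def)
qed

lemma sign_shiftp:
  assumes "s permutes {..<l}"
  shows "sign (shiftp c s) = sign s"
  using assms finite_lessThan[of l]
proof (induction rule: permutes_induct)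
  case id
  have "shiftp c (\<lambda>a. a) = id" by (auto simp: shiftp_def)
  then show ?case by (simp add: id_def)
next
  case (swap a b p)
  have pp: "permutation p" using swap perm_lessThan by blast
  have pq: "permutation (shiftp c p)" using shiftp_permutes[OF \<open>p permutes {..<l}\<close>, of c "c + l"] perm_lessThan by auto
  have eq: "shiftp c (transpose a b \<circ> p) = transpose (a + c) (b + c) \<circ> shiftp c p"
    by (simp add: shiftp_comp shiftp_transpose)
  have "sign (shiftp c (transpose a b \<circ> p)) = sign (transpose (a + c) (b + c)) * sign (shiftp c p)"
    by (simp only: eq sign_compose[OF permutation_swap_id pq])
  also have "\<dots> = sign (transpose a b) * sign p" using swap by (simp add: sign_swap_id)
  also have "\<dots> = sign (transpose a b \<circ> p)" by (simp only: sign_compose[OF permutation_swap_id pp])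
  finally show ?case .
qed

lemma shiftp_commute:
  assumes "t permutes {..<c}"
  shows "shiftp c s \<circ> t = t \<circ> shiftp c s"
proof
  fix i
  show "(shiftp c s \<circ> t) i = (t \<circ> shiftp c s) i"
  proof (cases "c \<le> i")
    case True
    then show ?thesis using permutes_not_in[OF assms] by (simp add: shiftp_def)
  next
    case False
    then have "t i < c" using permutes_in_image[OF assms] by auto
    then show ?thesis using False by (simp add: shiftp_def)
  qed
qed


section \<open>i2 and cosets\<close>

lemma i2_mem:
  assumes "l \<le> m" "x \<in> hatS l"
  shows "i2 m l x \<in> hatS m"
proof (cases "2 \<le> l")
  case True
  obtain s d where x: "x = (s, d)" by fastforce
  have ps: "s permutes {..<l}" using assms x by (simp add: hatS_def)
  have e: "i2 m l x = (shiftp (m - l) s, d)" using i2_shiftp[OF assms(1)] ps x by simp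
  have "shiftp (m - l) s permutes {..<m}" using shiftp_permutes[OF ps, of "m - l" m] assms by simp
  moreover have "sign (shiftp (m - l) s) = sign s" using sign_shiftp[OF ps] .
  ultimately show ?thesis using e assms x True by (auto simp: hatS_def)
next
  case False
  then have "x = hone" using hatS_small assms by auto
  then have "i2 m l x = hone" by (simp add: i2_def hone_def fun_eq_iff)
  then show ?thesis by simp
qed

lemma i2_hone [simp]: "i2 m l hone = hone"
  by (simp add: i2_def hone_def fun_eq_iff)

lemma i2_hmul:
  assumes "l \<le> m" "x \<in> hatS l" "y \<in> hatS l"
  shows "i2 m l (hmul x y) = hmul (i2 m l x) (i2 m l y)"
proof -
  have p: "fst x permutes {..<l}" "fst y permutes {..<l}" "fst (hmul x y) permutes {..<l}"
    using assms hatS_perm hmul_closed by blast+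
  show ?thesis using i2_shiftp[OF assms(1) p(1)] i2_shiftp[OF assms(1) p(2)] i2_shiftp[OF assms(1) p(3)]
    by (simp add: hmul_def shiftp_comp)
qed

lemma i2_hom:
  assumes "l \<le> m"
  shows "i2 m l \<in> hom (hatSgrp l) (hatSgrp m)"
  by (rule homI) (simp_all add: i2_mem[OF assms] i2_hmul[OF assms])

definition I2 :: "nat \<Rightarrow> nat \<Rightarrow> hs set" where
  "I2 m n = i2 m (m - n) ` hatS (m - n)"

lemma I2_subgroup: "subgroup (I2 m n) (hatSgrp m)"
proof -
  interpret gh: group_hom "hatSgrp (m - n)" "hatSgrp m" "i2 m (m - n)"
    using ghom[OF group_hatS group_hatS i2_hom[of "m - n" m]] by simp
  show ?thesis using gh.img_is_subgroup by (simp add: I2_def)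
qed

lemma hcos_I2: "hcos m n t = t <#\<^bsub>hatSgrp m\<^esub> I2 m n"
  by (simp add: hcos_def I2_def)

lemma hcos_mem: "x \<in> hcos m n t \<longleftrightarrow> (\<exists>u\<in>hatS (m - n). x = hmul t (i2 m (m - n) u))"
  by (auto simp: hcos_def l_coset_def)

lemma hcos_self: "t \<in> hcos m n t"
  unfolding hcos_mem by (rule bexI[of _ hone]) auto

lemma hcos_sub: "t \<in> hatS m \<Longrightarrow> hcos m n t \<subseteq> hatS m"
  by (auto simp: hcos_mem intro!: hmul_closed i2_mem)

lemma hcos_eq:
  assumes "t \<in> hatS m" "t' \<in> hcos m n t"
  shows "hcos m n t' = hcos m n t"
proof -
  have "t <#\<^bsub>hatSgrp m\<^esub> I2 m n = t' <#\<^bsub>hatSgrp m\<^esub> I2 m n"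
    by (rule group.l_repr_independence[OF group_hatS]) (use assms I2_subgroup in \<open>auto simp: hcos_I2\<close>)
  then show ?thesis by (simp add: hcos_I2)
qed

lemma hcos_eqI:
  assumes "t \<in> hatS m" "u \<in> hatS (m - n)"
  shows "hcos m n (hmul t (i2 m (m - n) u)) = hcos m n t"
proof -
  have "hmul t (i2 m (m - n) u) \<in> hcos m n t" using assms(2) by (auto simp: hcos_mem)
  then show ?thesis using hcos_eq[OF assms(1)] by blast
qed

lemma hcos_nn: "hcos n n t = {t}"
proof -
  have "hatS 0 = {hone}" using hatS_small by simp
  then show ?thesis by (auto simp: hcos_mem)
qed

lemma FIhat_iff: "f \<in> FIhat n m \<longleftrightarrow> n \<le> m \<and> (\<exists>t\<in>hatS m. f = hcos m n t)"
  by (auto simp: FIhat_def)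

lemma hcos_in_FIhat: "n \<le> m \<Longrightarrow> t \<in> hatS m \<Longrightarrow> hcos m n t \<in> FIhat n m"
  by (auto simp: FIhat_iff)

lemma i2_SH1:
  assumes "n \<le> m" "m \<le> l" "v \<in> hatS (m - n)"
  shows "i2 m (m - n) v = i2 l (l - n) v"
proof -
  have p: "fst v permutes {..<m - n}" using assms hatS_perm by blast
  have p': "fst v permutes {..<l - n}" using permutes_subset[OF p] assms by auto
  show ?thesis using i2_shiftp[of "m - n" m v] i2_shiftp[of "l - n" l v] p p' assms by simp
qed

lemma i2_SH2:
  assumes "n \<le> m" "m \<le> l" "u \<in> hatS (l - m)"
  shows "i2 l (l - m) u = i2 l (l - n) (i2 (l - n) (l - m) u)"
    and "i2 (l - n) (l - m) u \<in> hatS (l - n)"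
proof -
  show m: "i2 (l - n) (l - m) u \<in> hatS (l - n)" using i2_mem assms by auto
  have p: "fst u permutes {..<l - m}" using assms hatS_perm by blast
  have p2: "fst (i2 (l - n) (l - m) u) permutes {..<l - n}" using hatS_perm[OF m] .
  have e1: "i2 (l - n) (l - m) u = (shiftp (m - n) (fst u), snd u)"
    using i2_shiftp[of "l - m" "l - n" u] p assms by simp
  show "i2 l (l - m) u = i2 l (l - n) (i2 (l - n) (l - m) u)"
    using i2_shiftp[of "l - m" l u] i2_shiftp[of "l - n" l "i2 (l - n) (l - m) u"] p p2 assms e1
    by (simp add: shiftp_shiftp)
qed

lemma hmul_commute_i2:
  assumes "a \<in> hatS m" "m \<le> l - k" "k \<le> l" "u \<in> hatS k"
  shows "hmul a (i2 l k u) = hmul (i2 l k u) a"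
proof -
  have pa: "fst a permutes {..<l - k}" using permutes_subset[OF hatS_perm[OF assms(1)]] assms by auto
  have pu: "fst u permutes {..<k}" using hatS_perm[OF assms(4)] .
  show ?thesis using i2_shiftp[OF assms(3) pu] shiftp_commute[OF pa, of "fst u"]
    by (simp add: hmul_def add.commute)
qed

lemma ficomp_hcos:
  assumes "n \<le> m" "m \<le> l" "s \<in> hatS m" "t \<in> hatS l"
  shows "ficomp n m l (hcos m n s) (hcos l m t) = hcos l n (hmul t s)"
proof
  show "hcos l n (hmul t s) \<subseteq> ficomp n m l (hcos m n s) (hcos l m t)"
    unfolding ficomp_def using hcos_self by blast
next
  have sl: "s \<in> hatS l" using hatS_mono assms by blast
  have ts: "hmul t s \<in> hatS l" using hmul_closed sl assms by blast
  show "ficomp n m l (hcos m n s) (hcos l m t) \<subseteq> hcos l n (hmul t s)"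
  proof
    fix x assume "x \<in> ficomp n m l (hcos m n s) (hcos l m t)"
    then obtain s' t' where s': "s' \<in> hcos m n s" and t': "t' \<in> hcos l m t"
      and x: "x \<in> hcos l n (hmul t' s')" unfolding ficomp_def by blast
    obtain v where v: "v \<in> hatS (m - n)" "s' = hmul s (i2 m (m - n) v)" using s' by (auto simp: hcos_mem)
    obtain u where u: "u \<in> hatS (l - m)" "t' = hmul t (i2 l (l - m) u)" using t' by (auto simp: hcos_mem)
    define u' where "u' = i2 (l - n) (l - m) u"
    have u': "u' \<in> hatS (l - n)" "i2 l (l - m) u = i2 l (l - n) u'"
      using i2_SH2[OF assms(1,2) u(1)] by (simp_all add: u'_def)
    have v': "v \<in> hatS (l - n)" "i2 m (m - n) v = i2 l (l - n) v"
    proof -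
      have "m - n \<le> l - n" using assms by auto
      then show "v \<in> hatS (l - n)" using hatS_mono[of "m - n" "l - n"] v by blast
      show "i2 m (m - n) v = i2 l (l - n) v" using i2_SH1[OF assms(1,2) v(1)] .
    qed
    have com: "hmul (i2 l (l - m) u) s = hmul s (i2 l (l - m) u)"
      using hmul_commute_i2[OF assms(3), of l "l - m" u] assms u by simp
    have "hmul t' s' = hmul (hmul t s) (hmul (i2 l (l - n) u') (i2 l (l - n) v))"
      using u v com u' v' by (metis hmul_assoc)
    also have "\<dots> = hmul (hmul t s) (i2 l (l - n) (hmul u' v))"
      using i2_hmul[of "l - n" l u' v] u' v' by simp
    finally have e: "hmul t' s' = hmul (hmul t s) (i2 l (l - n) (hmul u' v))" .
    have "hmul u' v \<in> hatS (l - n)" using hmul_closed u' v' by blast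
    then have "hcos l n (hmul t' s') = hcos l n (hmul t s)"
      using e hcos_eqI[OF ts] by simp
    then show "x \<in> hcos l n (hmul t s)" using x by simp
  qed
qed

lemma firact_hcos:
  assumes "n \<le> m" "s \<in> hatS m" "k \<in> hatS n"
  shows "firact n m (hcos m n s) k = hcos m n (hmul s k)"
  unfolding firact_def using ficomp_hcos[OF order_refl assms(1) assms(3,2)] .

lemma ficomp_FIhat:
  assumes "f \<in> FIhat n m" "g \<in> FIhat m l"
  shows "ficomp n m l f g \<in> FIhat n l"
proof -
  obtain s t where "n \<le> m" "m \<le> l" "s \<in> hatS m" "t \<in> hatS l" "f = hcos m n s" "g = hcos l m t"
    using assms by (auto simp: FIhat_iff)
  then show ?thesis using ficomp_hcos hcos_in_FIhat hmul_closed hatS_mono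
    by (metis order_trans subsetD)
qed

lemma ficomp_assoc:
  assumes "f \<in> FIhat n m" "g \<in> FIhat m l" "h \<in> FIhat l p"
  shows "ficomp n l p (ficomp n m l f g) h = ficomp n m p f (ficomp m l p g h)"
proof -
  obtain s t r where st: "n \<le> m" "m \<le> l" "l \<le> p" "s \<in> hatS m" "t \<in> hatS l" "r \<in> hatS p"
     "f = hcos m n s" "g = hcos l m t" "h = hcos p l r"
    using assms by (auto simp: FIhat_iff)
  have sl: "s \<in> hatS l" "t \<in> hatS p" using hatS_mono st by blast+
  show ?thesis using st sl
    by (simp add: ficomp_hcos hmul_closed hmul_assoc)
qed

lemma firact_FIhat:
  assumes "f \<in> FIhat n m" "k \<in> hatS n"
  shows "firact n m f k \<in> FIhat n m"
proof -
  obtain s where s: "n \<le> m" "s \<in> hatS m" "f = hcos m n s" using assms by (auto simp: FIhat_iff)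
  have "k \<in> hatS m" using hatS_mono s assms by blast
  then show ?thesis using s assms firact_hcos hcos_in_FIhat hmul_closed by metis
qed


section \<open>The free module I(V)\<close>

locale ctx =
  fixes V :: "nat \<Rightarrow> 'v monoid" and A :: "nat \<Rightarrow> hs \<Rightarrow> 'v \<Rightarrow> 'v"
  assumes sm: "smod V A"
begin

lemma Vcomm: "comm_group (V n)"
  using sm by (simp add: smod_def)

lemma Vgrp: "group (V n)"
  using Vcomm comm_group.axioms(2) by blast

lemma A_hom: "g \<in> hatS n \<Longrightarrow> A n g \<in> hom (V n) (V n)"
  using sm by (simp add: smod_def)

lemma A_carr: "g \<in> hatS n \<Longrightarrow> v \<in> carrier (V n) \<Longrightarrow> A n g v \<in> carrier (V n)"
  by (rule hom_in_carrier[OF A_hom])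

lemma A_mult: "g \<in> hatS n \<Longrightarrow> v \<in> carrier (V n) \<Longrightarrow> w \<in> carrier (V n) \<Longrightarrow>
    A n g (v \<otimes>\<^bsub>V n\<^esub> w) = A n g v \<otimes>\<^bsub>V n\<^esub> A n g w"
  by (rule hom_mult[OF A_hom])

lemma A_one: "v \<in> carrier (V n) \<Longrightarrow> A n hone v = v"
  using sm unfolding smod_def by blast

lemma A_hmul: "g \<in> hatS n \<Longrightarrow> h \<in> hatS n \<Longrightarrow> v \<in> carrier (V n) \<Longrightarrow> A n (hmul g h) v = A n g (A n h v)"
  using sm unfolding smod_def by blast

abbreviation "Ic n m \<equiv> Icomp V A n m"
abbreviation "TRi n m \<equiv> trel (FIhat n m) (firact n m) (hatS n) (V n) (A n)"
abbreviation "TFi n m \<equiv> tfree (FIhat n m) (V n)"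

lemma okI: "tens_ok (FIhat n m) (firact n m) (hatS n) (V n) (A n)"
  using Vcomm firact_FIhat A_carr by (simp add: tens_ok_def)

lemma Ic_comm: "comm_group (Ic n m)"
  unfolding Icomp_def using tens_comm[OF okI] .

lemma Ic_grp: "group (Ic n m)"
  using Ic_comm comm_group.axioms(2) by blast

lemma Ic_def': "Ic n m = tens (FIhat n m) (firact n m) (hatS n) (V n) (A n)"
  by (simp add: Icomp_def)

lemma IV_grp: "group (IV V A m)"
  unfolding IV_def using Ic_grp by simp

lemma IV_carrier: "carrier (IV V A m) = (\<Pi>\<^sub>E n\<in>{..m}. carrier (Ic n m))"
proof -
  have "carrier (IV V A m) = {x \<in> \<Pi>\<^sub>E n\<in>{..m}. carrier (Ic n m). finite {i \<in> {..m}. x i \<noteq> \<one>\<^bsub>Ic i m\<^esub>}}"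
    unfolding IV_def by (rule carrier_sum_group) (rule Ic_grp)
  then show ?thesis by auto
qed

lemma IV_mult: "x \<otimes>\<^bsub>IV V A m\<^esub> y = (\<lambda>i\<in>{..m}. x i \<otimes>\<^bsub>Ic i m\<^esub> y i)"
  unfolding IV_def by simp

lemma IV_one: "\<one>\<^bsub>IV V A m\<^esub> = (\<lambda>i\<in>{..m}. \<one>\<^bsub>Ic i m\<^esub>)"
  unfolding IV_def by simp

lemma IV_comm: "comm_group (IV V A m)"
proof (rule group.group_comm_groupI[OF IV_grp])
  fix x y assume xy: "x \<in> carrier (IV V A m)" "y \<in> carrier (IV V A m)"
  have "x i \<otimes>\<^bsub>Ic i m\<^esub> y i = y i \<otimes>\<^bsub>Ic i m\<^esub> x i" if "i \<in> {..m}" for i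
    using xy that comm_monoid.m_comm[OF comm_group.axioms(1)[OF Ic_comm]] by (simp add: IV_carrier PiE_iff)
  then show "x \<otimes>\<^bsub>IV V A m\<^esub> y = y \<otimes>\<^bsub>IV V A m\<^esub> x"
    unfolding IV_mult by (intro restrict_ext) simp
qed

definition phig :: "nat \<Rightarrow> nat \<Rightarrow> nat \<Rightarrow> hs set \<Rightarrow> (hs set \<times> 'v \<Rightarrow>\<^sub>0 int) \<Rightarrow> (hs set \<times> 'v \<Rightarrow>\<^sub>0 int)" where
  "phig j m l g = frag_extend (\<lambda>(f, v). frag_of (ficomp j m l f g, v))"

definition qm :: "nat \<Rightarrow> nat \<Rightarrow> nat \<Rightarrow> hs set \<Rightarrow> (hs set \<times> 'v \<Rightarrow>\<^sub>0 int) set \<Rightarrow> (hs set \<times> 'v \<Rightarrow>\<^sub>0 int) set" where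
  "qm j m l g = qmap (TFi j l) (TRi j l) (phig j m l g)"

lemma IVmor_eq: "IVmor V A m l g x = (\<lambda>n. if n \<le> m then qm n m l g (x n) else if n \<le> l then \<one>\<^bsub>Ic n l\<^esub> else undefined)"
  unfolding IVmor_def qm_def phig_def by simp

lemma firact_ficomp:
  assumes "f \<in> FIhat j m" "g \<in> FIhat m l" "k \<in> hatS j"
  shows "ficomp j m l (firact j m f k) g = firact j l (ficomp j m l f g) k"
proof -
  obtain s t where st: "j \<le> m" "m \<le> l" "s \<in> hatS m" "t \<in> hatS l" "f = hcos m j s" "g = hcos l m t"
    using assms by (auto simp: FIhat_iff)
  have k: "k \<in> hatS m" using hatS_mono st assms by blast
  have s: "s \<in> hatS l" using hatS_mono st by blast
  show ?thesis using st k s assms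
    by (simp add: firact_hcos ficomp_hcos hmul_closed hmul_assoc)
qed

lemma qm_props:
  assumes "j \<le> m" "g \<in> FIhat m l"
  shows "qm j m l g \<in> hom (Ic j m) (Ic j l)"
    and "\<And>a. a \<in> carrier (TFi j m) \<Longrightarrow> qm j m l g (TRi j m #>\<^bsub>TFi j m\<^esub> a) = TRi j l #>\<^bsub>TFi j l\<^esub> phig j m l g a"
proof -
  let ?phi = "\<lambda>(f, v). frag_of (ficomp j m l f g, v) :: (hs set \<times> 'v \<Rightarrow>\<^sub>0 int)"
  have phi: "?phi (f, v) \<in> carrier (TFi j l)" if "f \<in> FIhat j m" "v \<in> carrier (V j)" for f v
    using that ficomp_FIhat assms by simp
  have m1: "?phi (firact j m f k, v) - ?phi (f, A j k v) \<in> TRi j l"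
    if "f \<in> FIhat j m" "k \<in> hatS j" "v \<in> carrier (V j)" for f k v
  proof -
    have "frag_of (firact j l (ficomp j m l f g) k, v) - frag_of (ficomp j m l f g, A j k v)
        \<in> frel (FIhat j l) (firact j l) (hatS j) (V j) (A j)"
      unfolding frel_def using that(2,3) ficomp_FIhat[OF that(1) assms(2)] by blast
    then show ?thesis using firact_ficomp[OF that(1) assms(2) that(2)] by (simp add: frel_in_trel)
  qed
  have m2: "?phi (f, v \<otimes>\<^bsub>V j\<^esub> v') - ?phi (f, v) - ?phi (f, v') \<in> TRi j l"
    if "f \<in> FIhat j m" "v \<in> carrier (V j)" "v' \<in> carrier (V j)" for f v v'
  proof -
    have "frag_of (ficomp j m l f g, v \<otimes>\<^bsub>V j\<^esub> v') - frag_of (ficomp j m l f g, v) - frag_of (ficomp j m l f g, v')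
       \<in> frel (FIhat j l) (firact j l) (hatS j) (V j) (A j)"
      unfolding frel_def using that(2,3) ficomp_FIhat[OF that(1) assms(2)] by blast
    then show ?thesis by (simp add: frel_in_trel)
  qed
  show "qm j m l g \<in> hom (Ic j m) (Ic j l)"
    unfolding qm_def phig_def Ic_def'
    by (rule tens_map(1)[OF okI okI]) (use phi m1 m2 in auto)
  show "qm j m l g (TRi j m #>\<^bsub>TFi j m\<^esub> a) = TRi j l #>\<^bsub>TFi j l\<^esub> phig j m l g a"
    if "a \<in> carrier (TFi j m)" for a
    unfolding qm_def phig_def
    by (rule tens_map(2)[OF okI okI]) (use phi m1 m2 that in auto)
qed

lemma phig_hom:
  assumes "g \<in> FIhat m l"
  shows "phig j m l g \<in> hom (TFi j m) (TFi j l)"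
  unfolding phig_def tfree_def
  by (rule frag_extend_hom) (use assms ficomp_FIhat in auto)

lemma IVmor_carrier:
  assumes "g \<in> FIhat m l" "x \<in> carrier (IV V A m)"
  shows "IVmor V A m l g x \<in> carrier (IV V A l)"
proof -
  have ml: "m \<le> l" using assms by (auto simp: FIhat_iff)
  have c: "qm i m l g (x i) \<in> carrier (Ic i l)" if "i \<le> m" for i
  proof -
    have "x i \<in> carrier (Ic i m)" using assms that by (auto simp: IV_carrier)
    then show ?thesis using hom_in_carrier[OF qm_props(1)[OF that assms(1)]] by blast
  qed
  have o: "\<one>\<^bsub>Ic i l\<^esub> \<in> carrier (Ic i l)" for i using Ic_grp group.is_monoid monoid.one_closed by blast
  show ?thesis
    unfolding IV_carrier IVmor_eq using c o ml by (auto simp: PiE_iff extensional_def)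
qed

lemma IVmor_hom:
  assumes "g \<in> FIhat m l"
  shows "IVmor V A m l g \<in> hom (IV V A m) (IV V A l)"
proof (rule homI)
  fix x assume "x \<in> carrier (IV V A m)"
  then show "IVmor V A m l g x \<in> carrier (IV V A l)" using IVmor_carrier assms by blast
next
  have ml: "m \<le> l" using assms by (auto simp: FIhat_iff)
  fix x y assume xy: "x \<in> carrier (IV V A m)" "y \<in> carrier (IV V A m)"
  show "IVmor V A m l g (x \<otimes>\<^bsub>IV V A m\<^esub> y) = IVmor V A m l g x \<otimes>\<^bsub>IV V A l\<^esub> IVmor V A m l g y"
  proof
    fix n
    show "IVmor V A m l g (x \<otimes>\<^bsub>IV V A m\<^esub> y) n = (IVmor V A m l g x \<otimes>\<^bsub>IV V A l\<^esub> IVmor V A m l g y) n"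
    proof (cases "n \<le> m")
      case True
      have c: "x n \<in> carrier (Ic n m)" "y n \<in> carrier (Ic n m)" using xy True by (auto simp: IV_carrier PiE_iff)
      show ?thesis using True ml hom_mult[OF qm_props(1)[OF True assms] c]
        by (simp add: IVmor_eq IV_mult)
    next
      case False
      then show ?thesis using ml
        by (simp add: IVmor_eq IV_mult Ic_grp group.is_monoid monoid.l_one monoid.one_closed)
    qed
  qed
qed

lemma phig_comp:
  assumes "f \<in> FIhat n m" "g \<in> FIhat m l" "Poly_Mapping.keys a \<subseteq> FIhat j n \<times> carrier (V j)"
  shows "phig j m l g (phig j n m f a) = phig j n l (ficomp n m l f g) a"
proof -
  have "phig j m l g (phig j n m f a) = frag_extend ((\<lambda>(f', v). frag_of (ficomp j m l f' g, v)) \<circ> (\<lambda>(f', v). (ficomp j n m f' f, v))) a"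
    unfolding phig_def
    using frag_extend_compose[of "\<lambda>(f', v). frag_of (ficomp j m l f' g, v)" "\<lambda>(f', v). (ficomp j n m f' f, v)" a]
    by (simp add: comp_def split_def)
  also have "\<dots> = phig j n l (ficomp n m l f g) a"
    unfolding phig_def
    by (rule frag_extend_eq) (use assms in \<open>auto simp: ficomp_assoc\<close>)
  finally show ?thesis .
qed

lemma IVmor_comp:
  assumes "f \<in> FIhat n m" "g \<in> FIhat m l" "x \<in> carrier (IV V A n)"
  shows "IVmor V A m l g (IVmor V A n m f x) = IVmor V A n l (ficomp n m l f g) x"
proof
  have nm: "n \<le> m" "m \<le> l" using assms by (auto simp: FIhat_iff)
  have fg: "ficomp n m l f g \<in> FIhat n l" using ficomp_FIhat assms by blast
  fix j
  show "IVmor V A m l g (IVmor V A n m f x) j = IVmor V A n l (ficomp n m l f g) x j"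
  proof (cases "j \<le> n")
    case True
    have c: "x j \<in> carrier (Ic j n)" using assms True by (simp add: IV_carrier PiE_iff)
    then obtain a where a: "a \<in> carrier (TFi j n)" "x j = TRi j n #>\<^bsub>TFi j n\<^esub> a"
      unfolding Ic_def' tens_carrier by blast
    have a2: "phig j n m f a \<in> carrier (TFi j m)" by (rule hom_in_carrier[OF phig_hom[OF assms(1)] a(1)])
    have jm: "j \<le> m" using True nm by simp
    have s1: "qm j n m f (x j) = TRi j m #>\<^bsub>TFi j m\<^esub> phig j n m f a"
      unfolding a(2) by (rule qm_props(2)[OF True assms(1) a(1)])
    have s2: "qm j m l g (TRi j m #>\<^bsub>TFi j m\<^esub> phig j n m f a) = TRi j l #>\<^bsub>TFi j l\<^esub> phig j m l g (phig j n m f a)"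
      by (rule qm_props(2)[OF jm assms(2) a2])
    have s3: "qm j n l (ficomp n m l f g) (x j) = TRi j l #>\<^bsub>TFi j l\<^esub> phig j n l (ficomp n m l f g) a"
      unfolding a(2) by (rule qm_props(2)[OF True fg a(1)])
    have s4: "phig j m l g (phig j n m f a) = phig j n l (ficomp n m l f g) a"
      using phig_comp[OF assms(1,2)] a(1) by (simp add: tfree_carrier)
    have "IVmor V A m l g (IVmor V A n m f x) j = qm j m l g (qm j n m f (x j))"
      using True jm by (simp add: IVmor_eq)
    also have "\<dots> = qm j n l (ficomp n m l f g) (x j)" using s1 s2 s3 s4 by simp
    also have "\<dots> = IVmor V A n l (ficomp n m l f g) x j"
      using True by (simp add: IVmor_eq)
    finally show ?thesis .
  next
    case False
    show ?thesis
    proof (cases "j \<le> m")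
      case True
      have "qm j m l g \<one>\<^bsub>Ic j m\<^esub> = \<one>\<^bsub>Ic j l\<^esub>"
        using group_hom.hom_one[OF ghom[OF Ic_grp Ic_grp qm_props(1)[OF True assms(2)]]] .
      then show ?thesis using False True nm by (simp add: IVmor_eq)
    next
      case False
      then show ?thesis using \<open>\<not> j \<le> n\<close> nm by (simp add: IVmor_eq)
    qed
  qed
qed

definition esing :: "nat \<Rightarrow> nat \<Rightarrow> (hs set \<times> 'v \<Rightarrow>\<^sub>0 int) set \<Rightarrow> nat \<Rightarrow> (hs set \<times> 'v \<Rightarrow>\<^sub>0 int) set" where
  "esing m j z = (\<lambda>i\<in>{..m}. if i = j then z else \<one>\<^bsub>Ic i m\<^esub>)"

lemma esing_carrier:
  assumes "j \<le> m" "z \<in> carrier (Ic j m)"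
  shows "esing m j z \<in> carrier (IV V A m)"
  using assms by (auto simp: esing_def IV_carrier Ic_grp group.is_monoid monoid.one_closed)

lemma esing_hom:
  assumes "j \<le> m"
  shows "esing m j \<in> hom (Ic j m) (IV V A m)"
proof (rule homI)
  fix z assume "z \<in> carrier (Ic j m)" then show "esing m j z \<in> carrier (IV V A m)" using esing_carrier assms by blast
next
  fix z z' assume "z \<in> carrier (Ic j m)" "z' \<in> carrier (Ic j m)"
  then show "esing m j (z \<otimes>\<^bsub>Ic j m\<^esub> z') = esing m j z \<otimes>\<^bsub>IV V A m\<^esub> esing m j z'"
    by (auto simp: esing_def IV_mult Ic_grp group.is_monoid monoid.l_one monoid.one_closed intro!: restrict_ext)
qed

lemma esing_one: "j \<le> m \<Longrightarrow> esing m j \<one>\<^bsub>Ic j m\<^esub> = \<one>\<^bsub>IV V A m\<^esub>"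
  unfolding esing_def IV_one by (intro restrict_ext) simp

lemma IVmor_esing:
  assumes "g \<in> FIhat m l" "j \<le> m" "z \<in> carrier (Ic j m)"
  shows "IVmor V A m l g (esing m j z) = esing l j (qm j m l g z)"
proof
  have ml: "m \<le> l" using assms by (auto simp: FIhat_iff)
  fix i
  have one: "qm i m l g \<one>\<^bsub>Ic i m\<^esub> = \<one>\<^bsub>Ic i l\<^esub>" if "i \<le> m" for i
    using group_hom.hom_one[OF ghom[OF Ic_grp Ic_grp qm_props(1)[OF that assms(1)]]] .
  show "IVmor V A m l g (esing m j z) i = esing l j (qm j m l g z) i"
    using ml assms one by (auto simp: IVmor_eq esing_def)
qed

lemma IV_ext:
  assumes H: "group H" and h1: "h1 \<in> hom (IV V A m) H" and h2: "h2 \<in> hom (IV V A m) H"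
    and eq: "\<And>j z. j \<le> m \<Longrightarrow> z \<in> carrier (Ic j m) \<Longrightarrow> h1 (esing m j z) = h2 (esing m j z)"
    and x: "x \<in> carrier (IV V A m)"
  shows "h1 x = h2 x"
proof -
  interpret g1: group_hom "IV V A m" H h1 using ghom[OF IV_grp H h1] .
  interpret g2: group_hom "IV V A m" H h2 using ghom[OF IV_grp H h2] .
  define xJ where "xJ J = (\<lambda>i\<in>{..m}. if i \<in> J then x i else \<one>\<^bsub>Ic i m\<^esub>)" for J
  have xc: "x i \<in> carrier (Ic i m)" if "i \<le> m" for i using x that by (auto simp: IV_carrier)
  have cJ: "xJ J \<in> carrier (IV V A m)" for J
    using xc by (auto simp: xJ_def IV_carrier Ic_grp group.is_monoid monoid.one_closed)
  have "h1 (xJ J) = h2 (xJ J)" if "finite J" for J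
    using that
  proof (induction J rule: finite_induct)
    case empty
    have "xJ {} = \<one>\<^bsub>IV V A m\<^esub>" by (simp add: xJ_def IV_one)
    then show ?case by simp
  next
    case (insert j J)
    show ?case
    proof (cases "j \<le> m")
      case True
      have e: "xJ (insert j J) = xJ J \<otimes>\<^bsub>IV V A m\<^esub> esing m j (x j)"
        unfolding IV_mult xJ_def
        apply (intro restrict_ext)
        subgoal for i
          using insert(2) xc[of i] monoid.r_one[OF Ic_grp[THEN group.is_monoid]] monoid.l_one[OF Ic_grp[THEN group.is_monoid]]
             monoid.one_closed[OF Ic_grp[THEN group.is_monoid]]
          by (cases "i = j") (simp_all add: esing_def)
        done
      have ce: "esing m j (x j) \<in> carrier (IV V A m)" using esing_carrier True xc by blast
      show ?thesis using e g1.hom_mult[OF cJ ce] g2.hom_mult[OF cJ ce] insert(3) eq[OF True xc[OF True]] by simp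
    next
      case False
      have "xJ (insert j J) = xJ J" using False by (auto simp: xJ_def intro!: restrict_ext)
      then show ?thesis using insert(3) by simp
    qed
  qed
  moreover have "xJ {..m} = x" using x by (auto simp: xJ_def IV_carrier PiE_iff extensional_def fun_eq_iff)
  ultimately show ?thesis by (metis finite_atMost)
qed

end


definition tau0 :: hs where "tau0 = (transpose 0 1, -1)"

lemma tau0_in: "tau0 \<in> hatS 2"
proof -
  have "transpose (0::nat) 1 permutes {..<2}" by (rule permutes_swap_id) auto
  moreover have "sign (transpose (0::nat) 1) = -1" by (simp add: sign_swap_id)
  ultimately show ?thesis by (simp add: tau0_def hatS_def)
qed

definition tau :: "nat \<Rightarrow> hs" where "tau n = i2 n 2 tau0"

lemma tau_eq: "2 \<le> n \<Longrightarrow> tau n = (transpose (n - 2) (n - 1), -1)"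
proof -
  assume n: "2 \<le> n"
  have p: "fst tau0 permutes {..<2}" using hatS_perm[OF tau0_in] .
  have "tau n = (shiftp (n - 2) (transpose 0 1), -1)" using i2_shiftp[OF n p] by (simp add: tau_def tau0_def)
  also have "\<dots> = (transpose (n - 2) (n - 1), -1)"
  proof -
    have "Suc (n - 2) = n - 1" using n by arith
    then show ?thesis using n by (simp add: shiftp_transpose)
  qed
  finally show ?thesis .
qed

lemma tau_in: "2 \<le> n \<Longrightarrow> tau n \<in> hatS n"
  unfolding tau_def using i2_mem tau0_in by blast

lemma tau_commute: "2 \<le> n \<Longrightarrow> k \<in> hatS (n - 2) \<Longrightarrow> hmul k (tau n) = hmul (tau n) k"
  unfolding tau_def using hmul_commute_i2[of k "n - 2" n 2 tau0] tau0_in by simp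

lemma braidw_0: "braidw b 0 = hone" by simp

lemma braidw_1: "braidw (n - 2) 1 = (transpose (n - 2) (n - 2 + 1), -1)"
  by (simp add: hmul_def hone_def)

context ctx
begin

abbreviation "MI \<equiv> IV V A"
abbreviation "FI \<equiv> IVmor V A"

lemma hcos_kk_FIhat: "g \<in> hatS k \<Longrightarrow> hcos k k g \<in> FIhat k k"
  by (simp add: hcos_in_FIhat)

lemma hcos_iota_FIhat: "hcos (Suc k) k hone \<in> FIhat k (Suc k)"
  by (simp add: hcos_in_FIhat)

lemma mact_hom: "g \<in> hatS k \<Longrightarrow> mact FI k g \<in> hom (MI k) (MI k)"
  unfolding mact_def using IVmor_hom hcos_kk_FIhat by blast

lemma iota_hom: "iota FI k \<in> hom (MI k) (MI (Suc k))"
  unfolding iota_def using IVmor_hom hcos_iota_FIhat by blast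

lemma mact_carr: "g \<in> hatS k \<Longrightarrow> w \<in> carrier (MI k) \<Longrightarrow> mact FI k g w \<in> carrier (MI k)"
  by (rule hom_in_carrier[OF mact_hom])

lemma iota_carr: "w \<in> carrier (MI k) \<Longrightarrow> iota FI k w \<in> carrier (MI (Suc k))"
  by (rule hom_in_carrier[OF iota_hom])

lemma mact_mult: "g \<in> hatS k \<Longrightarrow> w \<in> carrier (MI k) \<Longrightarrow> w' \<in> carrier (MI k) \<Longrightarrow>
   mact FI k g (w \<otimes>\<^bsub>MI k\<^esub> w') = mact FI k g w \<otimes>\<^bsub>MI k\<^esub> mact FI k g w'"
  by (rule hom_mult[OF mact_hom])

lemma iota_mult: "w \<in> carrier (MI k) \<Longrightarrow> w' \<in> carrier (MI k) \<Longrightarrow>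
   iota FI k (w \<otimes>\<^bsub>MI k\<^esub> w') = iota FI k w \<otimes>\<^bsub>MI (Suc k)\<^esub> iota FI k w'"
  by (rule hom_mult[OF iota_hom])

lemma iota_mact:
  assumes "g \<in> hatS k" "w \<in> carrier (MI k)"
  shows "iota FI k (mact FI k g w) = mact FI (Suc k) g (iota FI k w)"
proof -
  have g1: "g \<in> hatS (Suc k)" using hatS_mono assms(1) by (meson le_SucI order_refl subsetD)
  have "iota FI k (mact FI k g w) = FI k (Suc k) (ficomp k k (Suc k) (hcos k k g) (hcos (Suc k) k hone)) w"
    unfolding iota_def mact_def using IVmor_comp[OF hcos_kk_FIhat[OF assms(1)] hcos_iota_FIhat assms(2)] .
  also have "\<dots> = FI k (Suc k) (hcos (Suc k) k g) w"
    using ficomp_hcos[of k k "Suc k" g hone] assms(1) by simp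
  also have "\<dots> = FI k (Suc k) (ficomp k (Suc k) (Suc k) (hcos (Suc k) k hone) (hcos (Suc k) (Suc k) g)) w"
    using ficomp_hcos[of k "Suc k" "Suc k" hone g] g1 by simp
  also have "\<dots> = mact FI (Suc k) g (iota FI k w)"
    unfolding iota_def mact_def using IVmor_comp[OF hcos_iota_FIhat hcos_kk_FIhat[OF g1] assms(2)] by simp
  finally show ?thesis .
qed

lemma okC:
  assumes "k \<le> n"
  shows "tens_ok (hatS n) hmul (hatS k) (MI k) (mact FI k)"
  unfolding tens_ok_def using IV_comm mact_carr hmul_closed hatS_mono[OF assms] by blast

lemma okE: "tens_ok {} hmul {} (MI 0) (mact FI 0)"
  unfolding tens_ok_def using IV_comm by blast

lemma Cc_m1: "Cc MI FI (-1) n = tens (hatS n) hmul (hatS n) (MI n) (mact FI n)"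
  by (simp add: Cc_def Let_def)

lemma Cc_0: "1 \<le> n \<Longrightarrow> Cc MI FI 0 n = tens (hatS n) hmul (hatS (n - 1)) (MI (n - 1)) (mact FI (n - 1))"
  by (simp add: Cc_def nat_diff_distrib Let_def)

lemma Cc_1: "2 \<le> n \<Longrightarrow> Cc MI FI 1 n = tens (hatS n) hmul (hatS (n - 2)) (MI (n - 2)) (mact FI (n - 2))"
  by (simp add: Cc_def nat_diff_distrib Let_def)

lemma Cc_0_0: "Cc MI FI 0 0 = tens {} hmul {} (MI 0) (mact FI 0)"
  by (simp add: Cc_def Let_def)

lemma Cc_1_small: "n < 2 \<Longrightarrow> Cc MI FI 1 n = tens {} hmul {} (MI 0) (mact FI 0)"
  by (simp add: Cc_def Let_def)

lemma Cc_comm_m1: "comm_group (Cc MI FI (-1) n)"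
  unfolding Cc_m1 using tens_comm[OF okC] by simp

lemma Cc_comm_0: "comm_group (Cc MI FI 0 n)"
proof (cases "1 \<le> n")
  case True then show ?thesis unfolding Cc_0[OF True] using tens_comm[OF okC] by simp
next
  case False then have "n = 0" by simp
  then show ?thesis using Cc_0_0 tens_comm[OF okE] by simp
qed

lemma Cc_comm_1: "comm_group (Cc MI FI 1 n)"
proof (cases "2 \<le> n")
  case True then show ?thesis unfolding Cc_1[OF True] using tens_comm[OF okC] by simp
next
  case False then show ?thesis using Cc_1_small[of n] tens_comm[OF okE] by simp
qed

definition phi0 :: "nat \<Rightarrow> hs \<times> (nat \<Rightarrow> (hs set \<times> 'v \<Rightarrow>\<^sub>0 int) set) \<Rightarrow> (hs \<times> (nat \<Rightarrow> (hs set \<times> 'v \<Rightarrow>\<^sub>0 int) set) \<Rightarrow>\<^sub>0 int)" where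
  "phi0 n = (\<lambda>(g, w). - frag_of (g, iota FI (n - 1) w))"

definition phi1 :: "nat \<Rightarrow> hs \<times> (nat \<Rightarrow> (hs set \<times> 'v \<Rightarrow>\<^sub>0 int) set) \<Rightarrow> (hs \<times> (nat \<Rightarrow> (hs set \<times> 'v \<Rightarrow>\<^sub>0 int) set) \<Rightarrow>\<^sub>0 int)" where
  "phi1 n = (\<lambda>(g, w). - frag_of (g, iota FI (n - 2) w) + frag_of (hmul g (tau n), iota FI (n - 2) w))"

abbreviation "TRc n k \<equiv> trel (hatS n) hmul (hatS k) (MI k) (mact FI k)"
abbreviation "TFc n k \<equiv> tfree (hatS n) (MI k)"

lemma dmap0_eq:
  assumes "1 \<le> n"
  shows "dmap MI FI 0 n = qmap (TFc n n) (TRc n n) (frag_extend (phi0 n))"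
proof -
  have e: "nat (int n - 1) = n - 1" "Suc (n - 1) = n" using assms by auto
  show ?thesis using assms unfolding dmap_def phi0_def by (simp add: e fun_eq_iff Let_def)
qed

lemma dmap1_eq:
  assumes "2 \<le> n"
  shows "dmap MI FI 1 n = qmap (TFc n (n - 1)) (TRc n (n - 1)) (frag_extend (phi1 n))"
proof -
  have e: "nat (int n - 2) = n - 2" "Suc (n - 2) = n - 1" "{Suc 0..2} = {1::nat, 2}" using assms by auto
  show ?thesis using assms unfolding dmap_def phi1_def
    by (simp add: e fun_eq_iff Let_def tau_eq[OF assms] hmul_def hone_def)
qed

lemma d0_props:
  assumes "1 \<le> n"
  shows "dmap MI FI 0 n \<in> hom (Cc MI FI 0 n) (Cc MI FI (-1) n)"
    and "\<And>a. a \<in> carrier (TFc n (n - 1)) \<Longrightarrow>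
       dmap MI FI 0 n (TRc n (n - 1) #>\<^bsub>TFc n (n - 1)\<^esub> a) = TRc n n #>\<^bsub>TFc n n\<^esub> frag_extend (phi0 n) a"
proof -
  obtain k where n: "n = Suc k" using assms by (cases n) auto
  have e: "n - 1 = k" using n by simp
  have ok1: "tens_ok (hatS n) hmul (hatS k) (MI k) (mact FI k)" using okC n by simp
  have ok2: "tens_ok (hatS n) hmul (hatS n) (MI n) (mact FI n)" using okC by simp
  have kn: "hatS k \<subseteq> hatS n" using hatS_mono n by simp
  have phi: "phi0 n (x, w) \<in> carrier (TFc n n)" if "x \<in> hatS n" "w \<in> carrier (MI k)" for x w
    using that iota_carr[of w k] n by (auto simp: phi0_def)
  have m1: "phi0 n (hmul x g, w) - phi0 n (x, mact FI k g w) \<in> TRc n n"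
    if "x \<in> hatS n" "g \<in> hatS k" "w \<in> carrier (MI k)" for x g w
  proof -
    have ic: "iota FI k w \<in> carrier (MI n)" using iota_carr that n by simp
    have "frag_of (hmul x g, iota FI k w) - frag_of (x, mact FI n g (iota FI k w)) \<in> frel (hatS n) hmul (hatS n) (MI n) (mact FI n)"
      unfolding frel_def using that kn ic by blast
    then have "frag_of (hmul x g, iota FI k w) - frag_of (x, mact FI n g (iota FI k w)) \<in> TRc n n"
      by (rule frel_in_trel)
    from trel_neg[OF ok2 this] show ?thesis
      using iota_mact[OF that(2,3)] n by (simp add: phi0_def)
  qed
  have m2: "phi0 n (x, w \<otimes>\<^bsub>MI k\<^esub> w') - phi0 n (x, w) - phi0 n (x, w') \<in> TRc n n"
    if "x \<in> hatS n" "w \<in> carrier (MI k)" "w' \<in> carrier (MI k)" for x w w'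
  proof -
    have ic: "iota FI k w \<in> carrier (MI n)" "iota FI k w' \<in> carrier (MI n)" using iota_carr that n by auto
    have "frag_of (x, iota FI k w \<otimes>\<^bsub>MI n\<^esub> iota FI k w') - frag_of (x, iota FI k w) - frag_of (x, iota FI k w')
      \<in> frel (hatS n) hmul (hatS n) (MI n) (mact FI n)"
      unfolding frel_def using that ic by blast
    then have "frag_of (x, iota FI k w \<otimes>\<^bsub>MI n\<^esub> iota FI k w') - frag_of (x, iota FI k w) - frag_of (x, iota FI k w') \<in> TRc n n"
      by (rule frel_in_trel)
    from trel_neg[OF ok2 this] show ?thesis
      using iota_mult[OF that(2,3)] n by (simp add: phi0_def algebra_simps)
  qed
  show "dmap MI FI 0 n \<in> hom (Cc MI FI 0 n) (Cc MI FI (-1) n)"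
    unfolding dmap0_eq[OF assms] Cc_0[OF assms] Cc_m1 e
    by (rule tens_map(1)[OF ok1 ok2]) (use phi m1 m2 in auto)
  show "dmap MI FI 0 n (TRc n (n - 1) #>\<^bsub>TFc n (n - 1)\<^esub> a) = TRc n n #>\<^bsub>TFc n n\<^esub> frag_extend (phi0 n) a"
    if "a \<in> carrier (TFc n (n - 1))" for a
    unfolding dmap0_eq[OF assms] using that unfolding e
    by (rule_tac tens_map(2)[OF ok1 ok2]) (use phi m1 m2 that in auto)
qed

lemma d1_props:
  assumes "2 \<le> n"
  shows "dmap MI FI 1 n \<in> hom (Cc MI FI 1 n) (Cc MI FI 0 n)"
    and "\<And>a. a \<in> carrier (TFc n (n - 2)) \<Longrightarrow>
       dmap MI FI 1 n (TRc n (n - 2) #>\<^bsub>TFc n (n - 2)\<^esub> a) = TRc n (n - 1) #>\<^bsub>TFc n (n - 1)\<^esub> frag_extend (phi1 n) a"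
proof -
  obtain k where n: "n = Suc (Suc k)" using assms by (metis add_2_eq_Suc le_Suc_ex)
  have e: "n - 2 = k" "n - 1 = Suc k" using n by auto
  have n1: "1 \<le> n" using n by simp
  have ok1: "tens_ok (hatS n) hmul (hatS k) (MI k) (mact FI k)" using okC n by simp
  have ok2: "tens_ok (hatS n) hmul (hatS (Suc k)) (MI (Suc k)) (mact FI (Suc k))" using okC n by simp
  have kn: "hatS k \<subseteq> hatS (Suc k)" "hatS (Suc k) \<subseteq> hatS n" using hatS_mono n by auto
  have t: "tau n \<in> hatS n" using tau_in assms by blast
  have phi: "phi1 n (x, w) \<in> carrier (TFc n (Suc k))" if "x \<in> hatS n" "w \<in> carrier (MI k)" for x w
    using that iota_carr[of w k] n hmul_closed[OF that(1) t] by (auto simp: phi1_def)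
  have m1: "phi1 n (hmul x g, w) - phi1 n (x, mact FI k g w) \<in> TRc n (Suc k)"
    if "x \<in> hatS n" "g \<in> hatS k" "w \<in> carrier (MI k)" for x g w
  proof -
    have ic: "iota FI k w \<in> carrier (MI (Suc k))" using iota_carr that by simp
    have xt: "hmul x (tau n) \<in> hatS n" using hmul_closed[OF that(1) t] .
    have r1: "frag_of (hmul x g, iota FI k w) - frag_of (x, mact FI (Suc k) g (iota FI k w)) \<in> TRc n (Suc k)"
      unfolding frel_def using that kn ic by (intro frel_in_trel) (unfold frel_def, blast)
    have r2: "frag_of (hmul (hmul x (tau n)) g, iota FI k w) - frag_of (hmul x (tau n), mact FI (Suc k) g (iota FI k w)) \<in> TRc n (Suc k)"
      using xt that kn ic by (intro frel_in_trel) (unfold frel_def, blast)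
    have com: "hmul (hmul x g) (tau n) = hmul (hmul x (tau n)) g"
      using tau_commute[OF assms, of g] that n by (simp add: hmul_assoc)
    have "phi1 n (hmul x g, w) - phi1 n (x, mact FI k g w)
       = - (frag_of (hmul x g, iota FI k w) - frag_of (x, mact FI (Suc k) g (iota FI k w)))
         + (frag_of (hmul (hmul x (tau n)) g, iota FI k w) - frag_of (hmul x (tau n), mact FI (Suc k) g (iota FI k w)))"
      using iota_mact[OF that(2,3)] n com by (simp add: phi1_def algebra_simps)
    then show ?thesis using trel_add[OF ok2 trel_neg[OF ok2 r1] r2] by simp
  qed
  have m2: "phi1 n (x, w \<otimes>\<^bsub>MI k\<^esub> w') - phi1 n (x, w) - phi1 n (x, w') \<in> TRc n (Suc k)"
    if "x \<in> hatS n" "w \<in> carrier (MI k)" "w' \<in> carrier (MI k)" for x w w'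
  proof -
    have ic: "iota FI k w \<in> carrier (MI (Suc k))" "iota FI k w' \<in> carrier (MI (Suc k))" using iota_carr that by auto
    have xt: "hmul x (tau n) \<in> hatS n" using hmul_closed[OF that(1) t] .
    have r1: "frag_of (x, iota FI k w \<otimes>\<^bsub>MI (Suc k)\<^esub> iota FI k w') - frag_of (x, iota FI k w) - frag_of (x, iota FI k w') \<in> TRc n (Suc k)"
      using that ic by (intro frel_in_trel) (unfold frel_def, blast)
    have r2: "frag_of (hmul x (tau n), iota FI k w \<otimes>\<^bsub>MI (Suc k)\<^esub> iota FI k w') - frag_of (hmul x (tau n), iota FI k w) - frag_of (hmul x (tau n), iota FI k w') \<in> TRc n (Suc k)"
      using xt that ic by (intro frel_in_trel) (unfold frel_def, blast)
    have "phi1 n (x, w \<otimes>\<^bsub>MI k\<^esub> w') - phi1 n (x, w) - phi1 n (x, w')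
       = - (frag_of (x, iota FI k w \<otimes>\<^bsub>MI (Suc k)\<^esub> iota FI k w') - frag_of (x, iota FI k w) - frag_of (x, iota FI k w'))
         + (frag_of (hmul x (tau n), iota FI k w \<otimes>\<^bsub>MI (Suc k)\<^esub> iota FI k w') - frag_of (hmul x (tau n), iota FI k w) - frag_of (hmul x (tau n), iota FI k w'))"
      using iota_mult[OF that(2,3)] n by (simp add: phi1_def algebra_simps)
    then show ?thesis using trel_add[OF ok2 trel_neg[OF ok2 r1] r2] by simp
  qed
  show "dmap MI FI 1 n \<in> hom (Cc MI FI 1 n) (Cc MI FI 0 n)"
    unfolding dmap1_eq[OF assms] Cc_1[OF assms] Cc_0[OF n1] e
    by (rule tens_map(1)[OF ok1 ok2]) (use phi m1 m2 in auto)
  show "dmap MI FI 1 n (TRc n (n - 2) #>\<^bsub>TFc n (n - 2)\<^esub> a) = TRc n (n - 1) #>\<^bsub>TFc n (n - 1)\<^esub> frag_extend (phi1 n) a"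
    if "a \<in> carrier (TFc n (n - 2))" for a
    unfolding dmap1_eq[OF assms] using that unfolding e
    by (rule_tac tens_map(2)[OF ok1 ok2]) (use phi m1 m2 that in auto)
qed

definition Dset :: "nat \<Rightarrow> _" where "Dset n = dmap MI FI 0 n ` carrier (Cc MI FI 0 n)"
definition Imset :: "nat \<Rightarrow> _" where "Imset n = dmap MI FI 1 n ` carrier (Cc MI FI 1 n)"

lemma Dset_sub: "subgroup (Dset n) (Cc MI FI (-1) n)"
proof (cases "1 \<le> n")
  case True
  interpret gh: group_hom "Cc MI FI 0 n" "Cc MI FI (-1) n" "dmap MI FI 0 n"
    using ghom[OF comm_group.axioms(2)[OF Cc_comm_0] comm_group.axioms(2)[OF Cc_comm_m1] d0_props(1)[OF True]] .
  show ?thesis unfolding Dset_def using gh.img_is_subgroup .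
next
  case False
  then have n: "n = 0" by simp
  have ne: "carrier (Cc MI FI 0 n) \<noteq> {}"
    using group.is_monoid[OF comm_group.axioms(2)[OF Cc_comm_0]] monoid.one_closed by blast
  have "Dset n = {\<one>\<^bsub>Cc MI FI (-1) n\<^esub>}" using ne n unfolding Dset_def by (auto simp: dmap_def)
  then show ?thesis using group.triv_subgroup[OF comm_group.axioms(2)[OF Cc_comm_m1]] by simp
qed

lemma Imset_sub: "subgroup (Imset n) (Cc MI FI 0 n)"
proof (cases "2 \<le> n")
  case True
  interpret gh: group_hom "Cc MI FI 1 n" "Cc MI FI 0 n" "dmap MI FI 1 n"
    using ghom[OF comm_group.axioms(2)[OF Cc_comm_1] comm_group.axioms(2)[OF Cc_comm_0] d1_props(1)[OF True]] .
  show ?thesis unfolding Imset_def using gh.img_is_subgroup .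
next
  case False
  have ne: "carrier (Cc MI FI 1 n) \<noteq> {}"
    using group.is_monoid[OF comm_group.axioms(2)[OF Cc_comm_1]] monoid.one_closed by blast
  have "Imset n = {\<one>\<^bsub>Cc MI FI 0 n\<^esub>}" using ne False unfolding Imset_def by (auto simp: dmap_def)
  then show ?thesis using group.triv_subgroup[OF comm_group.axioms(2)[OF Cc_comm_0]] by simp
qed

end


context ctx
begin

lemma proj_hom: "j \<le> m \<Longrightarrow> (\<lambda>y. y j) \<in> hom (MI m) (Ic j m)"
  by (rule homI) (auto simp: IV_carrier IV_mult PiE_iff)

lemma qm_frag:
  assumes "j \<le> m" "g \<in> FIhat m l" "f \<in> FIhat j m" "v \<in> carrier (V j)"
  shows "qm j m l g (TRi j m #>\<^bsub>TFi j m\<^esub> frag_of (f, v)) = TRi j l #>\<^bsub>TFi j l\<^esub> frag_of (ficomp j m l f g, v)"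
  using qm_props(2)[OF assms(1,2), of "frag_of (f, v)"] assms by (simp add: phig_def)

lemma some_hcos_nn: "(SOME h. h \<in> hcos n n t) = t"
  by (simp add: hcos_nn)

definition piN :: "nat \<Rightarrow> (hs set \<times> 'v \<Rightarrow>\<^sub>0 int) set \<Rightarrow> 'v" where
  "piN N = tlift (V N) (\<lambda>(f, v). A N (SOME h. h \<in> f) v) (FIhat N N) (V N)"

lemma piN_props:
  shows "piN N \<in> hom (Ic N N) (V N)"
    and "\<And>t v. t \<in> hatS N \<Longrightarrow> v \<in> carrier (V N) \<Longrightarrow> piN N (TRi N N #>\<^bsub>TFi N N\<^esub> frag_of (hcos N N t, v)) = A N t v"
proof -
  have f: "(\<lambda>(f, v). A N (SOME h. h \<in> f) v) (f, v) \<in> carrier (V N)" if "f \<in> FIhat N N" "v \<in> carrier (V N)" for f v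
    using that A_carr by (auto simp: FIhat_iff some_hcos_nn)
  have r1: "(\<lambda>(f, v). A N (SOME h. h \<in> f) v) (firact N N f k, v) = (\<lambda>(f, v). A N (SOME h. h \<in> f) v) (f, A N k v)"
    if "f \<in> FIhat N N" "k \<in> hatS N" "v \<in> carrier (V N)" for f k v
    using that by (auto simp: FIhat_iff some_hcos_nn firact_hcos A_hmul)
  have r2: "(\<lambda>(f, v). A N (SOME h. h \<in> f) v) (f, v \<otimes>\<^bsub>V N\<^esub> v') =
      (\<lambda>(f, v). A N (SOME h. h \<in> f) v) (f, v) \<otimes>\<^bsub>V N\<^esub> (\<lambda>(f, v). A N (SOME h. h \<in> f) v) (f, v')"
    if "f \<in> FIhat N N" "v \<in> carrier (V N)" "v' \<in> carrier (V N)" for f v v'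
    using that by (auto simp: FIhat_iff some_hcos_nn A_mult)
  show "piN N \<in> hom (Ic N N) (V N)" unfolding piN_def Ic_def'
    by (rule tens_lift(1)[OF okI Vcomm]) (use f r1 r2 in auto)
  have t3: "piN N (TRi N N #>\<^bsub>TFi N N\<^esub> frag_of (f, v)) = (\<lambda>(f, v). A N (SOME h. h \<in> f) v) (f, v)"
    if "f \<in> FIhat N N" "v \<in> carrier (V N)" for f v
    unfolding piN_def by (rule tens_lift(3)[OF okI Vcomm]) (use f r1 r2 that in auto)
  show "piN N (TRi N N #>\<^bsub>TFi N N\<^esub> frag_of (hcos N N t, v)) = A N t v" if "t \<in> hatS N" "v \<in> carrier (V N)" for t v
    using t3[of "hcos N N t" v] that by (simp add: hcos_in_FIhat some_hcos_nn)
qed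

lemma piN_carr: "z \<in> carrier (Ic N N) \<Longrightarrow> piN N z \<in> carrier (V N)"
  by (rule hom_in_carrier[OF piN_props(1)])

lemma piN_one: "piN N \<one>\<^bsub>Ic N N\<^esub> = \<one>\<^bsub>V N\<^esub>"
  using group_hom.hom_one[OF ghom[OF Ic_grp Vgrp piN_props(1)]] .

lemma piN_qm:
  assumes "k \<in> hatS N" "z \<in> carrier (Ic N N)"
  shows "piN N (qm N N N (hcos N N k) z) = A N k (piN N z)"
proof -
  have h1: "piN N \<circ> qm N N N (hcos N N k) \<in> hom (Ic N N) (V N)"
    using hom_compose[OF qm_props(1)[OF order_refl hcos_kk_FIhat[OF assms(1)]] piN_props(1)] .
  have h2: "A N k \<circ> piN N \<in> hom (Ic N N) (V N)"
    using hom_compose[OF piN_props(1) A_hom[OF assms(1)]] .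
  have "(piN N \<circ> qm N N N (hcos N N k)) z = (A N k \<circ> piN N) z"
  proof (rule tens_ext[OF okI Vgrp h1[unfolded Ic_def'] h2[unfolded Ic_def']])
    fix f v assume fv: "f \<in> FIhat N N" "v \<in> carrier (V N)"
    then obtain t where t: "t \<in> hatS N" "f = hcos N N t" by (auto simp: FIhat_iff)
    have "qm N N N (hcos N N k) (TRi N N #>\<^bsub>TFi N N\<^esub> frag_of (f, v)) = TRi N N #>\<^bsub>TFi N N\<^esub> frag_of (hcos N N (hmul k t), v)"
      using qm_frag[OF order_refl hcos_kk_FIhat[OF assms(1)] fv] t assms ficomp_hcos[of N N N t k] by simp
    then show "(piN N \<circ> qm N N N (hcos N N k)) (TRi N N #>\<^bsub>TFi N N\<^esub> frag_of (f, v)) =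
          (A N k \<circ> piN N) (TRi N N #>\<^bsub>TFi N N\<^esub> frag_of (f, v))"
      using piN_props(2) t fv assms by (simp add: hmul_closed A_hmul)
  next
    show "z \<in> carrier (tens (FIhat N N) (firact N N) (hatS N) (V N) (A N))" using assms Ic_def' by simp
  qed
  then show ?thesis by simp
qed

lemma mact_comp_N:
  assumes "k \<in> hatS N" "y \<in> carrier (MI N)"
  shows "mact FI N k y N = qm N N N (hcos N N k) (y N)"
  by (simp add: mact_def IVmor_eq)

definition Psi :: "nat \<Rightarrow> _" where
  "Psi N = tlift (V N) (\<lambda>(g, y). A N g (piN N (y N))) (hatS N) (MI N)"

lemma yN_carr: "y \<in> carrier (MI N) \<Longrightarrow> y N \<in> carrier (Ic N N)"
  by (simp add: IV_carrier PiE_iff)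

lemma Psi_props:
  shows "Psi N \<in> hom (Cc MI FI (-1) N) (V N)"
    and "\<And>a. a \<in> carrier (TFc N N) \<Longrightarrow> Psi N (TRc N N #>\<^bsub>TFc N N\<^esub> a) = fhom (V N) (\<lambda>(g, y). A N g (piN N (y N))) (hatS N \<times> carrier (MI N)) a"
    and "\<And>g y. g \<in> hatS N \<Longrightarrow> y \<in> carrier (MI N) \<Longrightarrow> Psi N (TRc N N #>\<^bsub>TFc N N\<^esub> frag_of (g, y)) = A N g (piN N (y N))"
    and "fhom (V N) (\<lambda>(g, y). A N g (piN N (y N))) (hatS N \<times> carrier (MI N)) \<in> hom (TFc N N) (V N)"
proof -
  let ?f = "\<lambda>(g, y). A N g (piN N (y N))"
  have f: "?f (g, y) \<in> carrier (V N)" if "g \<in> hatS N" "y \<in> carrier (MI N)" for g y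
    using that A_carr piN_carr yN_carr by simp
  have r1: "?f (hmul g k, y) = ?f (g, mact FI N k y)"
    if "g \<in> hatS N" "k \<in> hatS N" "y \<in> carrier (MI N)" for g k y
    using that by (simp add: mact_comp_N piN_qm yN_carr A_hmul piN_carr)
  have r2: "?f (g, y \<otimes>\<^bsub>MI N\<^esub> y') = ?f (g, y) \<otimes>\<^bsub>V N\<^esub> ?f (g, y')"
    if "g \<in> hatS N" "y \<in> carrier (MI N)" "y' \<in> carrier (MI N)" for g y y'
  proof -
    have "(y \<otimes>\<^bsub>MI N\<^esub> y') N = y N \<otimes>\<^bsub>Ic N N\<^esub> y' N" by (simp add: IV_mult)
    then show ?thesis using that hom_mult[OF piN_props(1) yN_carr yN_carr] A_mult piN_carr yN_carr by simp
  qed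
  show "Psi N \<in> hom (Cc MI FI (-1) N) (V N)" unfolding Psi_def Cc_m1
    by (rule tens_lift(1)[OF okC[OF order_refl] Vcomm]) (use f r1 r2 in auto)
  show "Psi N (TRc N N #>\<^bsub>TFc N N\<^esub> a) = fhom (V N) ?f (hatS N \<times> carrier (MI N)) a" if "a \<in> carrier (TFc N N)" for a
    unfolding Psi_def by (rule tens_lift(2)[OF okC[OF order_refl] Vcomm]) (use f r1 r2 that in auto)
  have t3: "Psi N (TRc N N #>\<^bsub>TFc N N\<^esub> frag_of (g, y)) = ?f (g, y)" if "g \<in> hatS N" "y \<in> carrier (MI N)" for g y
    unfolding Psi_def by (rule tens_lift(3)[OF okC[OF order_refl] Vcomm]) (use f r1 r2 that in auto)
  show "Psi N (TRc N N #>\<^bsub>TFc N N\<^esub> frag_of (g, y)) = A N g (piN N (y N))" if "g \<in> hatS N" "y \<in> carrier (MI N)" for g y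
    using t3[OF that] by simp
  show "fhom (V N) ?f (hatS N \<times> carrier (MI N)) \<in> hom (TFc N N) (V N)"
    unfolding tfree_def by (rule fhom(1)[OF Vcomm]) (use f in auto)
qed

end


context ctx
begin

lemma iota_top: "iota FI k w (Suc k) = \<one>\<^bsub>Ic (Suc k) (Suc k)\<^esub>"
  by (simp add: iota_def IVmor_eq)

lemma mact_rel:
  assumes "x \<in> hatS N" "k \<in> hatS N" "y \<in> carrier (MI N)"
  shows "TRc N N #>\<^bsub>TFc N N\<^esub> frag_of (hmul x k, y) = TRc N N #>\<^bsub>TFc N N\<^esub> frag_of (x, mact FI N k y)"
  using tens_rel1[OF okC[OF order_refl] assms] .

lemma Ic_rel:
  assumes "j \<le> m" "s \<in> hatS m" "k \<in> hatS j" "v \<in> carrier (V j)"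
  shows "TRi j m #>\<^bsub>TFi j m\<^esub> frag_of (hcos m j (hmul s k), v) = TRi j m #>\<^bsub>TFi j m\<^esub> frag_of (hcos m j s, A j k v)"
  using tens_rel1[OF okI hcos_in_FIhat[OF assms(1,2)] assms(3,4)] firact_hcos[OF assms(1,2,3)] by simp

lemma frag_Ic_carr:
  assumes "j \<le> m" "s \<in> hatS m" "v \<in> carrier (V j)"
  shows "TRi j m #>\<^bsub>TFi j m\<^esub> frag_of (hcos m j s, v) \<in> carrier (Ic j m)"
  unfolding Ic_def' using assms by (intro tens_in_carrier) (auto simp: hcos_in_FIhat)

lemma mact_esing_frag:
  assumes "j \<le> N" "k \<in> hatS N" "s \<in> hatS N" "v \<in> carrier (V j)"
  shows "mact FI N k (esing N j (TRi j N #>\<^bsub>TFi j N\<^esub> frag_of (hcos N j s, v)))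
       = esing N j (TRi j N #>\<^bsub>TFi j N\<^esub> frag_of (hcos N j (hmul k s), v))"
proof -
  have "mact FI N k (esing N j (TRi j N #>\<^bsub>TFi j N\<^esub> frag_of (hcos N j s, v)))
      = esing N j (qm j N N (hcos N N k) (TRi j N #>\<^bsub>TFi j N\<^esub> frag_of (hcos N j s, v)))"
    unfolding mact_def using IVmor_esing[OF hcos_kk_FIhat[OF assms(2)] assms(1) frag_Ic_carr[OF assms(1,3,4)]] .
  also have "\<dots> = esing N j (TRi j N #>\<^bsub>TFi j N\<^esub> frag_of (hcos N j (hmul k s), v))"
    using qm_frag[OF assms(1) hcos_kk_FIhat[OF assms(2)] hcos_in_FIhat[OF assms(1,3)] assms(4)]
      ficomp_hcos[OF assms(1) order_refl assms(3,2)] by simp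
  finally show ?thesis .
qed

lemma iota_esing_frag:
  assumes "j \<le> k" "s \<in> hatS k" "v \<in> carrier (V j)"
  shows "iota FI k (esing k j (TRi j k #>\<^bsub>TFi j k\<^esub> frag_of (hcos k j s, v)))
       = esing (Suc k) j (TRi j (Suc k) #>\<^bsub>TFi j (Suc k)\<^esub> frag_of (hcos (Suc k) j s, v))"
proof -
  have "iota FI k (esing k j (TRi j k #>\<^bsub>TFi j k\<^esub> frag_of (hcos k j s, v)))
      = esing (Suc k) j (qm j k (Suc k) (hcos (Suc k) k hone) (TRi j k #>\<^bsub>TFi j k\<^esub> frag_of (hcos k j s, v)))"
    unfolding iota_def using IVmor_esing[OF hcos_iota_FIhat assms(1) frag_Ic_carr[OF assms]] .
  also have "\<dots> = esing (Suc k) j (TRi j (Suc k) #>\<^bsub>TFi j (Suc k)\<^esub> frag_of (hcos (Suc k) j s, v))"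
    using qm_frag[OF assms(1) hcos_iota_FIhat hcos_in_FIhat[OF assms(1,2)] assms(3)]
      ficomp_hcos[of j k "Suc k" s hone] assms by simp
  finally show ?thesis .
qed

lemma esing_frag_carr:
  assumes "j \<le> m" "s \<in> hatS m" "v \<in> carrier (V j)"
  shows "esing m j (TRi j m #>\<^bsub>TFi j m\<^esub> frag_of (hcos m j s, v)) \<in> carrier (MI m)"
  using esing_carrier[OF assms(1) frag_Ic_carr[OF assms]] .

lemma G1:
  assumes "g \<in> hatS N" "t \<in> hatS N" "v \<in> carrier (V N)"
  shows "TRc N N #>\<^bsub>TFc N N\<^esub> frag_of (g, esing N N (TRi N N #>\<^bsub>TFi N N\<^esub> frag_of (hcos N N t, v)))
       = TRc N N #>\<^bsub>TFc N N\<^esub> frag_of (hone, esing N N (TRi N N #>\<^bsub>TFi N N\<^esub> frag_of (hcos N N hone, A N g (A N t v))))"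
proof -
  have gt: "hmul g t \<in> hatS N" using hmul_closed assms by blast
  have "TRc N N #>\<^bsub>TFc N N\<^esub> frag_of (g, esing N N (TRi N N #>\<^bsub>TFi N N\<^esub> frag_of (hcos N N t, v)))
      = TRc N N #>\<^bsub>TFc N N\<^esub> frag_of (hone, mact FI N g (esing N N (TRi N N #>\<^bsub>TFi N N\<^esub> frag_of (hcos N N t, v))))"
    using mact_rel[OF hone_in assms(1) esing_frag_carr[OF order_refl assms(2,3)]] by simp
  also have "\<dots> = TRc N N #>\<^bsub>TFc N N\<^esub> frag_of (hone, esing N N (TRi N N #>\<^bsub>TFi N N\<^esub> frag_of (hcos N N (hmul g t), v)))"
    using mact_esing_frag[OF order_refl assms] by simp
  also have "\<dots> = TRc N N #>\<^bsub>TFc N N\<^esub> frag_of (hone, esing N N (TRi N N #>\<^bsub>TFi N N\<^esub> frag_of (hcos N N hone, A N (hmul g t) v)))"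
    using Ic_rel[OF order_refl hone_in gt assms(3)] by simp
  finally show ?thesis using A_hmul assms by simp
qed

lemma G2:
  assumes "j < N" "g \<in> hatS N" "s \<in> hatS N" "v \<in> carrier (V j)"
  shows "TRc N N #>\<^bsub>TFc N N\<^esub> frag_of (g, esing N j (TRi j N #>\<^bsub>TFi j N\<^esub> frag_of (hcos N j s, v))) \<in> Dset N"
proof -
  obtain k where N: "N = Suc k" using assms by (cases N) auto
  have jk: "j \<le> k" using assms N by simp
  have N1: "1 \<le> N" using N by simp
  have gs: "hmul g s \<in> hatS N" using hmul_closed assms by blast
  define E' where "E' = esing k j (TRi j k #>\<^bsub>TFi j k\<^esub> frag_of (hcos k j hone, v))"
  have E'c: "E' \<in> carrier (MI k)" unfolding E'_def using esing_frag_carr[OF jk hone_in assms(4)] .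
  have a: "- frag_of (hmul g s, E') \<in> carrier (TFc N (N - 1))" using E'c gs N by auto
  have X: "TRc N (N - 1) #>\<^bsub>TFc N (N - 1)\<^esub> (- frag_of (hmul g s, E')) \<in> carrier (Cc MI FI 0 N)"
    unfolding Cc_0[OF N1] using a tens_in_carrier[of "- frag_of (hmul g s, E')"] by (simp add: tfree_carrier)
  have "dmap MI FI 0 N (TRc N (N - 1) #>\<^bsub>TFc N (N - 1)\<^esub> (- frag_of (hmul g s, E')))
      = TRc N N #>\<^bsub>TFc N N\<^esub> frag_of (hmul g s, iota FI k E')"
    using d0_props(2)[OF N1 a] N by (simp add: phi0_def frag_extend_minus)
  also have "\<dots> = TRc N N #>\<^bsub>TFc N N\<^esub> frag_of (hmul g s, esing N j (TRi j N #>\<^bsub>TFi j N\<^esub> frag_of (hcos N j hone, v)))"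
    unfolding E'_def using iota_esing_frag[OF jk hone_in assms(4)] N by simp
  also have "\<dots> = TRc N N #>\<^bsub>TFc N N\<^esub> frag_of (g, mact FI N s (esing N j (TRi j N #>\<^bsub>TFi j N\<^esub> frag_of (hcos N j hone, v))))"
    using mact_rel[OF assms(2,3) esing_frag_carr[OF _ hone_in assms(4)]] assms(1) by simp
  also have "\<dots> = TRc N N #>\<^bsub>TFc N N\<^esub> frag_of (g, esing N j (TRi j N #>\<^bsub>TFi j N\<^esub> frag_of (hcos N j s, v)))"
    using mact_esing_frag[OF _ assms(3) hone_in assms(4)] assms(1) by simp
  finally show ?thesis using X unfolding Dset_def by (metis image_eqI)
qed

end


context ctx
begin

lemma Cm1_grp: "group (Cc MI FI (-1) N)" using Cc_comm_m1 comm_group.axioms(2) by blast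
lemma C0_grp: "group (Cc MI FI 0 N)" using Cc_comm_0 comm_group.axioms(2) by blast

lemma Psi_kill:
  assumes "t \<in> Dset N"
  shows "Psi N t = \<one>\<^bsub>V N\<^esub>"
proof (cases "1 \<le> N")
  case False
  then have "t = \<one>\<^bsub>Cc MI FI (-1) N\<^esub>" using assms by (auto simp: Dset_def dmap_def)
  then show ?thesis using group_hom.hom_one[OF ghom[OF Cm1_grp Vgrp Psi_props(1)]] by simp
next
  case True
  obtain X where X: "X \<in> carrier (Cc MI FI 0 N)" "t = dmap MI FI 0 N X" using assms by (auto simp: Dset_def)
  have h1: "Psi N \<circ> dmap MI FI 0 N \<in> hom (Cc MI FI 0 N) (V N)"
    using hom_compose[OF d0_props(1)[OF True] Psi_props(1)] .
  have h2: "(\<lambda>_. \<one>\<^bsub>V N\<^esub>) \<in> hom (Cc MI FI 0 N) (V N)"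
    by (rule homI) (simp_all add: group.is_monoid[OF Vgrp] monoid.one_closed)
  have okk: "tens_ok (hatS N) hmul (hatS (N - 1)) (MI (N - 1)) (mact FI (N - 1))" using okC[of "N - 1" N] by simp
  have "(Psi N \<circ> dmap MI FI 0 N) X = (\<lambda>_. \<one>\<^bsub>V N\<^esub>) X"
  proof (rule tens_ext[OF okk Vgrp h1[unfolded Cc_0[OF True]] h2[unfolded Cc_0[OF True]]])
    show "X \<in> carrier (tens (hatS N) hmul (hatS (N - 1)) (MI (N - 1)) (mact FI (N - 1)))"
      using X Cc_0[OF True] by simp
  next
    fix g w assume gw: "g \<in> hatS N" "w \<in> carrier (MI (N - 1))"
    have Nk: "Suc (N - 1) = N" using True by simp
    have iw: "iota FI (N - 1) w \<in> carrier (MI N)" using iota_carr[OF gw(2)] Nk by simp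
    have fa: "frag_of (g, w) \<in> carrier (TFc N (N - 1))" using gw by simp
    have fb: "frag_of (g, iota FI (N - 1) w) \<in> carrier (TFc N N)" using gw iw by simp
    have "dmap MI FI 0 N (TRc N (N - 1) #>\<^bsub>TFc N (N - 1)\<^esub> frag_of (g, w)) = TRc N N #>\<^bsub>TFc N N\<^esub> (- frag_of (g, iota FI (N - 1) w))"
      using d0_props(2)[OF True fa] by (simp add: phi0_def)
    then have "Psi N (dmap MI FI 0 N (TRc N (N - 1) #>\<^bsub>TFc N (N - 1)\<^esub> frag_of (g, w)))
        = fhom (V N) (\<lambda>(g, y). A N g (piN N (y N))) (hatS N \<times> carrier (MI N)) (- frag_of (g, iota FI (N - 1) w))"
      using Psi_props(2)[of "- frag_of (g, iota FI (N - 1) w)" N] tfree_neg[OF fb] by simp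
    also have "\<dots> = inv\<^bsub>V N\<^esub> fhom (V N) (\<lambda>(g, y). A N g (piN N (y N))) (hatS N \<times> carrier (MI N)) (frag_of (g, iota FI (N - 1) w))"
      using free_hom_neg[OF Vgrp Psi_props(4)[unfolded tfree_def]] fb by (simp add: tfree_carrier)
    also have "\<dots> = inv\<^bsub>V N\<^esub> Psi N (TRc N N #>\<^bsub>TFc N N\<^esub> frag_of (g, iota FI (N - 1) w))"
      using Psi_props(2)[OF fb] by simp
    also have "\<dots> = inv\<^bsub>V N\<^esub> A N g (piN N (iota FI (N - 1) w N))"
      using Psi_props(3)[OF gw(1) iw] by simp
    also have "\<dots> = \<one>\<^bsub>V N\<^esub>"
    proof -
      have "iota FI (N - 1) w N = \<one>\<^bsub>Ic N N\<^esub>" using iota_top[of "N - 1" w] Nk by simp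
      then show ?thesis using piN_one group_hom.hom_one[OF ghom[OF Vgrp Vgrp A_hom[OF gw(1)]]] monoid.inv_one[OF group.is_monoid[OF Vgrp]] by simp
    qed
    finally show "(Psi N \<circ> dmap MI FI 0 N) (TRc N (N - 1) #>\<^bsub>TFc N (N - 1)\<^esub> frag_of (g, w)) =
        (\<lambda>_. \<one>\<^bsub>V N\<^esub>) (TRc N (N - 1) #>\<^bsub>TFc N (N - 1)\<^esub> frag_of (g, w))" by simp
  qed
  then show ?thesis using X by simp
qed

lemma Hm1_eq: "Hcs MI FI (-1) N = Cc MI FI (-1) N Mod Dset N"
  by (simp add: Hcs_def Dset_def)

definition phiH :: "nat \<Rightarrow> _" where "phiH N = qlift (Psi N)"

lemma phiH_hom: "phiH N \<in> hom (Hcs MI FI (-1) N) (V N)"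
  unfolding Hm1_eq phiH_def using qlift_hom[OF Cc_comm_m1 Dset_sub Vgrp Psi_props(1) Psi_kill] .

lemma phiH_val: "c \<in> carrier (Cc MI FI (-1) N) \<Longrightarrow> phiH N (Dset N #>\<^bsub>Cc MI FI (-1) N\<^esub> c) = Psi N c"
  unfolding phiH_def using qlift_val[OF Cc_comm_m1 Dset_sub Vgrp Psi_props(1) Psi_kill] .

definition Theta :: "nat \<Rightarrow> 'v \<Rightarrow> _" where
  "Theta N v = Dset N #>\<^bsub>Cc MI FI (-1) N\<^esub> (TRc N N #>\<^bsub>TFc N N\<^esub> frag_of (hone, esing N N (TRi N N #>\<^bsub>TFi N N\<^esub> frag_of (hcos N N hone, v))))"

lemma Theta_hom: "Theta N \<in> hom (V N) (Hcs MI FI (-1) N)"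
proof -
  have h1: "(\<lambda>v. TRi N N #>\<^bsub>TFi N N\<^esub> frag_of (hcos N N hone, v)) \<in> hom (V N) (Ic N N)"
    unfolding Ic_def' using tens_frag_hom[OF okI hcos_in_FIhat[OF order_refl hone_in]] .
  have h3: "(\<lambda>y. TRc N N #>\<^bsub>TFc N N\<^esub> frag_of (hone, y)) \<in> hom (MI N) (Cc MI FI (-1) N)"
    unfolding Cc_m1 using tens_frag_hom[OF okC[OF order_refl] hone_in] .
  have h4: "(\<lambda>c. Dset N #>\<^bsub>Cc MI FI (-1) N\<^esub> c) \<in> hom (Cc MI FI (-1) N) (Hcs MI FI (-1) N)"
    unfolding Hm1_eq using quot_proj_hom[OF Cc_comm_m1 Dset_sub] .
  have "(\<lambda>c. Dset N #>\<^bsub>Cc MI FI (-1) N\<^esub> c) \<circ> (\<lambda>y. TRc N N #>\<^bsub>TFc N N\<^esub> frag_of (hone, y)) \<circ> esing N N \<circ>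
          (\<lambda>v. TRi N N #>\<^bsub>TFi N N\<^esub> frag_of (hcos N N hone, v)) \<in> hom (V N) (Hcs MI FI (-1) N)"
    using hom_compose[OF hom_compose[OF hom_compose[OF h1 esing_hom[OF order_refl]] h3] h4] by (simp add: comp_assoc)
  then show ?thesis unfolding Theta_def comp_def .
qed

lemma esing_top: "esing N N z N = z"
  by (simp add: esing_def)

lemma phiH_Theta:
  assumes "v \<in> carrier (V N)"
  shows "phiH N (Theta N v) = v"
proof -
  have z: "TRi N N #>\<^bsub>TFi N N\<^esub> frag_of (hcos N N hone, v) \<in> carrier (Ic N N)"
    using frag_Ic_carr[OF order_refl hone_in assms] .
  have y: "esing N N (TRi N N #>\<^bsub>TFi N N\<^esub> frag_of (hcos N N hone, v)) \<in> carrier (MI N)"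
    using esing_carrier[OF order_refl z] .
  have c: "TRc N N #>\<^bsub>TFc N N\<^esub> frag_of (hone, esing N N (TRi N N #>\<^bsub>TFi N N\<^esub> frag_of (hcos N N hone, v))) \<in> carrier (Cc MI FI (-1) N)"
    unfolding Cc_m1 using y by (intro tens_in_carrier) auto
  show ?thesis unfolding Theta_def using phiH_val[OF c] Psi_props(3)[OF hone_in y] esing_top
      piN_props(2)[OF hone_in assms] A_one[OF assms] A_carr[OF hone_in assms] A_one by simp
qed

end


context ctx
begin

abbreviation "HH N \<equiv> Hcs MI FI (-1) N"

lemma HH_grp: "group (HH N)"
  unfolding Hm1_eq using quot_group[OF Cc_comm_m1 Dset_sub] .

lemma HH_one: "\<one>\<^bsub>HH N\<^esub> = Dset N"
  unfolding Hm1_eq by simp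

lemma prj_hom: "(\<lambda>c. Dset N #>\<^bsub>Cc MI FI (-1) N\<^esub> c) \<in> hom (Cc MI FI (-1) N) (HH N)"
  unfolding Hm1_eq using quot_proj_hom[OF Cc_comm_m1 Dset_sub] .

definition prj :: "nat \<Rightarrow> _" where "prj N = (\<lambda>c. Dset N #>\<^bsub>Cc MI FI (-1) N\<^esub> c)"

lemma prj_hom': "prj N \<in> hom (Cc MI FI (-1) N) (HH N)"
  unfolding prj_def using prj_hom .

lemma fr_hom: "g \<in> hatS N \<Longrightarrow> (\<lambda>y. TRc N N #>\<^bsub>TFc N N\<^esub> frag_of (g, y)) \<in> hom (MI N) (Cc MI FI (-1) N)"
  unfolding Cc_m1 using tens_frag_hom[OF okC[OF order_refl]] .

lemma Theta_one: "Theta N \<one>\<^bsub>V N\<^esub> = \<one>\<^bsub>HH N\<^esub>"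
  using group_hom.hom_one[OF ghom[OF Vgrp HH_grp Theta_hom]] .

lemma Theta_Psi_gen:
  assumes g: "g \<in> hatS N" and y: "y \<in> carrier (MI N)"
  shows "Theta N (A N g (piN N (y N))) = Dset N #>\<^bsub>Cc MI FI (-1) N\<^esub> (TRc N N #>\<^bsub>TFc N N\<^esub> frag_of (g, y))"
proof -
  let ?K1 = "Theta N \<circ> A N g \<circ> piN N \<circ> (\<lambda>y. y N)"
  let ?K2 = "(\<lambda>c. Dset N #>\<^bsub>Cc MI FI (-1) N\<^esub> c) \<circ> (\<lambda>y. TRc N N #>\<^bsub>TFc N N\<^esub> frag_of (g, y))"
  have K1: "?K1 \<in> hom (MI N) (HH N)"
    using hom_compose[OF hom_compose[OF hom_compose[OF proj_hom[OF order_refl] piN_props(1)] A_hom[OF g]] Theta_hom]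
    by (simp add: comp_assoc)
  have K2: "?K2 \<in> hom (MI N) (HH N)" using hom_compose[OF fr_hom[OF g] prj_hom] .
  have "?K1 y = ?K2 y"
  proof (rule IV_ext[OF HH_grp K1 K2 _ y])
    fix j z assume jz: "j \<le> N" "z \<in> carrier (Ic j N)"
    have L1: "(?K1 \<circ> esing N j) \<in> hom (Ic j N) (HH N)" using hom_compose[OF esing_hom[OF jz(1)] K1] .
    have L2: "(?K2 \<circ> esing N j) \<in> hom (Ic j N) (HH N)" using hom_compose[OF esing_hom[OF jz(1)] K2] .
    show "?K1 (esing N j z) = ?K2 (esing N j z)"
    proof (cases "j = N")
      case True
      have "(?K1 \<circ> esing N j) z = (?K2 \<circ> esing N j) z"
      proof (rule tens_ext[OF okI HH_grp L1[unfolded Ic_def'] L2[unfolded Ic_def']])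
        show "z \<in> carrier (tens (FIhat j N) (firact j N) (hatS j) (V j) (A j))" using jz Ic_def' by simp
      next
        fix f v assume fv: "f \<in> FIhat j N" "v \<in> carrier (V j)"
        then obtain t where t: "t \<in> hatS N" "f = hcos N N t" using True by (auto simp: FIhat_iff)
        have v: "v \<in> carrier (V N)" using fv True by simp
        have "(?K1 \<circ> esing N j) (TRi j N #>\<^bsub>TFi j N\<^esub> frag_of (f, v)) = Theta N (A N g (A N t v))"
          using True t v piN_props(2)[OF t(1) v] by (simp add: esing_top)
        also have "\<dots> = (?K2 \<circ> esing N j) (TRi j N #>\<^bsub>TFi j N\<^esub> frag_of (f, v))"
          using True t v G1[OF g t(1) v] by (simp add: Theta_def)
        finally show "(?K1 \<circ> esing N j) (TRi j N #>\<^bsub>TFi j N\<^esub> frag_of (f, v)) = (?K2 \<circ> esing N j) (TRi j N #>\<^bsub>TFi j N\<^esub> frag_of (f, v))" .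
      qed
      then show ?thesis by simp
    next
      case False
      then have jN: "j < N" using jz by simp
      have top: "esing N j z N = \<one>\<^bsub>Ic N N\<^esub>" using False by (simp add: esing_def)
      have l1: "?K1 (esing N j z) = \<one>\<^bsub>HH N\<^esub>"
        using top piN_one group_hom.hom_one[OF ghom[OF Vgrp Vgrp A_hom[OF g]]] Theta_one by simp
      have C: "(\<lambda>_. \<one>\<^bsub>HH N\<^esub>) \<in> hom (Ic j N) (HH N)"
        by (rule homI) (simp_all add: group.is_monoid[OF HH_grp] monoid.one_closed)
      have "(?K2 \<circ> esing N j) z = (\<lambda>_. \<one>\<^bsub>HH N\<^esub>) z"
      proof (rule tens_ext[OF okI HH_grp L2[unfolded Ic_def'] C[unfolded Ic_def']])
        show "z \<in> carrier (tens (FIhat j N) (firact j N) (hatS j) (V j) (A j))" using jz Ic_def' by simp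
      next
        fix f v assume fv: "f \<in> FIhat j N" "v \<in> carrier (V j)"
        then obtain s where s: "s \<in> hatS N" "f = hcos N j s" by (auto simp: FIhat_iff)
        have mem: "TRc N N #>\<^bsub>TFc N N\<^esub> frag_of (g, esing N j (TRi j N #>\<^bsub>TFi j N\<^esub> frag_of (f, v))) \<in> Dset N"
          using G2[OF jN g s(1) fv(2)] s by simp
        have "Dset N #>\<^bsub>Cc MI FI (-1) N\<^esub> (TRc N N #>\<^bsub>TFc N N\<^esub> frag_of (g, esing N j (TRi j N #>\<^bsub>TFi j N\<^esub> frag_of (f, v)))) = Dset N"
          using group.coset_join2[OF Cm1_grp _ Dset_sub mem] subgroup.mem_carrier[OF Dset_sub mem] by simp
        then show "(?K2 \<circ> esing N j) (TRi j N #>\<^bsub>TFi j N\<^esub> frag_of (f, v)) = (\<lambda>_. \<one>\<^bsub>HH N\<^esub>) (TRi j N #>\<^bsub>TFi j N\<^esub> frag_of (f, v))"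
          by (simp add: HH_one)
      qed
      then show ?thesis using l1 by simp
    qed
  qed
  then show ?thesis by simp
qed

lemma Theta_Psi:
  assumes "c \<in> carrier (Cc MI FI (-1) N)"
  shows "Theta N (Psi N c) = Dset N #>\<^bsub>Cc MI FI (-1) N\<^esub> c"
proof -
  have h1: "Theta N \<circ> Psi N \<in> hom (Cc MI FI (-1) N) (HH N)" using hom_compose[OF Psi_props(1) Theta_hom] .
  have "(Theta N \<circ> Psi N) c = prj N c"
  proof (rule tens_ext[OF okC[OF order_refl] HH_grp h1[unfolded Cc_m1] prj_hom'[unfolded Cc_m1]])
    show "c \<in> carrier (tens (hatS N) hmul (hatS N) (MI N) (mact FI N))" using assms Cc_m1 by simp
  next
    fix g y assume gy: "g \<in> hatS N" "y \<in> carrier (MI N)"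
    show "(Theta N \<circ> Psi N) (TRc N N #>\<^bsub>TFc N N\<^esub> frag_of (g, y)) = prj N (TRc N N #>\<^bsub>TFc N N\<^esub> frag_of (g, y))"
      using Psi_props(3)[OF gy] Theta_Psi_gen[OF gy] by (simp add: prj_def)
  qed
  then show ?thesis by (simp add: prj_def)
qed

lemma Theta_phiH:
  assumes "Y \<in> carrier (HH N)"
  shows "Theta N (phiH N Y) = Y"
proof -
  obtain c where c: "c \<in> carrier (Cc MI FI (-1) N)" "Y = Dset N #>\<^bsub>Cc MI FI (-1) N\<^esub> c"
    using assms unfolding Hm1_eq by (auto simp: carrier_FactGroup)
  show ?thesis using c phiH_val Theta_Psi by simp
qed

lemma phiH_iso: "phiH N \<in> iso (HH N) (V N)"
proof -
  have inj: "inj_on (phiH N) (carrier (HH N))"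
    by (rule inj_on_inverseI[of _ "Theta N"]) (rule Theta_phiH)
  have surj: "phiH N ` carrier (HH N) = carrier (V N)"
  proof
    show "phiH N ` carrier (HH N) \<subseteq> carrier (V N)" using hom_in_carrier[OF phiH_hom] by blast
    show "carrier (V N) \<subseteq> phiH N ` carrier (HH N)"
    proof
      fix v assume v: "v \<in> carrier (V N)"
      have "Theta N v \<in> carrier (HH N)" using hom_in_carrier[OF Theta_hom v] .
      then show "v \<in> phiH N ` carrier (HH N)" using phiH_Theta[OF v] by (metis image_eqI)
    qed
  qed
  show ?thesis unfolding iso_def bij_betw_def using phiH_hom inj surj by blast
qed

definition Lg :: "hs \<Rightarrow> hs \<times> (nat \<Rightarrow> (hs set \<times> 'v \<Rightarrow>\<^sub>0 int) set) \<Rightarrow> _" where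
  "Lg g = (\<lambda>(h, w). frag_of (hmul g h, w))"

lemma Cact_eq: "Cact MI FI (-1) N g = qmap (TFc N N) (TRc N N) (frag_extend (Lg g))"
  by (simp add: Cact_def Lg_def fun_eq_iff)

lemma Cact_props:
  assumes g: "g \<in> hatS N"
  shows "Cact MI FI (-1) N g \<in> hom (Cc MI FI (-1) N) (Cc MI FI (-1) N)"
    and "\<And>a. a \<in> carrier (TFc N N) \<Longrightarrow> Cact MI FI (-1) N g (TRc N N #>\<^bsub>TFc N N\<^esub> a) = TRc N N #>\<^bsub>TFc N N\<^esub> frag_extend (Lg g) a"
proof -
  have ok: "tens_ok (hatS N) hmul (hatS N) (MI N) (mact FI N)" using okC by simp
  have phi: "Lg g (x, w) \<in> carrier (TFc N N)" if "x \<in> hatS N" "w \<in> carrier (MI N)" for x w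
    using that hmul_closed[OF g] by (simp add: Lg_def)
  have m1: "Lg g (hmul x k, w) - Lg g (x, mact FI N k w) \<in> TRc N N"
    if "x \<in> hatS N" "k \<in> hatS N" "w \<in> carrier (MI N)" for x k w
  proof -
    have "frag_of (hmul (hmul g x) k, w) - frag_of (hmul g x, mact FI N k w) \<in> frel (hatS N) hmul (hatS N) (MI N) (mact FI N)"
      unfolding frel_def using that hmul_closed[OF g that(1)] by blast
    then show ?thesis by (simp add: Lg_def hmul_assoc frel_in_trel)
  qed
  have m2: "Lg g (x, w \<otimes>\<^bsub>MI N\<^esub> w') - Lg g (x, w) - Lg g (x, w') \<in> TRc N N"
    if "x \<in> hatS N" "w \<in> carrier (MI N)" "w' \<in> carrier (MI N)" for x w w'
  proof -
    have "frag_of (hmul g x, w \<otimes>\<^bsub>MI N\<^esub> w') - frag_of (hmul g x, w) - frag_of (hmul g x, w') \<in> frel (hatS N) hmul (hatS N) (MI N) (mact FI N)"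
      unfolding frel_def using that hmul_closed[OF g that(1)] by blast
    then show ?thesis by (simp add: Lg_def frel_in_trel)
  qed
  show "Cact MI FI (-1) N g \<in> hom (Cc MI FI (-1) N) (Cc MI FI (-1) N)"
    unfolding Cact_eq Cc_m1 by (rule tens_map(1)[OF ok ok]) (use phi m1 m2 in auto)
  show "Cact MI FI (-1) N g (TRc N N #>\<^bsub>TFc N N\<^esub> a) = TRc N N #>\<^bsub>TFc N N\<^esub> frag_extend (Lg g) a"
    if "a \<in> carrier (TFc N N)" for a
    unfolding Cact_eq by (rule tens_map(2)[OF ok ok]) (use phi m1 m2 that in auto)
qed

lemma Psi_Cact:
  assumes g: "g \<in> hatS N" and c: "c \<in> carrier (Cc MI FI (-1) N)"
  shows "Psi N (Cact MI FI (-1) N g c) = A N g (Psi N c)"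
proof -
  have h1: "Psi N \<circ> Cact MI FI (-1) N g \<in> hom (Cc MI FI (-1) N) (V N)" using hom_compose[OF Cact_props(1)[OF g] Psi_props(1)] .
  have h2: "A N g \<circ> Psi N \<in> hom (Cc MI FI (-1) N) (V N)" using hom_compose[OF Psi_props(1) A_hom[OF g]] .
  have "(Psi N \<circ> Cact MI FI (-1) N g) c = (A N g \<circ> Psi N) c"
  proof (rule tens_ext[OF okC[OF order_refl] Vgrp h1[unfolded Cc_m1] h2[unfolded Cc_m1]])
    show "c \<in> carrier (tens (hatS N) hmul (hatS N) (MI N) (mact FI N))" using c Cc_m1 by simp
  next
    fix h y assume hy: "h \<in> hatS N" "y \<in> carrier (MI N)"
    have "Cact MI FI (-1) N g (TRc N N #>\<^bsub>TFc N N\<^esub> frag_of (h, y)) = TRc N N #>\<^bsub>TFc N N\<^esub> frag_of (hmul g h, y)"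
      using Cact_props(2)[OF g, of "frag_of (h, y)"] hy by (simp add: Lg_def)
    then show "(Psi N \<circ> Cact MI FI (-1) N g) (TRc N N #>\<^bsub>TFc N N\<^esub> frag_of (h, y)) = (A N g \<circ> Psi N) (TRc N N #>\<^bsub>TFc N N\<^esub> frag_of (h, y))"
      using Psi_props(3) hy g hmul_closed A_hmul piN_carr yN_carr by simp
  qed
  then show ?thesis by simp
qed

lemma phiH_equiv:
  assumes g: "g \<in> hatS N" and Y: "Y \<in> carrier (HH N)"
  shows "phiH N (Hact_m1 MI FI N g Y) = A N g (phiH N Y)"
proof -
  obtain c where c: "c \<in> carrier (Cc MI FI (-1) N)" "Y = Dset N #>\<^bsub>Cc MI FI (-1) N\<^esub> c"
    using Y unfolding Hm1_eq by (auto simp: carrier_FactGroup)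
  let ?c' = "SOME x. x \<in> Y"
  have c': "?c' \<in> carrier (Cc MI FI (-1) N)" "Dset N #>\<^bsub>Cc MI FI (-1) N\<^esub> ?c' = Y"
    using quot_some[OF Cc_comm_m1 Dset_sub c(1)] c(2) by auto
  have "Hact_m1 MI FI N g Y = Dset N #>\<^bsub>Cc MI FI (-1) N\<^esub> Cact MI FI (-1) N g ?c'"
    by (simp add: Hact_m1_def qmap_def Dset_def)
  moreover have "Cact MI FI (-1) N g ?c' \<in> carrier (Cc MI FI (-1) N)"
    using hom_in_carrier[OF Cact_props(1)[OF g] c'(1)] .
  ultimately have "phiH N (Hact_m1 MI FI N g Y) = Psi N (Cact MI FI (-1) N g ?c')"
    using phiH_val by simp
  also have "\<dots> = A N g (Psi N ?c')" using Psi_Cact[OF g c'(1)] .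
  also have "\<dots> = A N g (phiH N Y)" using phiH_val[OF c'(1)] c'(2) by simp
  finally show ?thesis .
qed

end


section \<open>Generation of hat S_m\<close>

lemma hatS_inv: "x \<in> hatS m \<Longrightarrow> inv\<^bsub>hatSgrp m\<^esub> x = hinv x"
  by (rule group.inv_equality[OF group_hatS]) (simp_all add: hinv_l hinv_closed)

lemma GEN:
  assumes m1: "1 \<le> m" and U: "subgroup U (hatSgrp m)" and sub: "hatS (m - 1) \<subseteq> U"
    and T: "2 \<le> m \<Longrightarrow> i2 m 2 tau0 \<in> U"
  shows "hatS m \<subseteq> U"
proof (cases "2 \<le> m")
  case False
  then have "m = 1" using m1 by simp
  then show ?thesis using sub hatS_small by simp
next
  case True
  have mc: "\<And>x y. x \<in> U \<Longrightarrow> y \<in> U \<Longrightarrow> hmul x y \<in> U"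
    using subgroup.m_closed[OF U] by simp
  have ic: "\<And>x. x \<in> U \<Longrightarrow> hinv x \<in> U"
    using subgroup.m_inv_closed[OF U] hatS_inv subgroup.subset[OF U] by (metis hatSgrp_simps(1) subsetD)
  have T': "(transpose (m - 2) (m - 1), -1) \<in> U" using T[OF True] tau_eq[OF True] by (simp add: tau_def)
  have c2: "(id, 2) \<in> U"
  proof (cases "3 \<le> m")
    case True
    then have "(id, 2) \<in> hatS (m - 1)" by (simp add: hatS_def permutes_id)
    then show ?thesis using sub by blast
  next
    case False
    have "hmul (transpose (m - 2) (m - 1), -1) (transpose (m - 2) (m - 1), -1) = (id, -2)"
      by (simp add: hmul_def)
    then have "(id, -2) \<in> U" using mc[OF T' T'] by simp
    from ic[OF this] show ?thesis by (simp add: hinv_def)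
  qed
  have cm2: "(id, -2) \<in> U" using ic[OF c2] by (simp add: hinv_def)
  have ev: "(id, 2 * k) \<in> U" for k :: int
  proof (induction k rule: int_induct[where k = 0])
    case base
    then show ?case using subgroup.one_closed[OF U] by (simp add: hone_def id_def)
  next
    case (step1 i)
    have "hmul (id, 2 * i) (id, 2) = (id, 2 * (i + 1))" by (simp add: hmul_def algebra_simps)
    then show ?case using mc[OF step1(2) c2] by (simp add: id_def)
  next
    case (step2 i)
    have "hmul (id, 2 * i) (id, -2) = (id, 2 * (i - 1))" by (simp add: hmul_def algebra_simps)
    then show ?case using mc[OF step2(2) cm2] by (simp add: id_def)
  qed
  have adj: "(transpose i (Suc i), -1) \<in> U" if "Suc i < m" for i
  proof (cases "Suc i = m - 1")
    case True
    then have "i = m - 2" by simp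
    then show ?thesis using T' True by simp
  next
    case False
    then have "Suc i < m - 1" using that by simp
    then have "(transpose i (Suc i), -1) \<in> hatS (m - 1)"
      by (simp add: hatS_def sign_swap_id permutes_swap_id)
    then show ?thesis using sub by blast
  qed
  have tr: "(transpose a (a + d + 1), -1) \<in> U" if "a + d + 1 < m" for a d
    using that
  proof (induction d)
    case 0
    then show ?case using adj[of a] by simp
  next
    case (Suc d)
    let ?b = "a + d + 1"
    have ih: "(transpose a ?b, -1) \<in> U" using Suc by simp
    have tb: "(transpose ?b (Suc ?b), -1) \<in> U" using adj[of ?b] Suc by simp
    have e: "transpose (Suc ?b) ?b \<circ> transpose ?b a \<circ> transpose (Suc ?b) ?b = transpose (Suc ?b) a"
      by (rule transpose_comp_triple) auto
    have "hmul (hmul (hmul (transpose ?b (Suc ?b), -1) (transpose a ?b, -1)) (transpose ?b (Suc ?b), -1)) (id, 2)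
        = (transpose a (a + Suc d + 1), -1)"
      using e by (simp add: hmul_def transpose_commute comp_assoc)
    then show ?case using mc[OF mc[OF mc[OF tb ih] tb] c2] by simp
  qed
  have trans: "(transpose a b, -1) \<in> U" if "a < m" "b < m" "a \<noteq> b" for a b
  proof (cases "a < b")
    case True
    then show ?thesis using tr[of a "b - a - 1"] that by simp
  next
    case False
    then have "b < a" using that by simp
    then show ?thesis using tr[of b "a - b - 1"] that by (simp add: transpose_commute)
  qed
  show ?thesis
  proof
    fix x assume x: "x \<in> hatS m"
    obtain s d where sd: "x = (s, d)" by fastforce
    have ps: "s permutes {..<m}" and par: "odd d \<longleftrightarrow> sign s = -1" using x sd True by (auto simp: hatS_def)
    have "\<forall>d. (odd d \<longleftrightarrow> sign s = -1) \<longrightarrow> (s, d) \<in> U"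
      using ps finite_lessThan[of m]
    proof (induction rule: permutes_induct)
      case id
      show ?case
      proof (intro allI impI)
        fix d :: int assume "odd d \<longleftrightarrow> sign (id::nat \<Rightarrow> nat) = -1"
        then have "even d" by simp
        then obtain k where "d = 2 * k" by (auto elim: evenE)
        then show "(id, d) \<in> U" using ev[of k] by simp
      qed
    next
      case (swap a b p)
      have pp: "permutation p" using swap perm_lessThan by blast
      have sg: "sign (transpose a b \<circ> p) = - sign p"
        using sign_compose[OF permutation_swap_id pp] swap(3) by (simp add: sign_swap_id)
      show ?case
      proof (intro allI impI)
        fix d :: int assume d: "odd d \<longleftrightarrow> sign (transpose a b \<circ> p) = -1"
        have "odd (d + 1) \<longleftrightarrow> sign p = -1" using d sg sign_cases[of p] by auto
        then have "(p, d + 1) \<in> U" using swap by blast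
        moreover have "(transpose a b, -1) \<in> U" using trans swap(1-3) by simp
        ultimately have "hmul (transpose a b, -1) (p, d + 1) \<in> U" using mc by blast
        then show "(transpose a b \<circ> p, d) \<in> U" by (simp add: hmul_def)
      qed
    qed
    then show "x \<in> U" using sd par by blast
  qed
qed


lemma tens_inv:
  assumes ok: "tens_ok X rho K W B" and b: "b \<in> carrier (tfree X W)"
  shows "inv\<^bsub>tens X rho K W B\<^esub> (trel X rho K W B #>\<^bsub>tfree X W\<^esub> b) = trel X rho K W B #>\<^bsub>tfree X W\<^esub> (- b)"
proof -
  interpret G: group "tens X rho K W B" using tens_group[OF ok] .
  have c1: "trel X rho K W B #>\<^bsub>tfree X W\<^esub> b \<in> carrier (tens X rho K W B)" using b by (simp add: tens_carrier)
  have c2: "trel X rho K W B #>\<^bsub>tfree X W\<^esub> (- b) \<in> carrier (tens X rho K W B)" using tfree_neg[OF b] by (simp add: tens_carrier)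
  have "(trel X rho K W B #>\<^bsub>tfree X W\<^esub> (- b)) \<otimes>\<^bsub>tens X rho K W B\<^esub> (trel X rho K W B #>\<^bsub>tfree X W\<^esub> b) = \<one>\<^bsub>tens X rho K W B\<^esub>"
    using tens_mult[OF ok tfree_neg[OF b] b] tens_one[OF ok] by simp
  then show ?thesis using G.inv_equality c1 c2 by blast
qed

context ctx
begin

definition QQ :: "nat \<Rightarrow> _" where "QQ N = Cc MI FI 0 N Mod Imset N"

lemma QQ_comm: "comm_group (QQ N)"
  unfolding QQ_def using quot_comm[OF Cc_comm_0 Imset_sub] .

lemma QQ_grp: "group (QQ N)" using QQ_comm comm_group.axioms(2) by blast

definition cls :: "nat \<Rightarrow> _" where
  "cls N x = Imset N #>\<^bsub>Cc MI FI 0 N\<^esub> (TRc N (N - 1) #>\<^bsub>TFc N (N - 1)\<^esub> x)"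

lemma okC0: "1 \<le> N \<Longrightarrow> tens_ok (hatS N) hmul (hatS (N - 1)) (MI (N - 1)) (mact FI (N - 1))"
  using okC[of "N - 1" N] by simp

lemma cls_hom:
  assumes N: "1 \<le> N"
  shows "cls N \<in> hom (TFc N (N - 1)) (QQ N)"
proof -
  have p1: "(\<lambda>x. TRc N (N - 1) #>\<^bsub>TFc N (N - 1)\<^esub> x) \<in> hom (TFc N (N - 1)) (Cc MI FI 0 N)"
    unfolding Cc_0[OF N] tens_def using quot_proj_hom[OF tfree_comm trel_sub[OF okC0[OF N]]] .
  have p2: "(\<lambda>c. Imset N #>\<^bsub>Cc MI FI 0 N\<^esub> c) \<in> hom (Cc MI FI 0 N) (QQ N)"
    unfolding QQ_def using quot_proj_hom[OF Cc_comm_0 Imset_sub] .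
  show ?thesis using hom_compose[OF p1 p2] unfolding cls_def comp_def .
qed

lemma cls_carr: "1 \<le> N \<Longrightarrow> x \<in> carrier (TFc N (N - 1)) \<Longrightarrow> cls N x \<in> carrier (QQ N)"
  by (rule hom_in_carrier[OF cls_hom])

lemma cls_add: "1 \<le> N \<Longrightarrow> x \<in> carrier (TFc N (N - 1)) \<Longrightarrow> y \<in> carrier (TFc N (N - 1)) \<Longrightarrow>
    cls N (x + y) = cls N x \<otimes>\<^bsub>QQ N\<^esub> cls N y"
  using hom_mult[OF cls_hom] by simp

lemma cls_neg: "1 \<le> N \<Longrightarrow> x \<in> carrier (TFc N (N - 1)) \<Longrightarrow> cls N (- x) = inv\<^bsub>QQ N\<^esub> cls N x"
  using free_hom_neg[OF QQ_grp cls_hom[unfolded tfree_def]] by (simp add: tfree_carrier)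

lemma cls_rel:
  assumes N: "1 \<le> N" and "x \<in> hatS N" "k \<in> hatS (N - 1)" "w \<in> carrier (MI (N - 1))"
  shows "cls N (frag_of (hmul x k, w)) = cls N (frag_of (x, mact FI (N - 1) k w))"
  unfolding cls_def using tens_rel1[OF okC0[OF N] assms(2-4)] by simp

definition EE :: "nat \<Rightarrow> nat \<Rightarrow> 'v \<Rightarrow> _" where
  "EE N j v = esing (N - 1) j (TRi j (N - 1) #>\<^bsub>TFi j (N - 1)\<^esub> frag_of (hcos (N - 1) j hone, v))"

lemma EE_carr: "j < N \<Longrightarrow> v \<in> carrier (V j) \<Longrightarrow> EE N j v \<in> carrier (MI (N - 1))"
  unfolding EE_def by (rule esing_frag_carr) auto

lemma EE_hom: "j < N \<Longrightarrow> EE N j \<in> hom (V j) (MI (N - 1))"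
proof -
  assume j: "j < N"
  have h1: "(\<lambda>v. TRi j (N - 1) #>\<^bsub>TFi j (N - 1)\<^esub> frag_of (hcos (N - 1) j hone, v)) \<in> hom (V j) (Ic j (N - 1))"
    unfolding Ic_def' using tens_frag_hom[OF okI hcos_in_FIhat] j by simp
  have "esing (N - 1) j \<circ> (\<lambda>v. TRi j (N - 1) #>\<^bsub>TFi j (N - 1)\<^esub> frag_of (hcos (N - 1) j hone, v)) \<in> hom (V j) (MI (N - 1))"
    using hom_compose[OF h1 esing_hom] j by simp
  then show ?thesis unfolding EE_def comp_def .
qed

lemma mact_EE:
  assumes "j < N" "k \<in> hatS (N - 1)" "v \<in> carrier (V j)"
  shows "mact FI (N - 1) k (EE N j v) = esing (N - 1) j (TRi j (N - 1) #>\<^bsub>TFi j (N - 1)\<^esub> frag_of (hcos (N - 1) j k, v))"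
  unfolding EE_def using mact_esing_frag[of j "N - 1" k hone v] assms by simp

lemma cls_tau:
  assumes N: "2 \<le> N" and j: "j \<le> N - 2" and a: "a \<in> hatS N" and v: "v \<in> carrier (V j)"
  shows "cls N (frag_of (hmul a (tau N), EE N j v)) = cls N (frag_of (a, EE N j v))"
proof -
  have N1: "1 \<le> N" using N by simp
  have jN: "j < N" using N j by simp
  define E2 where "E2 = esing (N - 2) j (TRi j (N - 2) #>\<^bsub>TFi j (N - 2)\<^esub> frag_of (hcos (N - 2) j hone, v))"
  have E2c: "E2 \<in> carrier (MI (N - 2))" unfolding E2_def using esing_frag_carr[OF j hone_in v] .
  have iE: "iota FI (N - 2) E2 = EE N j v"
  proof -
    have s: "Suc (N - 2) = N - 1" using N by arith
    show ?thesis unfolding E2_def EE_def using iota_esing_frag[OF j hone_in v] s by simp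
  qed
  have fa: "frag_of (a, E2) \<in> carrier (TFc N (N - 2))" using a E2c by simp
  have X: "TRc N (N - 2) #>\<^bsub>TFc N (N - 2)\<^esub> frag_of (a, E2) \<in> carrier (Cc MI FI 1 N)"
    unfolding Cc_1[OF N] using fa by (simp add: tens_carrier)
  have aT: "hmul a (tau N) \<in> hatS N" using hmul_closed[OF a tau_in[OF N]] .
  have E: "EE N j v \<in> carrier (MI (N - 1))" using EE_carr[OF jN v] .
  have d: "dmap MI FI 1 N (TRc N (N - 2) #>\<^bsub>TFc N (N - 2)\<^esub> frag_of (a, E2))
      = TRc N (N - 1) #>\<^bsub>TFc N (N - 1)\<^esub> (frag_of (hmul a (tau N), EE N j v) - frag_of (a, EE N j v))"
    using d1_props(2)[OF N fa] iE by (simp add: phi1_def)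
  then have mem: "TRc N (N - 1) #>\<^bsub>TFc N (N - 1)\<^esub> (frag_of (hmul a (tau N), EE N j v) - frag_of (a, EE N j v)) \<in> Imset N"
    using X unfolding Imset_def by (metis image_eqI)
  have c1: "TRc N (N - 1) #>\<^bsub>TFc N (N - 1)\<^esub> frag_of (hmul a (tau N), EE N j v) \<in> carrier (Cc MI FI 0 N)"
    unfolding Cc_0[OF N1] using aT E by (simp add: tens_carrier)
  have c2: "TRc N (N - 1) #>\<^bsub>TFc N (N - 1)\<^esub> frag_of (a, EE N j v) \<in> carrier (Cc MI FI 0 N)"
    unfolding Cc_0[OF N1] using a E by (simp add: tens_carrier)
  have "(TRc N (N - 1) #>\<^bsub>TFc N (N - 1)\<^esub> frag_of (hmul a (tau N), EE N j v)) \<otimes>\<^bsub>Cc MI FI 0 N\<^esub>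
        inv\<^bsub>Cc MI FI 0 N\<^esub> (TRc N (N - 1) #>\<^bsub>TFc N (N - 1)\<^esub> frag_of (a, EE N j v))
      = TRc N (N - 1) #>\<^bsub>TFc N (N - 1)\<^esub> (frag_of (hmul a (tau N), EE N j v) - frag_of (a, EE N j v))"
  proof -
    have f1: "frag_of (hmul a (tau N), EE N j v) \<in> carrier (TFc N (N - 1))" using aT E by simp
    have f2: "frag_of (a, EE N j v) \<in> carrier (TFc N (N - 1))" using a E by simp
    show ?thesis unfolding Cc_0[OF N1] using tens_inv[OF okC0[OF N1] f2]
      tens_mult[OF okC0[OF N1] f1 tfree_neg[OF f2]] by simp
  qed
  then show ?thesis unfolding cls_def
    using quot_eq_iff[OF Cc_comm_0 Imset_sub c1 c2] mem by simp
qed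

lemma L:
  assumes jN: "j < N" and u: "u \<in> hatS (N - j)" and a: "a \<in> hatS N" and v: "v \<in> carrier (V j)"
  shows "cls N (frag_of (hmul a (i2 N (N - j) u), EE N j v)) = cls N (frag_of (a, EE N j v))"
proof -
  have N1: "1 \<le> N" using jN by simp
  define U where "U = {u \<in> hatS (N - j). \<forall>a\<in>hatS N. \<forall>v\<in>carrier (V j).
     cls N (frag_of (hmul a (i2 N (N - j) u), EE N j v)) = cls N (frag_of (a, EE N j v))}"
  have i2h: "i2 N (N - j) \<in> hom (hatSgrp (N - j)) (hatSgrp N)" using i2_hom by simp
  have i2c: "i2 N (N - j) x \<in> hatS N" if "x \<in> hatS (N - j)" for x using i2_mem that by simp
  have sub: "subgroup U (hatSgrp (N - j))"
  proof
    show "U \<subseteq> carrier (hatSgrp (N - j))" unfolding U_def by auto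
  next
    show "\<one>\<^bsub>hatSgrp (N - j)\<^esub> \<in> U" unfolding U_def by simp
  next
    fix x y assume x: "x \<in> U" and y: "y \<in> U"
    have xs: "x \<in> hatS (N - j)" "y \<in> hatS (N - j)" using x y by (auto simp: U_def)
    have "hmul x y \<in> U" unfolding U_def
    proof (intro CollectI conjI ballI)
      show "hmul x y \<in> hatS (N - j)" using hmul_closed xs by blast
      fix a v assume av: "a \<in> hatS N" "v \<in> carrier (V j)"
      have ax: "hmul a (i2 N (N - j) x) \<in> hatS N" using hmul_closed[OF av(1) i2c[OF xs(1)]] .
      have "hmul a (i2 N (N - j) (hmul x y)) = hmul (hmul a (i2 N (N - j) x)) (i2 N (N - j) y)"
        using i2_hmul[of "N - j" N x y] xs by (simp add: hmul_assoc)
      moreover have Px: "\<forall>a\<in>hatS N. \<forall>v\<in>carrier (V j). cls N (frag_of (hmul a (i2 N (N - j) x), EE N j v)) = cls N (frag_of (a, EE N j v))"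
        using x unfolding U_def by blast
      moreover have Py: "\<forall>a\<in>hatS N. \<forall>v\<in>carrier (V j). cls N (frag_of (hmul a (i2 N (N - j) y), EE N j v)) = cls N (frag_of (a, EE N j v))"
        using y unfolding U_def by blast
      ultimately show "cls N (frag_of (hmul a (i2 N (N - j) (hmul x y)), EE N j v)) = cls N (frag_of (a, EE N j v))"
        using ax av by metis
    qed
    then show "x \<otimes>\<^bsub>hatSgrp (N - j)\<^esub> y \<in> U" by simp
  next
    fix x assume x: "x \<in> U"
    have xs: "x \<in> hatS (N - j)" using x by (auto simp: U_def)
    have "hinv x \<in> U" unfolding U_def
    proof (intro CollectI conjI ballI)
      show hx: "hinv x \<in> hatS (N - j)" using hinv_closed xs by blast
      fix a v assume av: "a \<in> hatS N" "v \<in> carrier (V j)"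
      have ax: "hmul a (i2 N (N - j) (hinv x)) \<in> hatS N" using hmul_closed[OF av(1) i2c[OF hx]] .
      have "hmul (hmul a (i2 N (N - j) (hinv x))) (i2 N (N - j) x) = a"
        using i2_hmul[of "N - j" N "hinv x" x] xs hx hinv_l[OF xs] by (simp add: hmul_assoc)
      moreover have Px: "\<forall>a\<in>hatS N. \<forall>v\<in>carrier (V j). cls N (frag_of (hmul a (i2 N (N - j) x), EE N j v)) = cls N (frag_of (a, EE N j v))"
        using x unfolding U_def by blast
      ultimately show "cls N (frag_of (hmul a (i2 N (N - j) (hinv x)), EE N j v)) = cls N (frag_of (a, EE N j v))"
        using ax av by metis
    qed
    then show "inv\<^bsub>hatSgrp (N - j)\<^esub> x \<in> U" using hatS_inv[OF xs] by simp
  qed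
  have A1: "hatS (N - j - 1) \<subseteq> U"
  proof
    fix u assume u: "u \<in> hatS (N - j - 1)"
    have u': "u \<in> hatS (N - 1 - j)" using u by (simp add: diff_commute)
    have uN: "u \<in> hatS (N - j)" using hatS_mono[of "N - j - 1" "N - j"] u by (meson diff_le_self subsetD)
    have e: "i2 (N - 1) (N - 1 - j) u = i2 N (N - j) u"
      using i2_SH1[of j "N - 1" N u] u' jN by simp
    define w where "w = i2 (N - 1) (N - 1 - j) u"
    have w: "w \<in> hatS (N - 1)" unfolding w_def using i2_mem u' by simp
    have hc: "hcos (N - 1) j w = hcos (N - 1) j hone"
      unfolding w_def using hcos_eqI[OF hone_in u'] by simp
    show "u \<in> U" unfolding U_def
    proof (intro CollectI conjI ballI)
      show "u \<in> hatS (N - j)" using uN .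
      fix a v assume av: "a \<in> hatS N" "v \<in> carrier (V j)"
      have "cls N (frag_of (hmul a w, EE N j v)) = cls N (frag_of (a, mact FI (N - 1) w (EE N j v)))"
        using cls_rel[OF N1 av(1) w EE_carr[OF jN av(2)]] .
      also have "mact FI (N - 1) w (EE N j v) = EE N j v"
        using mact_EE[OF jN w av(2)] hc by (simp add: EE_def)
      finally show "cls N (frag_of (hmul a (i2 N (N - j) u), EE N j v)) = cls N (frag_of (a, EE N j v))"
        using e w_def by simp
    qed
  qed
  have A2: "i2 (N - j) 2 tau0 \<in> U" if m2: "2 \<le> N - j"
  proof -
    have N2: "2 \<le> N" and j2: "j \<le> N - 2" using m2 by auto
    have e: "i2 N 2 tau0 = i2 N (N - j) (i2 (N - j) 2 tau0)"
      using i2_SH2(1)[of j "N - 2" N tau0] tau0_in j2 N2 by (simp add: diff_diff_right)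
    have m: "i2 (N - j) 2 tau0 \<in> hatS (N - j)" using i2_mem[OF m2 tau0_in] .
    show ?thesis unfolding U_def
    proof (intro CollectI conjI ballI)
      show "i2 (N - j) 2 tau0 \<in> hatS (N - j)" using m .
      fix a v assume av: "a \<in> hatS N" "v \<in> carrier (V j)"
      show "cls N (frag_of (hmul a (i2 N (N - j) (i2 (N - j) 2 tau0)), EE N j v)) = cls N (frag_of (a, EE N j v))"
        using cls_tau[OF N2 j2 av] e by (simp add: tau_def)
    qed
  qed
  have "hatS (N - j) \<subseteq> U"
    by (rule GEN[OF _ sub]) (use jN A1 A2 in auto)
  then show ?thesis using u a v unfolding U_def by blast
qed

end


lemma comm_inv_hom:
  assumes "comm_group G" shows "(\<lambda>x. inv\<^bsub>G\<^esub> x) \<in> hom G G"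
proof (rule homI)
  interpret G: comm_group G by fact
  fix x assume "x \<in> carrier G" then show "inv\<^bsub>G\<^esub> x \<in> carrier G" by simp
next
  interpret G: comm_group G by fact
  fix x y assume "x \<in> carrier G" "y \<in> carrier G"
  then show "inv\<^bsub>G\<^esub> (x \<otimes>\<^bsub>G\<^esub> y) = inv\<^bsub>G\<^esub> x \<otimes>\<^bsub>G\<^esub> inv\<^bsub>G\<^esub> y" by (simp add: G.inv_mult)
qed

context ctx
begin

lemma some_cls:
  assumes "j < N" "g \<in> hatS N" "s \<in> hatS N" "v \<in> carrier (V j)"
  shows "(SOME s'. s' \<in> hcos N j s) \<in> hatS N"
    and "cls N (frag_of (hmul g (SOME s'. s' \<in> hcos N j s), EE N j v)) = cls N (frag_of (hmul g s, EE N j v))"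
proof -
  let ?s' = "SOME s'. s' \<in> hcos N j s"
  have "?s' \<in> hcos N j s" using someI[of "\<lambda>x. x \<in> hcos N j s", OF hcos_self] .
  then obtain u where u: "u \<in> hatS (N - j)" "?s' = hmul s (i2 N (N - j) u)" by (auto simp: hcos_mem)
  show "?s' \<in> hatS N" using u hmul_closed[OF assms(3) i2_mem] by simp
  have "hmul g ?s' = hmul (hmul g s) (i2 N (N - j) u)" using u by (simp add: hmul_assoc)
  then show "cls N (frag_of (hmul g ?s', EE N j v)) = cls N (frag_of (hmul g s, EE N j v))"
    using L[OF assms(1) u(1) hmul_closed[OF assms(2,3)] assms(4)] by simp
qed

definition rhoj :: "nat \<Rightarrow> hs \<Rightarrow> nat \<Rightarrow> _" where
  "rhoj N g j = tlift (QQ N) (\<lambda>(f, v). inv\<^bsub>QQ N\<^esub> (cls N (frag_of (hmul g (SOME s. s \<in> f), EE N j v)))) (FIhat j N) (V j)"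

lemma rhoj_props:
  assumes jN: "j < N" and g: "g \<in> hatS N"
  shows "rhoj N g j \<in> hom (Ic j N) (QQ N)"
    and "\<And>s v. s \<in> hatS N \<Longrightarrow> v \<in> carrier (V j) \<Longrightarrow>
          rhoj N g j (TRi j N #>\<^bsub>TFi j N\<^esub> frag_of (hcos N j s, v)) = inv\<^bsub>QQ N\<^esub> cls N (frag_of (hmul g s, EE N j v))"
proof -
  have N1: "1 \<le> N" using jN by simp
  interpret Q: comm_group "QQ N" using QQ_comm .
  let ?F = "\<lambda>(f, v). inv\<^bsub>QQ N\<^esub> (cls N (frag_of (hmul g (SOME s. s \<in> f), EE N j v)))"
  have Fv: "?F (hcos N j s, v) = inv\<^bsub>QQ N\<^esub> cls N (frag_of (hmul g s, EE N j v))" if "s \<in> hatS N" "v \<in> carrier (V j)" for s v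
    using some_cls(2)[OF jN g that] by simp
  have clsc: "cls N (frag_of (x, EE N j v)) \<in> carrier (QQ N)" if "x \<in> hatS N" "v \<in> carrier (V j)" for x v
    using cls_carr[OF N1] EE_carr[OF jN that(2)] that(1) by simp
  have f: "?F (f, v) \<in> carrier (QQ N)" if A: "f \<in> FIhat j N" "v \<in> carrier (V j)" for f v
  proof -
    obtain s where s: "s \<in> hatS N" "f = hcos N j s" using A by (auto simp: FIhat_iff)
    show ?thesis using Fv[OF s(1) that(2)] s clsc[OF hmul_closed[OF g s(1)] that(2)] by simp
  qed
  have r1: "?F (firact j N f k, v) = ?F (f, A j k v)" if A: "f \<in> FIhat j N" "k \<in> hatS j" "v \<in> carrier (V j)" for f k v
  proof -
    obtain s where s: "s \<in> hatS N" "f = hcos N j s" using A by (auto simp: FIhat_iff)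
    have jN': "j \<le> N" using jN by simp
    have jj: "j \<le> N - 1" using jN by simp
    have kN1: "k \<in> hatS (N - 1)" using hatS_mono[OF jj] that(2) by blast
    have kN: "k \<in> hatS N" using hatS_mono[of j N] that(2) jN by auto
    have sk: "hmul s k \<in> hatS N" using hmul_closed[OF s(1) kN] .
    have gs: "hmul g s \<in> hatS N" using hmul_closed[OF g s(1)] .
    have Akv: "A j k v \<in> carrier (V j)" using A_carr[OF that(2,3)] .
    have e1: "firact j N f k = hcos N j (hmul s k)" using firact_hcos[OF jN' s(1) that(2)] s by simp
    have "cls N (frag_of (hmul g (hmul s k), EE N j v)) = cls N (frag_of (hmul (hmul g s) k, EE N j v))"
      by (simp add: hmul_assoc)
    also have "\<dots> = cls N (frag_of (hmul g s, mact FI (N - 1) k (EE N j v)))"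
      using cls_rel[OF N1 gs kN1 EE_carr[OF jN that(3)]] .
    also have "mact FI (N - 1) k (EE N j v) = EE N j (A j k v)"
    proof -
      have jN1: "j \<le> N - 1" using jN by simp
      have "TRi j (N - 1) #>\<^bsub>TFi j (N - 1)\<^esub> frag_of (hcos (N - 1) j (hmul hone k), v)
          = TRi j (N - 1) #>\<^bsub>TFi j (N - 1)\<^esub> frag_of (hcos (N - 1) j hone, A j k v)"
        using Ic_rel[OF jN1 hone_in that(2,3)] .
      then show ?thesis using mact_EE[OF jN kN1 that(3)] by (simp add: EE_def)
    qed
    finally show ?thesis using e1 s Fv[OF sk that(3)] Fv[OF s(1) Akv] by simp
  qed
  have r2: "?F (f, v \<otimes>\<^bsub>V j\<^esub> v') = ?F (f, v) \<otimes>\<^bsub>QQ N\<^esub> ?F (f, v')"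
    if A: "f \<in> FIhat j N" "v \<in> carrier (V j)" "v' \<in> carrier (V j)" for f v v'
  proof -
    obtain s where s: "s \<in> hatS N" "f = hcos N j s" using A by (auto simp: FIhat_iff)
    have gs: "hmul g s \<in> hatS N" using hmul_closed[OF g s(1)] .
    have E: "EE N j v \<in> carrier (MI (N - 1))" "EE N j v' \<in> carrier (MI (N - 1))" using EE_carr[OF jN] that by auto
    have EE: "EE N j (v \<otimes>\<^bsub>V j\<^esub> v') = EE N j v \<otimes>\<^bsub>MI (N - 1)\<^esub> EE N j v'"
      using hom_mult[OF EE_hom[OF jN] that(2,3)] .
    have "cls N (frag_of (hmul g s, EE N j (v \<otimes>\<^bsub>V j\<^esub> v'))) = cls N (frag_of (hmul g s, EE N j v) + frag_of (hmul g s, EE N j v'))"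
      unfolding cls_def EE using tens_rel2[OF okC0[OF N1] gs E] by simp
    also have "\<dots> = cls N (frag_of (hmul g s, EE N j v)) \<otimes>\<^bsub>QQ N\<^esub> cls N (frag_of (hmul g s, EE N j v'))"
      using cls_add[OF N1] gs E by simp
    finally have "cls N (frag_of (hmul g s, EE N j (v \<otimes>\<^bsub>V j\<^esub> v'))) = cls N (frag_of (hmul g s, EE N j v)) \<otimes>\<^bsub>QQ N\<^esub> cls N (frag_of (hmul g s, EE N j v'))" .
    moreover have "v \<otimes>\<^bsub>V j\<^esub> v' \<in> carrier (V j)" using monoid.m_closed[OF group.is_monoid[OF Vgrp] that(2,3)] .
    ultimately show ?thesis
      using s Fv that clsc[OF gs] by (simp add: Q.inv_mult)
  qed
  show "rhoj N g j \<in> hom (Ic j N) (QQ N)" unfolding rhoj_def Ic_def'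
    by (rule tens_lift(1)[OF okI QQ_comm]) (use f r1 r2 in auto)
  have t3: "rhoj N g j (TRi j N #>\<^bsub>TFi j N\<^esub> frag_of (f, v)) = ?F (f, v)" if "f \<in> FIhat j N" "v \<in> carrier (V j)" for f v
    unfolding rhoj_def by (rule tens_lift(3)[OF okI QQ_comm]) (use f r1 r2 that in auto)
  show "rhoj N g j (TRi j N #>\<^bsub>TFi j N\<^esub> frag_of (hcos N j s, v)) = inv\<^bsub>QQ N\<^esub> cls N (frag_of (hmul g s, EE N j v))"
    if "s \<in> hatS N" "v \<in> carrier (V j)" for s v
    using t3[of "hcos N j s" v] that Fv jN by (simp add: hcos_in_FIhat)
qed

end


context ctx
begin

definition Rt :: "nat \<Rightarrow> hs \<Rightarrow> _" where
  "Rt N t y = finprod (QQ N) (\<lambda>j. rhoj N t j (y j)) {..<N}"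

lemma Rt_hom:
  assumes t: "t \<in> hatS N"
  shows "Rt N t \<in> hom (MI N) (QQ N)"
proof (rule homI)
  interpret Q: comm_group "QQ N" using QQ_comm .
  fix y assume y: "y \<in> carrier (MI N)"
  have "(\<lambda>j. rhoj N t j (y j)) \<in> {..<N} \<rightarrow> carrier (QQ N)"
  proof
    fix j assume j: "j \<in> {..<N}"
    have "y j \<in> carrier (Ic j N)" using y j by (simp add: IV_carrier PiE_iff)
    then show "rhoj N t j (y j) \<in> carrier (QQ N)" using hom_in_carrier[OF rhoj_props(1)] j t by simp
  qed
  then show "Rt N t y \<in> carrier (QQ N)" unfolding Rt_def by simp
next
  interpret Q: comm_group "QQ N" using QQ_comm .
  fix y y' assume y: "y \<in> carrier (MI N)" and y': "y' \<in> carrier (MI N)"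
  have c: "y j \<in> carrier (Ic j N)" "y' j \<in> carrier (Ic j N)" if "j \<in> {..<N}" for j
    using y y' that by (auto simp: IV_carrier PiE_iff)
  have f1: "(\<lambda>j. rhoj N t j (y j)) \<in> {..<N} \<rightarrow> carrier (QQ N)"
    using c hom_in_carrier[OF rhoj_props(1)] t by auto
  have f2: "(\<lambda>j. rhoj N t j (y' j)) \<in> {..<N} \<rightarrow> carrier (QQ N)"
    using c hom_in_carrier[OF rhoj_props(1)] t by auto
  have "Rt N t (y \<otimes>\<^bsub>MI N\<^esub> y') = finprod (QQ N) (\<lambda>j. rhoj N t j (y j) \<otimes>\<^bsub>QQ N\<^esub> rhoj N t j (y' j)) {..<N}"
    unfolding Rt_def
  proof (rule Q.finprod_cong')
    show "(\<lambda>j. rhoj N t j (y j) \<otimes>\<^bsub>QQ N\<^esub> rhoj N t j (y' j)) \<in> {..<N} \<rightarrow> carrier (QQ N)" using f1 f2 by auto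
    fix j assume j: "j \<in> {..<N}"
    have "(y \<otimes>\<^bsub>MI N\<^esub> y') j = y j \<otimes>\<^bsub>Ic j N\<^esub> y' j" using j by (simp add: IV_mult)
    then show "rhoj N t j ((y \<otimes>\<^bsub>MI N\<^esub> y') j) = rhoj N t j (y j) \<otimes>\<^bsub>QQ N\<^esub> rhoj N t j (y' j)"
      using hom_mult[OF rhoj_props(1) c[OF j]] j t by simp
  qed simp
  also have "\<dots> = Rt N t y \<otimes>\<^bsub>QQ N\<^esub> Rt N t y'"
    unfolding Rt_def using Q.finprod_multf[OF f1 f2] .
  finally show "Rt N t (y \<otimes>\<^bsub>MI N\<^esub> y') = Rt N t y \<otimes>\<^bsub>QQ N\<^esub> Rt N t y'" .
qed

lemma Rt_esing:
  assumes t: "t \<in> hatS N" and j: "j < N" and z: "z \<in> carrier (Ic j N)"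
  shows "Rt N t (esing N j z) = rhoj N t j z"
proof -
  interpret Q: comm_group "QQ N" using QQ_comm .
  have rc: "rhoj N t j z \<in> carrier (QQ N)" using hom_in_carrier[OF rhoj_props(1)[OF j t] z] .
  have "Rt N t (esing N j z) = finprod (QQ N) (\<lambda>i. if j = i then rhoj N t j z else \<one>\<^bsub>QQ N\<^esub>) {..<N}"
    unfolding Rt_def
  proof (rule Q.finprod_cong')
    show "(\<lambda>i. if j = i then rhoj N t j z else \<one>\<^bsub>QQ N\<^esub>) \<in> {..<N} \<rightarrow> carrier (QQ N)" using rc by auto
    fix i assume i: "i \<in> {..<N}"
    show "rhoj N t i (esing N j z i) = (if j = i then rhoj N t j z else \<one>\<^bsub>QQ N\<^esub>)"
    proof (cases "i = j")
      case True then show ?thesis using i by (simp add: esing_def)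
    next
      case False
      have "esing N j z i = \<one>\<^bsub>Ic i N\<^esub>" using False i by (simp add: esing_def)
      then show ?thesis using False group_hom.hom_one[OF ghom[OF Ic_grp QQ_grp rhoj_props(1)]] i t by simp
    qed
  qed simp
  also have "\<dots> = rhoj N t j z"
    using Q.finprod_singleton[of j "{..<N}" "\<lambda>i. rhoj N t j z"] j rc by simp
  finally show ?thesis .
qed

lemma rhoj_mact:
  assumes j: "j < N" and g: "g \<in> hatS N" and k: "k \<in> hatS N" and z: "z \<in> carrier (Ic j N)"
  shows "rhoj N (hmul g k) j z = rhoj N g j (qm j N N (hcos N N k) z)"
proof -
  have jN: "j \<le> N" using j by simp
  have gk: "hmul g k \<in> hatS N" using hmul_closed[OF g k] .
  have h1: "rhoj N (hmul g k) j \<in> hom (Ic j N) (QQ N)" using rhoj_props(1)[OF j gk] .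
  have h2: "rhoj N g j \<circ> qm j N N (hcos N N k) \<in> hom (Ic j N) (QQ N)"
    using hom_compose[OF qm_props(1)[OF jN hcos_kk_FIhat[OF k]] rhoj_props(1)[OF j g]] .
  have "rhoj N (hmul g k) j z = (rhoj N g j \<circ> qm j N N (hcos N N k)) z"
  proof (rule tens_ext[OF okI QQ_grp h1[unfolded Ic_def'] h2[unfolded Ic_def']])
    show "z \<in> carrier (tens (FIhat j N) (firact j N) (hatS j) (V j) (A j))" using z Ic_def' by simp
  next
    fix f v assume fv: "f \<in> FIhat j N" "v \<in> carrier (V j)"
    then obtain s where s: "s \<in> hatS N" "f = hcos N j s" by (auto simp: FIhat_iff)
    have "qm j N N (hcos N N k) (TRi j N #>\<^bsub>TFi j N\<^esub> frag_of (f, v)) = TRi j N #>\<^bsub>TFi j N\<^esub> frag_of (hcos N j (hmul k s), v)"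
      using qm_frag[OF jN hcos_kk_FIhat[OF k] fv] s ficomp_hcos[OF jN order_refl s(1) k] by simp
    then show "rhoj N (hmul g k) j (TRi j N #>\<^bsub>TFi j N\<^esub> frag_of (f, v)) = (rhoj N g j \<circ> qm j N N (hcos N N k)) (TRi j N #>\<^bsub>TFi j N\<^esub> frag_of (f, v))"
      using rhoj_props(2)[OF j gk s(1) fv(2)] rhoj_props(2)[OF j g hmul_closed[OF k s(1)] fv(2)] s
      by (simp add: hmul_assoc)
  qed
  then show ?thesis by simp
qed

definition rho :: "nat \<Rightarrow> _" where
  "rho N = tlift (QQ N) (\<lambda>(g, y). Rt N g y) (hatS N) (MI N)"

lemma rho_props:
  shows "rho N \<in> hom (Cc MI FI (-1) N) (QQ N)"
    and "\<And>a. a \<in> carrier (TFc N N) \<Longrightarrow> rho N (TRc N N #>\<^bsub>TFc N N\<^esub> a) = fhom (QQ N) (\<lambda>(g, y). Rt N g y) (hatS N \<times> carrier (MI N)) a"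
    and "\<And>g y. g \<in> hatS N \<Longrightarrow> y \<in> carrier (MI N) \<Longrightarrow> rho N (TRc N N #>\<^bsub>TFc N N\<^esub> frag_of (g, y)) = Rt N g y"
    and "fhom (QQ N) (\<lambda>(g, y). Rt N g y) (hatS N \<times> carrier (MI N)) \<in> hom (TFc N N) (QQ N)"
proof -
  let ?f = "\<lambda>(g, y). Rt N g y"
  interpret Q: comm_group "QQ N" using QQ_comm .
  have f: "?f (g, y) \<in> carrier (QQ N)" if "g \<in> hatS N" "y \<in> carrier (MI N)" for g y
    using hom_in_carrier[OF Rt_hom[OF that(1)] that(2)] by simp
  have r1: "?f (hmul g k, y) = ?f (g, mact FI N k y)" if "g \<in> hatS N" "k \<in> hatS N" "y \<in> carrier (MI N)" for g k y
  proof -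
    have c: "y j \<in> carrier (Ic j N)" if "j \<in> {..<N}" for j using \<open>y \<in> carrier (MI N)\<close> that by (simp add: IV_carrier PiE_iff)
    have "Rt N (hmul g k) y = Rt N g (mact FI N k y)"
      unfolding Rt_def
    proof (rule Q.finprod_cong')
      show "(\<lambda>j. rhoj N g j (mact FI N k y j)) \<in> {..<N} \<rightarrow> carrier (QQ N)"
      proof
        fix j assume j: "j \<in> {..<N}"
        have "mact FI N k y j \<in> carrier (Ic j N)" using mact_carr[OF that(2,3)] j by (simp add: IV_carrier PiE_iff)
        then show "rhoj N g j (mact FI N k y j) \<in> carrier (QQ N)" using hom_in_carrier[OF rhoj_props(1)] j that(1) by simp
      qed
      fix j assume j: "j \<in> {..<N}"
      have "mact FI N k y j = qm j N N (hcos N N k) (y j)" using j by (simp add: mact_def IVmor_eq)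
      then show "rhoj N (hmul g k) j (y j) = rhoj N g j (mact FI N k y j)"
        using rhoj_mact[OF _ that(1,2) c[OF j]] j by simp
    qed simp
    then show ?thesis by simp
  qed
  have r2: "?f (g, y \<otimes>\<^bsub>MI N\<^esub> y') = ?f (g, y) \<otimes>\<^bsub>QQ N\<^esub> ?f (g, y')"
    if "g \<in> hatS N" "y \<in> carrier (MI N)" "y' \<in> carrier (MI N)" for g y y'
    using hom_mult[OF Rt_hom[OF that(1)] that(2,3)] by simp
  show "rho N \<in> hom (Cc MI FI (-1) N) (QQ N)" unfolding rho_def Cc_m1
    by (rule tens_lift(1)[OF okC[OF order_refl] QQ_comm]) (use f r1 r2 in auto)
  show "rho N (TRc N N #>\<^bsub>TFc N N\<^esub> a) = fhom (QQ N) ?f (hatS N \<times> carrier (MI N)) a" if "a \<in> carrier (TFc N N)" for a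
    unfolding rho_def by (rule tens_lift(2)[OF okC[OF order_refl] QQ_comm]) (use f r1 r2 that in auto)
  have t3: "rho N (TRc N N #>\<^bsub>TFc N N\<^esub> frag_of (g, y)) = ?f (g, y)" if "g \<in> hatS N" "y \<in> carrier (MI N)" for g y
    unfolding rho_def by (rule tens_lift(3)[OF okC[OF order_refl] QQ_comm]) (use f r1 r2 that in auto)
  show "rho N (TRc N N #>\<^bsub>TFc N N\<^esub> frag_of (g, y)) = Rt N g y" if "g \<in> hatS N" "y \<in> carrier (MI N)" for g y
    using t3[OF that] by simp
  show "fhom (QQ N) ?f (hatS N \<times> carrier (MI N)) \<in> hom (TFc N N) (QQ N)"
    unfolding tfree_def by (rule fhom(1)[OF QQ_comm]) (use f in auto)
qed

end


context ctx
begin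

definition prjQ :: "nat \<Rightarrow> _" where "prjQ N = (\<lambda>c. Imset N #>\<^bsub>Cc MI FI 0 N\<^esub> c)"

lemma prjQ_hom: "prjQ N \<in> hom (Cc MI FI 0 N) (QQ N)"
  unfolding prjQ_def QQ_def using quot_proj_hom[OF Cc_comm_0 Imset_sub] .

lemma Rt_iota:
  assumes N: "N = Suc k" and t: "t \<in> hatS N" and w: "w \<in> carrier (MI k)"
  shows "Rt N t (iota FI k w) = inv\<^bsub>QQ N\<^esub> (cls N (frag_of (t, w)))"
proof -
  have N1: "1 \<le> N" using N by simp
  have e: "N - 1 = k" using N by simp
  interpret Q: comm_group "QQ N" using QQ_comm .
  have W1: "Rt N t \<circ> iota FI k \<in> hom (MI k) (QQ N)"
  proof -
    have Rh: "Rt N t \<in> hom (MI (Suc k)) (QQ N)" using Rt_hom[OF t] N by simp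
    show ?thesis using hom_compose[OF iota_hom Rh] .
  qed
  have fr: "(\<lambda>w. TRc N k #>\<^bsub>TFc N k\<^esub> frag_of (t, w)) \<in> hom (MI k) (Cc MI FI 0 N)"
    using tens_frag_hom[OF okC0[OF N1] t] Cc_0[OF N1] e by simp
  have W2: "(\<lambda>x. inv\<^bsub>QQ N\<^esub> x) \<circ> prjQ N \<circ> (\<lambda>w. TRc N k #>\<^bsub>TFc N k\<^esub> frag_of (t, w)) \<in> hom (MI k) (QQ N)"
    using hom_compose[OF hom_compose[OF fr prjQ_hom] comm_inv_hom[OF QQ_comm]] by (simp add: comp_assoc)
  have "(Rt N t \<circ> iota FI k) w = ((\<lambda>x. inv\<^bsub>QQ N\<^esub> x) \<circ> prjQ N \<circ> (\<lambda>w. TRc N k #>\<^bsub>TFc N k\<^esub> frag_of (t, w))) w"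
  proof (rule IV_ext[OF QQ_grp W1 W2 _ w])
    fix j z assume jz: "j \<le> k" "z \<in> carrier (Ic j k)"
    have jN: "j < N" using jz N by simp
    have L1: "(Rt N t \<circ> iota FI k) \<circ> esing k j \<in> hom (Ic j k) (QQ N)" using hom_compose[OF esing_hom[OF jz(1)] W1] .
    have L2: "((\<lambda>x. inv\<^bsub>QQ N\<^esub> x) \<circ> prjQ N \<circ> (\<lambda>w. TRc N k #>\<^bsub>TFc N k\<^esub> frag_of (t, w))) \<circ> esing k j \<in> hom (Ic j k) (QQ N)"
      using hom_compose[OF esing_hom[OF jz(1)] W2] .
    have "((Rt N t \<circ> iota FI k) \<circ> esing k j) z = (((\<lambda>x. inv\<^bsub>QQ N\<^esub> x) \<circ> prjQ N \<circ> (\<lambda>w. TRc N k #>\<^bsub>TFc N k\<^esub> frag_of (t, w))) \<circ> esing k j) z"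
    proof (rule tens_ext[OF okI QQ_grp L1[unfolded Ic_def'] L2[unfolded Ic_def']])
      show "z \<in> carrier (tens (FIhat j k) (firact j k) (hatS j) (V j) (A j))" using jz Ic_def' by simp
    next
      fix f v assume fv: "f \<in> FIhat j k" "v \<in> carrier (V j)"
      then obtain s where s: "s \<in> hatS k" "f = hcos k j s" by (auto simp: FIhat_iff)
      have sN: "s \<in> hatS N" using hatS_mono[of k N] s N by auto
      have ts: "hmul t s \<in> hatS N" using hmul_closed[OF t sN] .
      have "((Rt N t \<circ> iota FI k) \<circ> esing k j) (TRi j k #>\<^bsub>TFi j k\<^esub> frag_of (f, v))
          = Rt N t (esing N j (TRi j N #>\<^bsub>TFi j N\<^esub> frag_of (hcos N j s, v)))"
        using iota_esing_frag[OF jz(1) s(1) fv(2)] s N by simp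
      also have "\<dots> = rhoj N t j (TRi j N #>\<^bsub>TFi j N\<^esub> frag_of (hcos N j s, v))"
        using Rt_esing[OF t jN frag_Ic_carr[of j N s v]] jN sN fv by simp
      also have "\<dots> = inv\<^bsub>QQ N\<^esub> cls N (frag_of (hmul t s, EE N j v))"
        using rhoj_props(2)[OF jN t sN fv(2)] .
      also have "cls N (frag_of (hmul t s, EE N j v)) = cls N (frag_of (t, mact FI (N - 1) s (EE N j v)))"
        using cls_rel[OF N1 t _ EE_carr[OF jN fv(2)]] s e by simp
      also have "mact FI (N - 1) s (EE N j v) = esing k j (TRi j k #>\<^bsub>TFi j k\<^esub> frag_of (hcos k j s, v))"
        using mact_EE[OF jN _ fv(2)] s e by simp
      finally show "((Rt N t \<circ> iota FI k) \<circ> esing k j) (TRi j k #>\<^bsub>TFi j k\<^esub> frag_of (f, v)) =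
          (((\<lambda>x. inv\<^bsub>QQ N\<^esub> x) \<circ> prjQ N \<circ> (\<lambda>w. TRc N k #>\<^bsub>TFc N k\<^esub> frag_of (t, w))) \<circ> esing k j) (TRi j k #>\<^bsub>TFi j k\<^esub> frag_of (f, v))"
        using s e by (simp add: prjQ_def cls_def)
    qed
    then show "(Rt N t \<circ> iota FI k) (esing k j z) = ((\<lambda>x. inv\<^bsub>QQ N\<^esub> x) \<circ> prjQ N \<circ> (\<lambda>w. TRc N k #>\<^bsub>TFc N k\<^esub> frag_of (t, w))) (esing k j z)"
      by simp
  qed
  then show ?thesis using e by (simp add: prjQ_def cls_def)
qed

lemma rho_d0:
  assumes N1: "1 \<le> N" and X: "X \<in> carrier (Cc MI FI 0 N)"
  shows "rho N (dmap MI FI 0 N X) = prjQ N X"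
proof -
  obtain k where N: "N = Suc k" using N1 by (cases N) auto
  have e: "N - 1 = k" using N by simp
  interpret Q: comm_group "QQ N" using QQ_comm .
  have h1: "rho N \<circ> dmap MI FI 0 N \<in> hom (Cc MI FI 0 N) (QQ N)" using hom_compose[OF d0_props(1)[OF N1] rho_props(1)] .
  have "(rho N \<circ> dmap MI FI 0 N) X = prjQ N X"
  proof (rule tens_ext[OF okC0[OF N1] QQ_grp h1[unfolded Cc_0[OF N1]] prjQ_hom[of N, unfolded Cc_0[OF N1]]])
    show "X \<in> carrier (tens (hatS N) hmul (hatS (N - 1)) (MI (N - 1)) (mact FI (N - 1)))" using X Cc_0[OF N1] by simp
  next
    fix t w assume tw: "t \<in> hatS N" "w \<in> carrier (MI (N - 1))"
    have w: "w \<in> carrier (MI k)" using tw e by simp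
    have iw: "iota FI k w \<in> carrier (MI N)" using iota_carr[OF w] N by simp
    have fa: "frag_of (t, w) \<in> carrier (TFc N (N - 1))" using tw by simp
    have fb: "frag_of (t, iota FI k w) \<in> carrier (TFc N N)" using tw iw by simp
    have "dmap MI FI 0 N (TRc N (N - 1) #>\<^bsub>TFc N (N - 1)\<^esub> frag_of (t, w)) = TRc N N #>\<^bsub>TFc N N\<^esub> (- frag_of (t, iota FI k w))"
      using d0_props(2)[OF N1 fa] e by (simp add: phi0_def)
    then have "rho N (dmap MI FI 0 N (TRc N (N - 1) #>\<^bsub>TFc N (N - 1)\<^esub> frag_of (t, w)))
        = fhom (QQ N) (\<lambda>(g, y). Rt N g y) (hatS N \<times> carrier (MI N)) (- frag_of (t, iota FI k w))"
      using rho_props(2)[of "- frag_of (t, iota FI k w)" N] tfree_neg[OF fb] by simp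
    also have "\<dots> = inv\<^bsub>QQ N\<^esub> fhom (QQ N) (\<lambda>(g, y). Rt N g y) (hatS N \<times> carrier (MI N)) (frag_of (t, iota FI k w))"
      using free_hom_neg[OF QQ_grp rho_props(4)[unfolded tfree_def]] fb by (simp add: tfree_carrier)
    also have "\<dots> = inv\<^bsub>QQ N\<^esub> rho N (TRc N N #>\<^bsub>TFc N N\<^esub> frag_of (t, iota FI k w))"
      using rho_props(2)[OF fb] by simp
    also have "\<dots> = inv\<^bsub>QQ N\<^esub> Rt N t (iota FI k w)"
      using rho_props(3)[OF tw(1) iw] by simp
    also have "\<dots> = cls N (frag_of (t, w))"
      using Rt_iota[OF N tw(1) w] cls_carr[OF N1 fa] by simp
    finally show "(rho N \<circ> dmap MI FI 0 N) (TRc N (N - 1) #>\<^bsub>TFc N (N - 1)\<^esub> frag_of (t, w)) = prjQ N (TRc N (N - 1) #>\<^bsub>TFc N (N - 1)\<^esub> frag_of (t, w))"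
      by (simp add: prjQ_def cls_def)
  qed
  then show ?thesis by simp
qed

lemma kernel_sub:
  assumes "X \<in> kernel (Cc MI FI 0 N) (Cc MI FI (-1) N) (dmap MI FI 0 N)"
  shows "X \<in> Imset N"
proof (cases "1 \<le> N")
  case True
  have X: "X \<in> carrier (Cc MI FI 0 N)" "dmap MI FI 0 N X = \<one>\<^bsub>Cc MI FI (-1) N\<^esub>" using assms by (auto simp: kernel_def)
  have "prjQ N X = rho N \<one>\<^bsub>Cc MI FI (-1) N\<^esub>" using rho_d0[OF True X(1)] X(2) by simp
  also have "\<dots> = \<one>\<^bsub>QQ N\<^esub>" using group_hom.hom_one[OF ghom[OF Cm1_grp QQ_grp rho_props(1)]] .
  also have "\<dots> = Imset N" by (simp add: QQ_def)
  finally have "Imset N #>\<^bsub>Cc MI FI 0 N\<^esub> X = Imset N" by (simp add: prjQ_def)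
  then show ?thesis using quot_mem_self[OF Cc_comm_0 Imset_sub X(1)] by simp
next
  case False
  then have N: "N = 0" by simp
  have X: "X \<in> carrier (Cc MI FI 0 N)" using assms by (auto simp: kernel_def)
  have "carrier (Cc MI FI 0 N) \<subseteq> {\<one>\<^bsub>Cc MI FI 0 N\<^esub>}"
  proof
    fix Y assume "Y \<in> carrier (Cc MI FI 0 N)"
    then obtain a where a: "a \<in> carrier (tfree {} (MI 0))" "Y = trel {} hmul {} (MI 0) (mact FI 0) #>\<^bsub>tfree {} (MI 0)\<^esub> a"
      unfolding N Cc_0_0 tens_carrier by blast
    have "a = 0" using a(1) by (simp add: tfree_carrier)
    then show "Y \<in> {\<one>\<^bsub>Cc MI FI 0 N\<^esub>}" using a tens_one[OF okE] N Cc_0_0 by simp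
  qed
  moreover have "\<one>\<^bsub>Cc MI FI 0 N\<^esub> \<in> Imset N" using subgroup.one_closed[OF Imset_sub] .
  ultimately show ?thesis using X by blast
qed

lemma one_in_kernel: "\<one>\<^bsub>Cc MI FI 0 N\<^esub> \<in> kernel (Cc MI FI 0 N) (Cc MI FI (-1) N) (dmap MI FI 0 N)"
proof (cases "1 \<le> N")
  case True
  then show ?thesis
    using group_hom.hom_one[OF ghom[OF C0_grp Cm1_grp d0_props(1)[OF True]]]
      group.is_monoid[OF C0_grp] monoid.one_closed by (auto simp: kernel_def)
next
  case False
  then show ?thesis using group.is_monoid[OF C0_grp] monoid.one_closed by (auto simp: kernel_def dmap_def)
qed

lemma H0_trivial: "carrier (Hcs MI FI 0 N) = {\<one>\<^bsub>Hcs MI FI 0 N\<^esub>}"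
proof -
  let ?K = "kernel (Cc MI FI 0 N) (Cc MI FI (-1) N) (dmap MI FI 0 N)"
  let ?G = "(Cc MI FI 0 N)\<lparr>carrier := ?K\<rparr>"
  have H: "Hcs MI FI 0 N = ?G Mod Imset N" by (simp add: Hcs_def Imset_def)
  have rc: "Imset N #>\<^bsub>?G\<^esub> a = Imset N" if "a \<in> ?K" for a
  proof -
    have "a \<in> Imset N" using kernel_sub[OF that] .
    then have "Imset N #>\<^bsub>Cc MI FI 0 N\<^esub> a = Imset N"
      using group.coset_join2[OF C0_grp _ Imset_sub] subgroup.mem_carrier[OF Imset_sub] by blast
    then show ?thesis by (simp add: r_coset_def)
  qed
  have "carrier (?G Mod Imset N) = (\<lambda>a. Imset N #>\<^bsub>?G\<^esub> a) ` ?K" by (simp add: carrier_FactGroup)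
  also have "\<dots> = {Imset N}" using rc one_in_kernel by force
  finally show ?thesis using H by simp
qed

end

theorem mainTheorem11:
  fixes V :: "nat \<Rightarrow> 'v monoid" and A :: "nat \<Rightarrow> hs \<Rightarrow> 'v \<Rightarrow> 'v"
  assumes "smod V A"
  shows "(\<forall>n. carrier (Hcs (IV V A) (IVmor V A) 0 n) = {\<one>\<^bsub>Hcs (IV V A) (IVmor V A) 0 n\<^esub>})
       \<and> (\<forall>n. \<exists>\<phi>. \<phi> \<in> iso (Hcs (IV V A) (IVmor V A) (-1) n) (V n)
              \<and> (\<forall>g\<in>hatS n. \<forall>y\<in>carrier (Hcs (IV V A) (IVmor V A) (-1) n).
                    \<phi> (Hact_m1 (IV V A) (IVmor V A) n g y) = A n g (\<phi> y)))"
proof -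
  interpret ctx V A by unfold_locales (rule assms)
  show ?thesis using H0_trivial phiH_iso phiH_equiv by blast
qed


end
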